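(* Consider the smart-metering model described in the context, with a finite horizon $T$. Define $V_{T+1}\equiv 0$ on $\mathcal P_{X,S}$ and, for $t=T,T-1,\dots,1$, $$V_t(\pi)=\min_{a\in\mathcal A}\,[\mathscr B_a V_{t+1}](\pi),\qquad \pi\in\mathcal P_{X,S}.$$ Then: (1) each $V_t$ is continuous and concave on $\mathcal P_{X,S}$ (and the minimum is attained); (2) if $f_t^*(\pi)$ denotes a minimizer of the right-hand side, then the policy $\mathbf q^*$ given by $q^*_t(y\mid x^t,s^t,y^{t-1})=a_t(y\mid x_t,s_t)$ with $a_t=f^*_t(\pi_t)$, where $\pi_t$ is the belief state (computed by $\pi_1(x,s)=P_{X_1}(x)P_{S_1}(s)$ and $\pi_{t+1}=\varphi(\pi_t,y_t,a_t)$), is optimal, i.e. it minimizes $L_T$ over $\mathcal Q_A$; in particular there is no loss of optimality in restricting attention to policies of the form $q_t(y_t\mid x_t,s_t,\pi_t)$; (3) the optimal finite-horizon leakage rate $\min_{\mathbf q\in\mathcal Q_A}L_T(\mathbf q)$ equals $V_1(\pi_1)/T$ where $\pi_1(x,s)=P_{X_1}(x)P_{S_1}(s)$.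
   Context: Let $\mathcal X=\{0,\dots,m_x\}$, $\mathcal Y=\{0,\dots,m_y\}$, $\mathcal S=\{0,\dots,m_s\}$ with $m_x\le m_y$. The demand $\{X_t\}_{t\ge1}$ is a time-homogeneous first-order Markov chain on $\mathcal X$ with irreducible aperiodic transition matrix $Q(x'\mid x)$ and initial pmf $P_{X_1}$; the initial battery charge $S_1\in\mathcal S$ has pmf $P_{S_1}$ and is independent of $\{X_t\}$. For an integer $w$ let $\mathcal Y_\circ(w)=\{y\in\mathcal Y: w+y\in\mathcal S\}$. A charging policy $\mathbf q=(q_1,q_2,\dots)$ is a sequence of conditional pmfs $q_t(y\mid x^t,s^t,y^{t-1})$ on $\mathcal Y$ satisfying $\sum_{y\in\mathcal Y_\circ(s_t-x_t)}q_t(y\mid x^t,s^t,y^{t-1})=1$; $\mathcal Q_A$ denotes the set of all such policies. A policy induces the joint law $P^{\mathbf q}(s^T,x^T,y^T)=P_{S_1}(s_1)P_{X_1}(x_1)q_1(y_1|x_1,s_1)\prod_{t=2}^T\mathbf 1\{s_t=s_{t-1}-x_{t-1}+y_{t-1}\}Q(x_t|x_{t-1})q_t(y_t|x^t,s^t,y^{t-1})$ (so $S_{t+1}=S_t+Y_t-X_t$). The leakage rate is $L_T(\mathbf q)=\frac1T I^{\mathbf q}(X^T,S_1;Y^T)$. $\mathcal P_{X,S}$ is the set of pmfs on $\mathcal X\times\mathcal S$ and $\mathcal A$ is the set of conditional pmfs $a(y\mid x,s)$ from $\mathcal X\times\mathcal S$ to $\mathcal Y$ with $a(\mathcal Y_\circ(s-x)\mid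 x,s)=1$ for all $(x,s)$. For $a\in\mathcal A$, $\pi\in\mathcal P_{X,S}$, $I(a;\pi)$ is the mutual information between $(X,S)\sim\pi$ and $Y$ with $P(Y=y\mid X=x,S=s)=a(y\mid x,s)$. The filter is $$\varphi(\pi,y,a)(x',s')=\frac{\sum_{x\in\mathcal X}Q(x'\mid x)\,a(y\mid x,s'+x-y)\,\pi(x,s'+x-y)}{\sum_{(x,s)\in\mathcal X\times\mathcal S}a(y\mid x,s)\pi(x,s)}$$ (terms with $s'+x-y\notin\mathcal S$ are zero; if the denominator is zero, $\varphi$ is an arbitrary pmf). For $V:\mathcal P_{X,S}\to\mathbb R$, the Bellman operator is $[\mathscr B_aV](\pi)=I(a;\pi)+\sum_{x,s,y}\pi(x,s)a(y\mid x,s)V(\varphi(\pi,y,a))$. The belief state under a policy is $\pi_t(x,s)=P^{\mathbf q}(X_t=x,S_t=s\mid Y^{t-1}=y^{t-1})$. *)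

theory Defs
  imports "HOL-Analysis.Analysis"
begin

text \<open>Elements are integers; X = {0..mx}, Y = {0..my}, S = {0..ms}.
  A pmf on X x S is a function p :: int => int => real (p x s).
  A transition matrix is Q :: int => int => real with Q x x' = Q(x' | x).
  A conditional pmf a in the set A is a :: int => int => int => real with a x s y = a(y | x, s).
  A policy q is q :: nat => int list => int list => int list => int => real with
  q t xs ss ys y = q_t(y | x^t, s^t, y^(t-1)); lists are 0-indexed, so xs!0 = x_1.\<close>

type_synonym belief = "int \<Rightarrow> int \<Rightarrow> real"
type_synonym action = "int \<Rightarrow> int \<Rightarrow> int \<Rightarrow> real"
type_synonym policy = "nat \<Rightarrow> int list \<Rightarrow> int list \<Rightarrow> int list \<Rightarrow> int \<Rightarrow> real"

definition Yo :: "int \<Rightarrow> int \<Rightarrow> int \<Rightarrow> int set" where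
  "Yo my ms w = {y \<in> {0..my}. w + y \<in> {0..ms}}"

definition seqs :: "nat \<Rightarrow> 'a set \<Rightarrow> 'a list set" where
  "seqs n A = {l. length l = n \<and> set l \<subseteq> A}"

definition mutinf :: "'u set \<Rightarrow> 'v set \<Rightarrow> ('u \<Rightarrow> 'v \<Rightarrow> real) \<Rightarrow> real" where
  "mutinf U V p =
     (\<Sum>u\<in>U. \<Sum>v\<in>V. if p u v = 0 then 0
        else p u v * ln (p u v / ((\<Sum>v'\<in>V. p u v') * (\<Sum>u'\<in>U. p u' v))))"

definition stochastic :: "int \<Rightarrow> (int \<Rightarrow> int \<Rightarrow> real) \<Rightarrow> bool" where
  "stochastic mx Q \<longleftrightarrow> (\<forall>x\<in>{0..mx}. (\<forall>x'\<in>{0..mx}. Q x x' \<ge> 0) \<and> (\<Sum>x'\<in>{0..mx}. Q x x') = 1)"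

primrec Qpow :: "int \<Rightarrow> (int \<Rightarrow> int \<Rightarrow> real) \<Rightarrow> nat \<Rightarrow> int \<Rightarrow> int \<Rightarrow> real" where
  "Qpow mx Q 0 x x' = (if x = x' then 1 else 0)"
| "Qpow mx Q (Suc n) x x' = (\<Sum>z\<in>{0..mx}. Qpow mx Q n x z * Q z x')"

definition irreducible_chain :: "int \<Rightarrow> (int \<Rightarrow> int \<Rightarrow> real) \<Rightarrow> bool" where
  "irreducible_chain mx Q \<longleftrightarrow> (\<forall>x\<in>{0..mx}. \<forall>x'\<in>{0..mx}. \<exists>n>0. Qpow mx Q n x x' > 0)"

definition aperiodic_chain :: "int \<Rightarrow> (int \<Rightarrow> int \<Rightarrow> real) \<Rightarrow> bool" where
  "aperiodic_chain mx Q \<longleftrightarrow> (\<forall>x\<in>{0..mx}. Gcd {n::nat. n > 0 \<and> Qpow mx Q n x x > 0} = 1)"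

definition is_pmf_on :: "int set \<Rightarrow> (int \<Rightarrow> real) \<Rightarrow> bool" where
  "is_pmf_on A p \<longleftrightarrow> (\<forall>u\<in>A. p u \<ge> 0) \<and> (\<Sum>u\<in>A. p u) = 1"

definition PXS :: "int \<Rightarrow> int \<Rightarrow> belief set" where
  "PXS mx ms = {p. (\<forall>x s. p x s \<ge> 0) \<and> (\<forall>x s. (x, s) \<notin> {0..mx} \<times> {0..ms} \<longrightarrow> p x s = 0)
                    \<and> (\<Sum>x\<in>{0..mx}. \<Sum>s\<in>{0..ms}. p x s) = 1}"

definition Aset :: "int \<Rightarrow> int \<Rightarrow> int \<Rightarrow> action set" where
  "Aset mx my ms = {a. \<forall>x\<in>{0..mx}. \<forall>s\<in>{0..ms}.
      (\<forall>y\<in>{0..my}. a x s y \<ge> 0) \<and> (\<Sum>y\<in>{0..my}. a x s y) = 1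
      \<and> (\<Sum>y\<in>Yo my ms (s - x). a x s y) = 1}"

definition Ia :: "int \<Rightarrow> int \<Rightarrow> int \<Rightarrow> action \<Rightarrow> belief \<Rightarrow> real" where
  "Ia mx my ms a p = mutinf ({0..mx} \<times> {0..ms}) {0..my} (\<lambda>(x, s) y. p x s * a x s y)"

text \<open>The filter phi; when the denominator vanishes we (arbitrarily) return the point mass at (0,0).\<close>
definition filt :: "int \<Rightarrow> int \<Rightarrow> (int \<Rightarrow> int \<Rightarrow> real) \<Rightarrow> belief \<Rightarrow> int \<Rightarrow> action \<Rightarrow> belief" where
  "filt mx ms Q p y a = (\<lambda>x' s'.
     (let den = (\<Sum>x\<in>{0..mx}. \<Sum>s\<in>{0..ms}. a x s y * p x s) in
      if den = 0 then (if x' = 0 \<and> s' = 0 then 1 else 0)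
      else if x' \<in> {0..mx} \<and> s' \<in> {0..ms} then
        (\<Sum>x\<in>{0..mx}. if s' + x - y \<in> {0..ms}
             then Q x x' * a x (s' + x - y) y * p x (s' + x - y) else 0) / den
      else 0))"

definition bellman :: "int \<Rightarrow> int \<Rightarrow> int \<Rightarrow> (int \<Rightarrow> int \<Rightarrow> real) \<Rightarrow> action \<Rightarrow> (belief \<Rightarrow> real) \<Rightarrow> belief \<Rightarrow> real" where
  "bellman mx my ms Q a V p = Ia mx my ms a p
     + (\<Sum>x\<in>{0..mx}. \<Sum>s\<in>{0..ms}. \<Sum>y\<in>{0..my}. p x s * a x s y * V (filt mx ms Q p y a))"

text \<open>Value with k steps to go: W 0 = 0, W (k+1) = min_a B_a (W k).\<close>
primrec Wval :: "int \<Rightarrow> int \<Rightarrow> int \<Rightarrow> (int \<Rightarrow> int \<Rightarrow> real) \<Rightarrow> nat \<Rightarrow> belief \<Rightarrow> real" where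
  "Wval mx my ms Q 0 = (\<lambda>p. 0)"
| "Wval mx my ms Q (Suc k) = (\<lambda>p. INF a\<in>Aset mx my ms. bellman mx my ms Q a (Wval mx my ms Q k) p)"

definition Vfun :: "int \<Rightarrow> int \<Rightarrow> int \<Rightarrow> (int \<Rightarrow> int \<Rightarrow> real) \<Rightarrow> nat \<Rightarrow> nat \<Rightarrow> belief \<Rightarrow> real" where
  "Vfun mx my ms Q T t = Wval mx my ms Q (T + 1 - t)"

definition concave_fun_on :: "belief set \<Rightarrow> (belief \<Rightarrow> real) \<Rightarrow> bool" where
  "concave_fun_on P V \<longleftrightarrow> (\<forall>p1\<in>P. \<forall>p2\<in>P. \<forall>l::real. 0 \<le> l \<and> l \<le> 1 \<longrightarrow>
       l * V p1 + (1 - l) * V p2 \<le> V (\<lambda>x s. l * p1 x s + (1 - l) * p2 x s))"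

definition policies :: "int \<Rightarrow> int \<Rightarrow> int \<Rightarrow> policy set" where
  "policies mx my ms = {q. \<forall>t\<ge>1. \<forall>xs\<in>seqs t {0..mx}. \<forall>ss\<in>seqs t {0..ms}. \<forall>ys\<in>seqs (t - 1) {0..my}.
      (\<forall>y\<in>{0..my}. q t xs ss ys y \<ge> 0) \<and> (\<Sum>y\<in>{0..my}. q t xs ss ys y) = 1
      \<and> (\<Sum>y\<in>Yo my ms (last ss - last xs). q t xs ss ys y) = 1}"

definition joint :: "(int \<Rightarrow> real) \<Rightarrow> (int \<Rightarrow> real) \<Rightarrow> (int \<Rightarrow> int \<Rightarrow> real) \<Rightarrow> policy \<Rightarrow> nat
                      \<Rightarrow> int list \<Rightarrow> int list \<Rightarrow> int list \<Rightarrow> real" where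
  "joint PX1 PS1 Q q T ss xs ys =
     (\<Prod>i<T. (if i = 0 then PS1 (ss ! 0) * PX1 (xs ! 0)
              else (if ss ! i = ss ! (i - 1) - xs ! (i - 1) + ys ! (i - 1) then 1 else 0)
                   * Q (xs ! (i - 1)) (xs ! i))
            * q (Suc i) (take (Suc i) xs) (take (Suc i) ss) (take i ys) (ys ! i))"

definition leakage :: "int \<Rightarrow> int \<Rightarrow> int \<Rightarrow> (int \<Rightarrow> real) \<Rightarrow> (int \<Rightarrow> real) \<Rightarrow> (int \<Rightarrow> int \<Rightarrow> real)
                        \<Rightarrow> nat \<Rightarrow> policy \<Rightarrow> real" where
  "leakage mx my ms PX1 PS1 Q T q =
     mutinf (seqs T {0..mx} \<times> {0..ms}) (seqs T {0..my})
        (\<lambda>(xs, s1) ys. \<Sum>ss\<in>{ss\<in>seqs T {0..ms}. ss ! 0 = s1}. joint PX1 PS1 Q q T ss xs ys) / real T"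

definition pi1 :: "int \<Rightarrow> int \<Rightarrow> (int \<Rightarrow> real) \<Rightarrow> (int \<Rightarrow> real) \<Rightarrow> belief" where
  "pi1 mx ms PX1 PS1 = (\<lambda>x s. if x \<in> {0..mx} \<and> s \<in> {0..ms} then PX1 x * PS1 s else 0)"

text \<open>Belief recursion along the observed y's: beliefs ... ys n = pi_{n+1},
  pi_{n+1} = phi(pi_n, y_n, f_n(pi_n)).\<close>
primrec beliefs :: "int \<Rightarrow> int \<Rightarrow> (int \<Rightarrow> int \<Rightarrow> real) \<Rightarrow> (nat \<Rightarrow> belief \<Rightarrow> action) \<Rightarrow> belief
                     \<Rightarrow> int list \<Rightarrow> nat \<Rightarrow> belief" where
  "beliefs mx ms Q f p1 ys 0 = p1"
| "beliefs mx ms Q f p1 ys (Suc n) =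
     filt mx ms Q (beliefs mx ms Q f p1 ys n) (ys ! n) (f (Suc n) (beliefs mx ms Q f p1 ys n))"

text \<open>A fixed admissible action used after the horizon (irrelevant for L_T):
  charge exactly the deficit max(0, x - s).\<close>
definition a_default :: action where
  "a_default x s y = (if y = max 0 (x - s) then 1 else 0)"

definition qstar :: "int \<Rightarrow> int \<Rightarrow> (int \<Rightarrow> int \<Rightarrow> real) \<Rightarrow> nat \<Rightarrow> (nat \<Rightarrow> belief \<Rightarrow> action) \<Rightarrow> belief \<Rightarrow> policy" where
  "qstar mx ms Q T f p1 t xs ss ys y =
     (if t \<le> T then f t (beliefs mx ms Q f p1 ys (t - 1)) else a_default) (last xs) (last ss) y"

end

theory Submission
  imports Defs "HOL-Real_Asymp.Real_Asymp"
begin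

lemma shift_sum:
  fixes c :: int and A :: "int set"
  assumes "finite A"
  shows "(\<Sum>s'\<in>A. if s' + c \<in> A then f (s' + c) else (0::real)) = (\<Sum>s\<in>A. if s - c \<in> A then f s else 0)"
proof -
  have "(\<Sum>s'\<in>A. if s' + c \<in> A then f (s' + c) else (0::real)) = (\<Sum>s'\<in>{s'\<in>A. s' + c \<in> A}. f (s' + c))"
    using assms by (simp add: sum.inter_filter)
  also have "\<dots> = (\<Sum>s\<in>(\<lambda>s'. s' + c) ` {s'\<in>A. s' + c \<in> A}. f s)"
    by (subst sum.reindex) (auto simp: inj_on_def)
  also have "(\<lambda>s'. s' + c) ` {s'\<in>A. s' + c \<in> A} = {s\<in>A. s - c \<in> A}"
    apply (auto simp: image_iff)
    by (rule_tac x="x - c" in exI) auto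
  also have "(\<Sum>s\<in>{s\<in>A. s - c \<in> A}. f s) = (\<Sum>s\<in>A. if s - c \<in> A then f s else 0)"
    using assms by (simp add: sum.inter_filter)
  finally show ?thesis .
qed

lemma sum_ind_eq:
  fixes A :: "int set"
  assumes "finite A" "v \<in> A"
  shows "(\<Sum>s\<in>A. (if s = v then 1 else 0) * f s) = (f v :: real)"
proof -
  have "(\<Sum>s\<in>A. (if s = v then 1 else 0) * f s) = (\<Sum>s\<in>A. if s = v then f v else 0)"
    by (rule sum.cong) auto
  then show ?thesis using assms by simp
qed

lemma sum3_swap: "(\<Sum>a\<in>A. \<Sum>b\<in>B. \<Sum>c\<in>C. f a b c) = (\<Sum>c\<in>C. \<Sum>a\<in>A. \<Sum>b\<in>B. f a b c)"
proof -
  have "(\<Sum>a\<in>A. \<Sum>b\<in>B. \<Sum>c\<in>C. f a b c) = (\<Sum>a\<in>A. \<Sum>c\<in>C. \<Sum>b\<in>B. f a b c)"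
    by (rule sum.cong[OF refl], rule sum.swap)
  also have "\<dots> = (\<Sum>c\<in>C. \<Sum>a\<in>A. \<Sum>b\<in>B. f a b c)" by (rule sum.swap)
  finally show ?thesis .
qed

lemma sum_nonneg_zero:
  fixes f :: "'a \<Rightarrow> real"
  shows "finite A \<Longrightarrow> (\<And>x. x \<in> A \<Longrightarrow> 0 \<le> f x) \<Longrightarrow> sum f A = 0 \<Longrightarrow> x \<in> A \<Longrightarrow> f x = 0"
  by (metis sum_nonneg_eq_0_iff)

locale SM =
  fixes mx my ms :: int and Q :: "int \<Rightarrow> int \<Rightarrow> real"
  assumes mx0: "0 \<le> mx" and mxy: "mx \<le> my" and ms0: "0 \<le> ms" and stoch: "stochastic mx Q"
begin

lemma Q_nonneg: "x \<in> {0..mx} \<Longrightarrow> x' \<in> {0..mx} \<Longrightarrow> Q x x' \<ge> 0"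
  using stoch by (auto simp: stochastic_def)
lemma Q_sum: "x \<in> {0..mx} \<Longrightarrow> (\<Sum>x'\<in>{0..mx}. Q x x') = 1"
  using stoch by (auto simp: stochastic_def)

lemma Aset_nonneg: "a \<in> Aset mx my ms \<Longrightarrow> x \<in> {0..mx} \<Longrightarrow> s \<in> {0..ms} \<Longrightarrow> y \<in> {0..my} \<Longrightarrow> a x s y \<ge> 0"
  by (auto simp: Aset_def)
lemma Aset_sum: "a \<in> Aset mx my ms \<Longrightarrow> x \<in> {0..mx} \<Longrightarrow> s \<in> {0..ms} \<Longrightarrow> (\<Sum>y\<in>{0..my}. a x s y) = 1"
  by (auto simp: Aset_def)

lemma sum_subset_one_zero:
  fixes g :: "int \<Rightarrow> real"
  assumes "finite B" "C \<subseteq> B" "\<forall>y\<in>B. g y \<ge> 0" "sum g B = 1" "sum g C = 1" "y \<in> B" "y \<notin> C"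
  shows "g y = 0"
proof -
  have "sum g B = sum g C + sum g (B - C)" using assms
    by (metis add.commute finite_subset sum.subset_diff)
  then have "sum g (B - C) = 0" using assms by simp
  then have "\<forall>z\<in>B - C. g z = 0" using assms by (subst (asm) sum_nonneg_eq_0_iff) auto
  then show ?thesis using assms by auto
qed

lemma Aset_supp:
  assumes "a \<in> Aset mx my ms" "x \<in> {0..mx}" "s \<in> {0..ms}" "y \<in> {0..my}" "a x s y \<noteq> 0"
  shows "s - x + y \<in> {0..ms}"
proof (rule ccontr)
  assume n: "s - x + y \<notin> {0..ms}"
  have "a x s y = 0"
    apply (rule sum_subset_one_zero[where B="{0..my}" and C="Yo my ms (s - x)" and g="a x s"])
    using assms n by (auto simp: Aset_def Yo_def)
  then show False using assms by simp
qed

lemma a_default_Aset: "a_default \<in> Aset mx my ms"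
proof -
  { fix x s assume xs: "x \<in> {0..mx}" "s \<in> {0..ms}"
    have m: "max 0 (x - s) \<in> {0..my}" using xs mxy by auto
    have m2: "max 0 (x - s) \<in> Yo my ms (s - x)" using xs mxy ms0 by (auto simp: Yo_def)
    have fin: "finite (Yo my ms (s - x))" by (rule finite_subset[of _ "{0..my}"]) (auto simp: Yo_def)
    have "(\<Sum>y\<in>{0..my}. a_default x s y) = 1"
      using m by (simp add: a_default_def sum.delta')
    moreover have "(\<Sum>y\<in>Yo my ms (s - x). a_default x s y) = 1"
      unfolding a_default_def using sum.delta[OF fin, of "max 0 (x-s)" "\<lambda>_. 1::real"] m2 by simp
    ultimately have "(\<forall>y\<in>{0..my}. a_default x s y \<ge> 0) \<and> (\<Sum>y\<in>{0..my}. a_default x s y) = 1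
      \<and> (\<Sum>y\<in>Yo my ms (s - x). a_default x s y) = 1" by (simp add: a_default_def) }
  then show ?thesis by (simp add: Aset_def)
qed

lemma PXS_nonneg: "p \<in> PXS mx ms \<Longrightarrow> p x s \<ge> 0" by (simp add: PXS_def)
lemma PXS_out: "p \<in> PXS mx ms \<Longrightarrow> \<not> (x \<in> {0..mx} \<and> s \<in> {0..ms}) \<Longrightarrow> p x s = 0" by (auto simp: PXS_def)
lemma PXS_sum: "p \<in> PXS mx ms \<Longrightarrow> (\<Sum>x\<in>{0..mx}. \<Sum>s\<in>{0..ms}. p x s) = 1" by (simp add: PXS_def)

lemma PXS_le1: assumes "p \<in> PXS mx ms" shows "p x s \<le> 1"
proof (cases "x \<in> {0..mx} \<and> s \<in> {0..ms}")
  case True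
  have "p x s \<le> (\<Sum>s\<in>{0..ms}. p x s)" using True assms
    by (intro member_le_sum) (auto simp: PXS_nonneg)
  also have "\<dots> \<le> (\<Sum>x\<in>{0..mx}. \<Sum>s\<in>{0..ms}. p x s)" using True assms
    by (intro member_le_sum[where f="\<lambda>x. \<Sum>s\<in>{0..ms}. p x s"]) (auto simp: PXS_nonneg sum_nonneg)
  finally show ?thesis using PXS_sum[OF assms] by simp
qed (simp add: PXS_out[OF assms])

definition Pya :: "belief \<Rightarrow> action \<Rightarrow> int \<Rightarrow> real" where
  "Pya p a y = (\<Sum>x\<in>{0..mx}. \<Sum>s\<in>{0..ms}. a x s y * p x s)"

lemma Pya_nonneg: "p \<in> PXS mx ms \<Longrightarrow> a \<in> Aset mx my ms \<Longrightarrow> y \<in> {0..my} \<Longrightarrow> Pya p a y \<ge> 0"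
  unfolding Pya_def by (intro sum_nonneg mult_nonneg_nonneg) (auto simp: Aset_nonneg PXS_nonneg)

lemma Pya_sum: assumes "p \<in> PXS mx ms" "a \<in> Aset mx my ms" shows "(\<Sum>y\<in>{0..my}. Pya p a y) = 1"
proof -
  have "(\<Sum>y\<in>{0..my}. Pya p a y) = (\<Sum>x\<in>{0..mx}. \<Sum>s\<in>{0..ms}. (\<Sum>y\<in>{0..my}. a x s y) * p x s)"
    unfolding Pya_def by (simp add: sum.swap[of _ "{0..my}"] sum_distrib_right)
  also have "\<dots> = (\<Sum>x\<in>{0..mx}. \<Sum>s\<in>{0..ms}. p x s)"
    by (intro sum.cong refl) (simp add: Aset_sum assms)
  finally show ?thesis using PXS_sum assms by simp
qed

lemma Pya_zero_terms:
  assumes "p \<in> PXS mx ms" "a \<in> Aset mx my ms" "y \<in> {0..my}" "Pya p a y = 0"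
    "x \<in> {0..mx}" "s \<in> {0..ms}"
  shows "a x s y * p x s = 0"
proof -
  have nn: "\<And>x s. x \<in> {0..mx} \<Longrightarrow> s \<in> {0..ms} \<Longrightarrow> a x s y * p x s \<ge> 0"
    using assms by (auto simp: Aset_nonneg PXS_nonneg)
  have z: "(\<Sum>s\<in>{0..ms}. a x s y * p x s) = 0"
    apply (rule sum_nonneg_zero[of "{0..mx}" "\<lambda>x. \<Sum>s\<in>{0..ms}. a x s y * p x s" x])
    using assms(4,5) nn unfolding Pya_def by (auto intro!: sum_nonneg)
  show ?thesis
    by (rule sum_nonneg_zero[of "{0..ms}" "\<lambda>s. a x s y * p x s" s]) (use assms nn z in auto)
qed

definition Nf :: "belief \<Rightarrow> action \<Rightarrow> int \<Rightarrow> belief" where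
  "Nf p a y = (\<lambda>x' s'. if x' \<in> {0..mx} \<and> s' \<in> {0..ms} then
      (\<Sum>x\<in>{0..mx}. if s' + x - y \<in> {0..ms} then Q x x' * a x (s' + x - y) y * p x (s' + x - y) else 0) else 0)"

lemma filt_eq: "filt mx ms Q p y a = (if Pya p a y = 0 then (\<lambda>x' s'. if x' = 0 \<and> s' = 0 then 1 else 0)
   else (\<lambda>x' s'. Nf p a y x' s' / Pya p a y))"
  by (auto simp: filt_def Pya_def Nf_def Let_def fun_eq_iff)

lemma Nf_nonneg: "p \<in> PXS mx ms \<Longrightarrow> a \<in> Aset mx my ms \<Longrightarrow> y \<in> {0..my} \<Longrightarrow> Nf p a y x' s' \<ge> 0"
  unfolding Nf_def
  by (auto intro!: sum_nonneg mult_nonneg_nonneg simp: Q_nonneg Aset_nonneg PXS_nonneg)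

lemma Nf_sum:
  assumes "p \<in> PXS mx ms" "a \<in> Aset mx my ms" "y \<in> {0..my}"
  shows "(\<Sum>x'\<in>{0..mx}. \<Sum>s'\<in>{0..ms}. Nf p a y x' s') = Pya p a y"
proof -
  define g where "g x s' = (if s' + x - y \<in> {0..ms} then a x (s' + x - y) y * p x (s' + x - y) else 0)" for x s'
  have e1: "Nf p a y x' s' = (\<Sum>x\<in>{0..mx}. Q x x' * g x s')" if "x' \<in> {0..mx}" "s' \<in> {0..ms}" for x' s'
    using that unfolding Nf_def g_def by (auto intro!: sum.cong)
  have "(\<Sum>x'\<in>{0..mx}. \<Sum>s'\<in>{0..ms}. Nf p a y x' s')
     = (\<Sum>x'\<in>{0..mx}. \<Sum>s'\<in>{0..ms}. \<Sum>x\<in>{0..mx}. Q x x' * g x s')"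
    by (intro sum.cong refl e1) auto
  also have "\<dots> = (\<Sum>x\<in>{0..mx}. \<Sum>x'\<in>{0..mx}. \<Sum>s'\<in>{0..ms}. Q x x' * g x s')"
    by (rule sum3_swap)
  also have "\<dots> = (\<Sum>x\<in>{0..mx}. \<Sum>s'\<in>{0..ms}. (\<Sum>x'\<in>{0..mx}. Q x x') * g x s')"
    apply (rule sum.cong[OF refl])
    apply (subst sum.swap)
    by (simp add: sum_distrib_right)
  also have "\<dots> = (\<Sum>x\<in>{0..mx}. \<Sum>s'\<in>{0..ms}. (\<Sum>x'\<in>{0..mx}. Q x x') * (if s' + x - y \<in> {0..ms} then a x (s' + x - y) y * p x (s' + x - y) else 0))"
    by (simp add: g_def)
  also have "\<dots> = (\<Sum>x\<in>{0..mx}. \<Sum>s'\<in>{0..ms}. (if s' + (x - y) \<in> {0..ms} then a x (s' + (x - y)) y * p x (s' + (x - y)) else 0))"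
    by (intro sum.cong refl) (simp add: Q_sum algebra_simps)
  also have "\<dots> = (\<Sum>x\<in>{0..mx}. \<Sum>s\<in>{0..ms}. (if s - (x - y) \<in> {0..ms} then a x s y * p x s else 0))"
    by (intro sum.cong refl shift_sum) simp
  also have "\<dots> = (\<Sum>x\<in>{0..mx}. \<Sum>s\<in>{0..ms}. a x s y * p x s)"
    apply (intro sum.cong refl)
    using Aset_supp[OF assms(2) _ _ assms(3)] by (auto simp: algebra_simps)
  finally show ?thesis by (simp add: Pya_def)
qed

lemma Nf_zero:
  assumes "p \<in> PXS mx ms" "a \<in> Aset mx my ms" "y \<in> {0..my}" "Pya p a y = 0"
  shows "Nf p a y x' s' = 0"
proof -
  have "\<And>x. x \<in> {0..mx} \<Longrightarrow> s' + x - y \<in> {0..ms} \<Longrightarrow> a x (s' + x - y) y * p x (s' + x - y) = 0"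
    using Pya_zero_terms[OF assms] by auto
  then show ?thesis unfolding Nf_def by (auto intro!: sum.neutral)
qed

lemma point_PXS: "(\<lambda>x' s'. if x' = 0 \<and> s' = 0 then 1 else 0) \<in> PXS mx ms"
proof -
  have h: "\<And>x. (\<Sum>s'\<in>{0..ms}. if x = 0 \<and> s' = 0 then 1 else (0::real)) = (if x = 0 then 1 else 0)"
    using ms0 by (auto simp: sum.delta)
  have "(\<Sum>x\<in>{0..mx}. \<Sum>s'\<in>{0..ms}. if x = 0 \<and> s' = 0 then 1 else (0::real)) = (\<Sum>x\<in>{0..mx}. if x = 0 then 1 else (0::real))"
    by (simp only: h)
  also have "\<dots> = 1" using mx0 by (simp add: sum.delta)
  finally have "(\<Sum>x\<in>{0..mx}. \<Sum>s'\<in>{0..ms}. if x = 0 \<and> s' = 0 then 1 else (0::real)) = 1" .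
  then show ?thesis using mx0 ms0 by (auto simp: PXS_def)
qed

lemma filt_PXS:
  assumes "p \<in> PXS mx ms" "a \<in> Aset mx my ms" "y \<in> {0..my}"
  shows "filt mx ms Q p y a \<in> PXS mx ms"
proof (cases "Pya p a y = 0")
  case True then show ?thesis by (simp add: filt_eq point_PXS)
next
  case False
  then have pos: "Pya p a y > 0" using Pya_nonneg[OF assms] by simp
  show ?thesis using False pos Nf_nonneg[OF assms] Nf_sum[OF assms]
    by (auto simp: filt_eq PXS_def Nf_def sum_divide_distrib[symmetric] simp del: sum_divide_distrib)
qed

end

lemma gibbs:
  fixes u v :: real
  assumes "0 < u" "0 < v"
  shows "u * (ln u - ln v) \<ge> u - v"
proof -
  have "ln (v / u) \<le> v / u - 1" using assms by (intro ln_le_minus_one) simp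
  then have "u * ln (v / u) \<le> u * (v / u - 1)" using assms by (intro mult_left_mono) auto
  then show ?thesis using assms by (simp add: ln_div algebra_simps)
qed

lemma gibbs0:
  fixes u z :: real
  assumes "0 \<le> u" "0 < z"
  shows "u * ln u - u * ln z \<ge> u - z"
proof (cases "u = 0")
  case True then show ?thesis using assms by simp
next
  case False then show ?thesis using gibbs[of u z] assms by (simp add: algebra_simps)
qed

lemma xlnx_convex:
  fixes u v l :: real
  assumes "0 \<le> u" "0 \<le> v" "0 \<le> l" "l \<le> 1"
  shows "(l * u + (1-l) * v) * ln (l * u + (1-l) * v) \<le> l*(u * ln u) + (1-l) * (v * ln v)"
proof -
  define z where "z = l * u + (1-l) * v"
  have z0: "z \<ge> 0" using assms by (simp add: z_def)
  show ?thesis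
  proof (cases "z = 0")
    case True
    then have "l * u = 0" "(1-l) * v = 0" using assms unfolding z_def
      by (smt (verit) mult_nonneg_nonneg)+
    then have h1: "l*(u * ln u) = 0" and h2: "(1-l) * (v * ln v) = 0" by (simp_all add: mult.assoc[symmetric])
    have "(l * u + (1 - l) * v) * ln (l * u + (1 - l) * v) = 0" using True by (simp add: z_def)
    then show ?thesis using h1 h2 by linarith
  next
    case False
    then have zp: "z > 0" using z0 by simp
    have A: "u * ln u \<ge> u * ln z + u - z" using gibbs0[OF assms(1) zp] by simp
    have B: "v * ln v \<ge> v * ln z + v - z" using gibbs0[OF assms(2) zp] by simp
    have "l*(u * ln u) + (1-l) * (v * ln v) \<ge> l*(u * ln z + u - z) + (1-l) * (v * ln z + v - z)"
      using A B assms by (intro add_mono mult_left_mono) auto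
    also have "l*(u * ln z + u - z) + (1-l) * (v * ln z + v - z) = z * ln z"
      by (simp add: z_def algebra_simps)
    finally show ?thesis by (simp add: z_def)
  qed
qed

lemma neg_xlnx_le:
  fixes t :: real
  assumes "0 \<le> t"
  shows "- (t * ln t) \<le> 1"
proof (cases "t = 0")
  case False
  then have tp: "t > 0" using assms by simp
  have "ln (1/t) \<le> 1/t - 1" using tp by (intro ln_le_minus_one) simp
  then have "t * ln (1/t) \<le> t * (1/t - 1)" using tp by (intro mult_left_mono) auto
  then show ?thesis using tp by (simp add: ln_div algebra_simps)
qed simp

lemma conc_comb:
  fixes I1 I2 Im A1 A2 Am B1 B2 Bm l :: real
  assumes "I1 = A1 - B1" "I2 = A2 - B2" "Im = Am - Bm" "Am = l*A1 + (1-l)*A2" "Bm \<le> l*B1 + (1-l)*B2"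
  shows "l*I1 + (1-l)*I2 \<le> Im"
proof -
  have "l*I1 + (1-l)*I2 = (l*A1 + (1-l)*A2) - (l*B1 + (1-l)*B2)" unfolding assms(1,2) by (simp add: algebra_simps)
  then show ?thesis using assms(3-5) by linarith
qed

context SM begin

lemma Aset_le1:
  assumes "a \<in> Aset mx my ms" "x \<in> {0..mx}" "s \<in> {0..ms}" "y \<in> {0..my}"
  shows "a x s y \<le> 1"
proof -
  have "a x s y \<le> (\<Sum>y\<in>{0..my}. a x s y)" using assms
    by (intro member_le_sum) (auto simp: Aset_nonneg)
  then show ?thesis using Aset_sum assms by simp
qed

lemma Pya_ge_term:
  assumes "p \<in> PXS mx ms" "a \<in> Aset mx my ms" "y \<in> {0..my}" "x \<in> {0..mx}" "s \<in> {0..ms}"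
  shows "a x s y * p x s \<le> Pya p a y"
proof -
  have nn: "\<And>x s. x \<in> {0..mx} \<Longrightarrow> s \<in> {0..ms} \<Longrightarrow> a x s y * p x s \<ge> 0"
    using assms by (auto simp: Aset_nonneg PXS_nonneg)
  have "a x s y * p x s \<le> (\<Sum>s\<in>{0..ms}. a x s y * p x s)"
    using assms nn by (intro member_le_sum) auto
  also have "\<dots> \<le> Pya p a y" unfolding Pya_def
    using assms nn by (intro member_le_sum[where f="\<lambda>x. \<Sum>s\<in>{0..ms}. a x s y * p x s"] sum_nonneg) auto
  finally show ?thesis .
qed

definition iterm :: "belief \<Rightarrow> action \<Rightarrow> int \<Rightarrow> int \<Rightarrow> int \<Rightarrow> real" where
  "iterm p a x s y = (if a x s y * p x s = 0 then 0 else a x s y * p x s * (ln (a x s y) - ln (Pya p a y)))"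

lemma Ia_formula:
  assumes "p \<in> PXS mx ms" "a \<in> Aset mx my ms"
  shows "Ia mx my ms a p = (\<Sum>x\<in>{0..mx}. \<Sum>s\<in>{0..ms}. \<Sum>y\<in>{0..my}. iterm p a x s y)"
proof -
  have m1: "(\<Sum>y'\<in>{0..my}. p x s * a x s y') = p x s" if "x \<in> {0..mx}" "s \<in> {0..ms}" for x s
    using Aset_sum[OF assms(2) that] by (simp add: sum_distrib_left[symmetric])
  have m2: "(\<Sum>u'\<in>{0..mx} \<times> {0..ms}. (case u' of (x, s) \<Rightarrow> \<lambda>y. p x s * a x s y) y) = Pya p a y" for y
  proof -
    have "(\<Sum>u'\<in>{0..mx} \<times> {0..ms}. (case u' of (x, s) \<Rightarrow> \<lambda>y. p x s * a x s y) y) = (\<Sum>(x,s)\<in>{0..mx} \<times> {0..ms}. a x s y * p x s)"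
      by (rule sum.cong) (auto simp: mult.commute)
    also have "\<dots> = Pya p a y" unfolding Pya_def by (simp add: sum.cartesian_product)
    finally show ?thesis .
  qed
  have "Ia mx my ms a p = (\<Sum>u\<in>{0..mx} \<times> {0..ms}. \<Sum>y\<in>{0..my}. (case u of (x, s) \<Rightarrow> iterm p a x s y))"
    unfolding Ia_def mutinf_def m2
  proof (intro sum.cong refl, clarify)
    fix x s y assume xs: "x \<in> {0..mx}" "s \<in> {0..ms}" and y: "y \<in> {0..my}"
    show "(if p x s * a x s y = 0 then 0 else p x s * a x s y * ln (p x s * a x s y /
          ((\<Sum>v'\<in>{0..my}. p x s * a x s v') * Pya p a y))) = iterm p a x s y"
    proof (cases "a x s y * p x s = 0")
      case True then show ?thesis by (simp add: iterm_def mult.commute)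
    next
      case False
      have pp: "p x s > 0" "a x s y > 0" using False PXS_nonneg[OF assms(1)] Aset_nonneg[OF assms(2) xs y]
        by (auto simp: less_le)
      have py: "Pya p a y > 0" using Pya_ge_term[OF assms y xs] pp by (smt (verit) mult_pos_pos)
      have "ln (p x s * a x s y / (p x s * Pya p a y)) = ln (a x s y) - ln (Pya p a y)"
        using pp py by (simp add: ln_div ln_mult)
      then show ?thesis using False m1[OF xs] by (simp add: iterm_def mult.commute)
    qed
  qed
  also have "\<dots> = (\<Sum>(x,s)\<in>{0..mx} \<times> {0..ms}. \<Sum>y\<in>{0..my}. iterm p a x s y)"
    by (rule sum.cong) auto
  also have "\<dots> = (\<Sum>x\<in>{0..mx}. \<Sum>s\<in>{0..ms}. \<Sum>y\<in>{0..my}. iterm p a x s y)"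
    by (rule sum.cartesian_product[symmetric])
  finally show ?thesis .
qed

lemma Ia_nonneg:
  assumes "p \<in> PXS mx ms" "a \<in> Aset mx my ms"
  shows "Ia mx my ms a p \<ge> 0"
proof -
  have t: "iterm p a x s y \<ge> a x s y * p x s - p x s * Pya p a y"
    if xs: "x \<in> {0..mx}" "s \<in> {0..ms}" and y: "y \<in> {0..my}" for x s y
  proof (cases "a x s y * p x s = 0")
    case True
    have "p x s * Pya p a y \<ge> 0" using PXS_nonneg[OF assms(1)] Pya_nonneg[OF assms y] by simp
    then show ?thesis unfolding iterm_def True by simp
  next
    case False
    have pp: "p x s > 0" "a x s y > 0" using False PXS_nonneg[OF assms(1)] Aset_nonneg[OF assms(2) xs y]
      by (auto simp: less_le)
    have py: "Pya p a y > 0" using Pya_ge_term[OF assms y xs] pp by (smt (verit) mult_pos_pos)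
    have "a x s y * p x s * (ln (a x s y * p x s) - ln (p x s * Pya p a y)) \<ge> a x s y * p x s - p x s * Pya p a y"
      using pp py by (intro gibbs) auto
    then show ?thesis using False pp py by (simp add: iterm_def ln_mult algebra_simps)
  qed
  have "0 = (\<Sum>x\<in>{0..mx}. \<Sum>s\<in>{0..ms}. \<Sum>y\<in>{0..my}. a x s y * p x s - p x s * Pya p a y)"
  proof -
    have "(\<Sum>x\<in>{0..mx}. \<Sum>s\<in>{0..ms}. \<Sum>y\<in>{0..my}. a x s y * p x s - p x s * Pya p a y)
      = (\<Sum>x\<in>{0..mx}. \<Sum>s\<in>{0..ms}. p x s * (\<Sum>y\<in>{0..my}. a x s y) - p x s * (\<Sum>y\<in>{0..my}. Pya p a y))"
      by (simp add: sum_subtractf sum_distrib_left sum_distrib_right mult.commute)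
    also have "\<dots> = (\<Sum>x\<in>{0..mx}. \<Sum>s\<in>{0..ms}. 0)"
      by (intro sum.cong refl) (simp add: Aset_sum[OF assms(2)] Pya_sum[OF assms])
    finally show ?thesis by simp
  qed
  also have "\<dots> \<le> (\<Sum>x\<in>{0..mx}. \<Sum>s\<in>{0..ms}. \<Sum>y\<in>{0..my}. iterm p a x s y)"
    by (intro sum_mono t) auto
  finally show ?thesis using Ia_formula[OF assms] by simp
qed

lemma Ia_ent:
  assumes "p \<in> PXS mx ms" "a \<in> Aset mx my ms"
  shows "Ia mx my ms a p = (\<Sum>x\<in>{0..mx}. \<Sum>s\<in>{0..ms}. \<Sum>y\<in>{0..my}. p x s * (a x s y * ln (a x s y)))
      - (\<Sum>y\<in>{0..my}. Pya p a y * ln (Pya p a y))"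
proof -
  have t: "iterm p a x s y = p x s * (a x s y * ln (a x s y)) - a x s y * p x s * ln (Pya p a y)"
    if xs: "x \<in> {0..mx}" "s \<in> {0..ms}" and y: "y \<in> {0..my}" for x s y
    by (cases "a x s y * p x s = 0") (auto simp: iterm_def algebra_simps)
  have "(\<Sum>x\<in>{0..mx}. \<Sum>s\<in>{0..ms}. \<Sum>y\<in>{0..my}. a x s y * p x s * ln (Pya p a y))
      = (\<Sum>y\<in>{0..my}. Pya p a y * ln (Pya p a y))"
    unfolding Pya_def by (subst sum3_swap) (simp add: sum_distrib_right)
  have "(\<Sum>x\<in>{0..mx}. \<Sum>s\<in>{0..ms}. \<Sum>y\<in>{0..my}. iterm p a x s y)
     = (\<Sum>x\<in>{0..mx}. \<Sum>s\<in>{0..ms}. \<Sum>y\<in>{0..my}. p x s * (a x s y * ln (a x s y)) - a x s y * p x s * ln (Pya p a y))"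
    by (intro sum.cong refl t) auto
  also have "\<dots> = (\<Sum>x\<in>{0..mx}. \<Sum>s\<in>{0..ms}. \<Sum>y\<in>{0..my}. p x s * (a x s y * ln (a x s y)))
     - (\<Sum>x\<in>{0..mx}. \<Sum>s\<in>{0..ms}. \<Sum>y\<in>{0..my}. a x s y * p x s * ln (Pya p a y))"
    by (simp add: sum_subtractf)
  finally show ?thesis using Ia_formula[OF assms] \<open>_ = (\<Sum>y\<in>{0..my}. Pya p a y * ln (Pya p a y))\<close> by simp
qed

lemma Ia_le:
  assumes "p \<in> PXS mx ms" "a \<in> Aset mx my ms"
  shows "Ia mx my ms a p \<le> real (card {0..my})"
proof -
  have "(\<Sum>x\<in>{0..mx}. \<Sum>s\<in>{0..ms}. \<Sum>y\<in>{0..my}. p x s * (a x s y * ln (a x s y))) \<le> 0"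
  proof (intro sum_nonpos)
    fix x s y assume "x \<in> {0..mx}" "s \<in> {0..ms}" "y \<in> {0..my}"
    then have "0 \<le> a x s y" "a x s y \<le> 1" using assms Aset_nonneg Aset_le1 by auto
    then have "a x s y * ln (a x s y) \<le> 0"
    proof (cases "a x s y = 0")
      case False
      then have "ln (a x s y) \<le> 0" using \<open>0 \<le> a x s y\<close> \<open>a x s y \<le> 1\<close> ln_le_minus_one[of "a x s y"] by auto
      then show ?thesis using \<open>0 \<le> a x s y\<close> by (rule mult_nonneg_nonpos[rotated])
    qed simp
    then show "p x s * (a x s y * ln (a x s y)) \<le> 0"
      by (rule mult_nonneg_nonpos[OF PXS_nonneg[OF assms(1)]])
  qed
  moreover have "- (\<Sum>y\<in>{0..my}. Pya p a y * ln (Pya p a y)) \<le> (\<Sum>y\<in>{0..my}. 1)"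
    unfolding sum_negf[symmetric] by (intro sum_mono neg_xlnx_le Pya_nonneg assms)
  ultimately show ?thesis using Ia_ent[OF assms] by simp
qed

definition mix :: "real \<Rightarrow> belief \<Rightarrow> belief \<Rightarrow> belief" where
  "mix l p1 p2 = (\<lambda>x s. l * p1 x s + (1 - l) * p2 x s)"

lemma mix_PXS:
  assumes "p1 \<in> PXS mx ms" "p2 \<in> PXS mx ms" "0 \<le> l" "l \<le> 1"
  shows "mix l p1 p2 \<in> PXS mx ms"
  using assms unfolding PXS_def mix_def
  by (auto simp: sum.distrib sum_distrib_left[symmetric] intro!: add_nonneg_nonneg mult_nonneg_nonneg)

lemma Pya_mix: "Pya (mix l p1 p2) a y = l * Pya p1 a y + (1 - l) * Pya p2 a y"
proof -
  have "Pya (mix l p1 p2) a y = (\<Sum>x\<in>{0..mx}. \<Sum>s\<in>{0..ms}. l * (a x s y * p1 x s) + (1 - l) * (a x s y * p2 x s))"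
    unfolding Pya_def mix_def by (intro sum.cong refl) (simp add: algebra_simps)
  also have "\<dots> = l * Pya p1 a y + (1 - l) * Pya p2 a y"
    unfolding Pya_def by (simp add: sum.distrib sum_distrib_left)
  finally show ?thesis .
qed

lemma Nf_mix: "Nf (mix l p1 p2) a y x' s' = l * Nf p1 a y x' s' + (1 - l) * Nf p2 a y x' s'"
proof -
  have "Nf (mix l p1 p2) a y x' s' = (if x' \<in> {0..mx} \<and> s' \<in> {0..ms} then
      (\<Sum>x\<in>{0..mx}. l * (if s' + x - y \<in> {0..ms} then Q x x' * a x (s' + x - y) y * p1 x (s' + x - y) else 0)
       + (1 - l) * (if s' + x - y \<in> {0..ms} then Q x x' * a x (s' + x - y) y * p2 x (s' + x - y) else 0)) else 0)"
    unfolding Nf_def mix_def by (auto intro!: sum.cong simp: algebra_simps)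
  also have "\<dots> = l * Nf p1 a y x' s' + (1 - l) * Nf p2 a y x' s'"
    unfolding Nf_def by (simp add: sum.distrib sum_distrib_left)
  finally show ?thesis .
qed

lemma Ia_concave:
  assumes "p1 \<in> PXS mx ms" "p2 \<in> PXS mx ms" "0 \<le> l" "l \<le> 1" "a \<in> Aset mx my ms"
  shows "l * Ia mx my ms a p1 + (1 - l) * Ia mx my ms a p2 \<le> Ia mx my ms a (mix l p1 p2)"
proof -
  have mP: "mix l p1 p2 \<in> PXS mx ms" using mix_PXS assms by auto
  have lin: "(\<Sum>x\<in>{0..mx}. \<Sum>s\<in>{0..ms}. \<Sum>y\<in>{0..my}. mix l p1 p2 x s * (a x s y * ln (a x s y)))
    = l * (\<Sum>x\<in>{0..mx}. \<Sum>s\<in>{0..ms}. \<Sum>y\<in>{0..my}. p1 x s * (a x s y * ln (a x s y)))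
      + (1 - l) * (\<Sum>x\<in>{0..mx}. \<Sum>s\<in>{0..ms}. \<Sum>y\<in>{0..my}. p2 x s * (a x s y * ln (a x s y)))"
  proof -
    have "(\<Sum>x\<in>{0..mx}. \<Sum>s\<in>{0..ms}. \<Sum>y\<in>{0..my}. mix l p1 p2 x s * (a x s y * ln (a x s y)))
     = (\<Sum>x\<in>{0..mx}. \<Sum>s\<in>{0..ms}. \<Sum>y\<in>{0..my}. l * (p1 x s * (a x s y * ln (a x s y))) + (1 - l) * (p2 x s * (a x s y * ln (a x s y))))"
      unfolding mix_def by (intro sum.cong refl) (simp add: algebra_simps)
    also have "\<dots> = l * (\<Sum>x\<in>{0..mx}. \<Sum>s\<in>{0..ms}. \<Sum>y\<in>{0..my}. p1 x s * (a x s y * ln (a x s y)))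
      + (1 - l) * (\<Sum>x\<in>{0..mx}. \<Sum>s\<in>{0..ms}. \<Sum>y\<in>{0..my}. p2 x s * (a x s y * ln (a x s y)))"
      by (simp add: sum.distrib sum_distrib_left)
    finally show ?thesis .
  qed
  have cv: "(\<Sum>y\<in>{0..my}. Pya (mix l p1 p2) a y * ln (Pya (mix l p1 p2) a y))
     \<le> l * (\<Sum>y\<in>{0..my}. Pya p1 a y * ln (Pya p1 a y)) + (1 - l) * (\<Sum>y\<in>{0..my}. Pya p2 a y * ln (Pya p2 a y))"
    unfolding Pya_mix sum_distrib_left sum.distrib[symmetric]
    by (intro sum_mono xlnx_convex Pya_nonneg assms) 
  show ?thesis by (rule conc_comb[OF Ia_ent[OF assms(1,5)] Ia_ent[OF assms(2,5)] Ia_ent[OF mP assms(5)] lin cv])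
qed

end

context SM begin

lemma bellman_eq:
  "bellman mx my ms Q a V p = Ia mx my ms a p + (\<Sum>y\<in>{0..my}. Pya p a y * V (filt mx ms Q p y a))"
proof -
  have "(\<Sum>x\<in>{0..mx}. \<Sum>s\<in>{0..ms}. \<Sum>y\<in>{0..my}. p x s * a x s y * V (filt mx ms Q p y a))
     = (\<Sum>y\<in>{0..my}. \<Sum>x\<in>{0..mx}. \<Sum>s\<in>{0..ms}. p x s * a x s y * V (filt mx ms Q p y a))"
    by (rule sum3_swap)
  also have "\<dots> = (\<Sum>y\<in>{0..my}. Pya p a y * V (filt mx ms Q p y a))"
    unfolding Pya_def by (simp add: sum_distrib_right sum_distrib_left mult_ac)
  finally show ?thesis by (simp add: bellman_def)
qed

lemma persp_concave:
  assumes V: "concave_fun_on (PXS mx ms) V"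
    and p: "p1 \<in> PXS mx ms" "p2 \<in> PXS mx ms" and l: "0 \<le> l" "l \<le> 1"
    and a: "a \<in> Aset mx my ms" and y: "y \<in> {0..my}"
  shows "l * (Pya p1 a y * V (filt mx ms Q p1 y a)) + (1 - l) * (Pya p2 a y * V (filt mx ms Q p2 y a))
     \<le> Pya (mix l p1 p2) a y * V (filt mx ms Q (mix l p1 p2) y a)"
proof -
  define c1 where "c1 = l * Pya p1 a y"
  define c2 where "c2 = (1 - l) * Pya p2 a y"
  define f1 where "f1 = filt mx ms Q p1 y a"
  define f2 where "f2 = filt mx ms Q p2 y a"
  have c1: "c1 \<ge> 0" using l Pya_nonneg[OF p(1) a y] by (simp add: c1_def)
  have c2: "c2 \<ge> 0" using l Pya_nonneg[OF p(2) a y] by (simp add: c2_def)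
  have cm: "Pya (mix l p1 p2) a y = c1 + c2" by (simp add: Pya_mix c1_def c2_def)
  have lhs: "l * (Pya p1 a y * V f1) + (1 - l) * (Pya p2 a y * V f2) = c1 * V f1 + c2 * V f2"
    by (simp add: c1_def c2_def)
  show ?thesis
  proof (cases "c1 + c2 = 0")
    case True
    then have "c1 = 0" "c2 = 0" using c1 c2 by auto
    then show ?thesis using lhs cm True by (simp add: f1_def f2_def)
  next
    case False
    then have cp: "c1 + c2 > 0" using c1 c2 by simp
    define mu where "mu = c1 / (c1 + c2)"
    have mu: "0 \<le> mu" "mu \<le> 1" using c1 c2 cp by (auto simp: mu_def field_simps)
    have omu: "1 - mu = c2 / (c1 + c2)" using cp by (simp add: mu_def field_simps)
    have e1: "mu * f1 x s = l * Nf p1 a y x s / (c1 + c2)" for x s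
    proof (cases "Pya p1 a y = 0")
      case True
      then show ?thesis using Nf_zero[OF p(1) a y True] by (simp add: mu_def c1_def)
    next
      case False
      then show ?thesis by (simp add: mu_def c1_def f1_def filt_eq)
    qed
    have e2: "(1 - mu) * f2 x s = (1 - l) * Nf p2 a y x s / (c1 + c2)" for x s
    proof (cases "Pya p2 a y = 0")
      case True
      then show ?thesis using Nf_zero[OF p(2) a y True] by (simp add: omu c2_def)
    next
      case False
      then show ?thesis by (simp add: omu c2_def f2_def filt_eq)
    qed
    have fm: "filt mx ms Q (mix l p1 p2) y a = (\<lambda>x s. mu * f1 x s + (1 - mu) * f2 x s)"
      using False cm by (auto simp: filt_eq e1 e2 Nf_mix fun_eq_iff add_divide_distrib)
    have f1P: "f1 \<in> PXS mx ms" "f2 \<in> PXS mx ms" using filt_PXS a y p by (auto simp: f1_def f2_def)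
    have "mu * V f1 + (1 - mu) * V f2 \<le> V (filt mx ms Q (mix l p1 p2) y a)"
      using V f1P mu unfolding concave_fun_on_def fm by blast
    then have "(c1 + c2) * (mu * V f1 + (1 - mu) * V f2) \<le> (c1 + c2) * V (filt mx ms Q (mix l p1 p2) y a)"
      using cp by (intro mult_left_mono) auto
    moreover have "(c1 + c2) * (mu * V f1 + (1 - mu) * V f2) = c1 * V f1 + c2 * V f2"
    proof -
      have m1: "(c1 + c2) * mu = c1" using cp by (simp add: mu_def)
      have m2: "(c1 + c2) * (1 - mu) = c2" using cp by (simp add: omu)
      have "(c1 + c2) * (mu * V f1 + (1 - mu) * V f2) = ((c1 + c2) * mu) * V f1 + ((c1 + c2) * (1 - mu)) * V f2"
        by (simp add: algebra_simps)
      then show ?thesis unfolding m1 m2 .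
    qed
    ultimately show ?thesis using lhs cm by (simp add: f1_def f2_def)
  qed
qed

lemma bellman_concave:
  assumes V: "concave_fun_on (PXS mx ms) V"
    and p: "p1 \<in> PXS mx ms" "p2 \<in> PXS mx ms" and l: "0 \<le> l" "l \<le> 1"
    and a: "a \<in> Aset mx my ms"
  shows "l * bellman mx my ms Q a V p1 + (1 - l) * bellman mx my ms Q a V p2 \<le> bellman mx my ms Q a V (mix l p1 p2)"
proof -
  have "l * (\<Sum>y\<in>{0..my}. Pya p1 a y * V (filt mx ms Q p1 y a)) + (1 - l) * (\<Sum>y\<in>{0..my}. Pya p2 a y * V (filt mx ms Q p2 y a))
    \<le> (\<Sum>y\<in>{0..my}. Pya (mix l p1 p2) a y * V (filt mx ms Q (mix l p1 p2) y a))"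
    unfolding sum_distrib_left sum.distrib[symmetric]
    by (intro sum_mono persp_concave[OF V p l a]) auto
  moreover have "l * Ia mx my ms a p1 + (1 - l) * Ia mx my ms a p2 \<le> Ia mx my ms a (mix l p1 p2)"
    by (rule Ia_concave[OF p l a])
  ultimately show ?thesis unfolding bellman_eq by (simp add: algebra_simps)
qed

lemma bellman_nonneg:
  assumes "p \<in> PXS mx ms" "a \<in> Aset mx my ms" "\<And>p. p \<in> PXS mx ms \<Longrightarrow> V p \<ge> 0"
  shows "bellman mx my ms Q a V p \<ge> 0"
proof -
  have "\<forall>y\<in>{0..my}. V (filt mx ms Q p y a) \<ge> 0" using assms(3) filt_PXS[OF assms(1,2)] by auto
  then show ?thesis unfolding bellman_eq using assms
    by (intro add_nonneg_nonneg Ia_nonneg sum_nonneg mult_nonneg_nonneg Pya_nonneg) auto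
qed

lemma bellman_le:
  assumes "p \<in> PXS mx ms" "a \<in> Aset mx my ms" "\<And>p. p \<in> PXS mx ms \<Longrightarrow> V p \<le> M"
  shows "bellman mx my ms Q a V p \<le> real (card {0..my}) + M"
proof -
  have "(\<Sum>y\<in>{0..my}. Pya p a y * V (filt mx ms Q p y a)) \<le> (\<Sum>y\<in>{0..my}. Pya p a y * M)"
    using assms filt_PXS[OF assms(1,2)] by (intro sum_mono mult_left_mono Pya_nonneg) auto
  also have "\<dots> = M" using Pya_sum[OF assms(1,2)] by (simp add: sum_distrib_right[symmetric])
  finally show ?thesis unfolding bellman_eq using Ia_le[OF assms(1,2)] by simp
qed

abbreviation "W \<equiv> Wval mx my ms Q"
abbreviation "CY \<equiv> real (card {0..my})"

lemma Aset_ne: "Aset mx my ms \<noteq> {}" using a_default_Aset by auto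

lemma W_bounds: "p \<in> PXS mx ms \<Longrightarrow> 0 \<le> W k p \<and> W k p \<le> real k * CY"
proof (induction k arbitrary: p)
  case 0 then show ?case by simp
next
  case (Suc k)
  have nn: "\<And>a. a \<in> Aset mx my ms \<Longrightarrow> bellman mx my ms Q a (W k) p \<ge> 0"
    using Suc by (intro bellman_nonneg) auto
  have bdd: "bdd_below ((\<lambda>a. bellman mx my ms Q a (W k) p) ` Aset mx my ms)"
    using nn by (intro bdd_belowI[of _ 0]) auto
  have "0 \<le> W (Suc k) p" using nn Aset_ne by (simp add: cINF_greatest)
  moreover have "W (Suc k) p \<le> bellman mx my ms Q a_default (W k) p"
    using cINF_lower[OF bdd a_default_Aset] by simp
  moreover have "bellman mx my ms Q a_default (W k) p \<le> CY + real k * CY"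
    using Suc a_default_Aset by (intro bellman_le) auto
  ultimately show ?case by (simp add: algebra_simps)
qed

lemma W_le_bellman:
  assumes "p \<in> PXS mx ms" "a \<in> Aset mx my ms"
  shows "W (Suc k) p \<le> bellman mx my ms Q a (W k) p"
proof -
  have nn: "\<And>a. a \<in> Aset mx my ms \<Longrightarrow> bellman mx my ms Q a (W k) p \<ge> 0"
    using assms W_bounds by (intro bellman_nonneg) auto
  have bdd: "bdd_below ((\<lambda>a. bellman mx my ms Q a (W k) p) ` Aset mx my ms)"
    using nn by (intro bdd_belowI[of _ 0]) auto
  then show ?thesis using cINF_lower[OF bdd assms(2)] by simp
qed

lemma W_concave: "concave_fun_on (PXS mx ms) (W k)"
proof (induction k)
  case 0 then show ?case by (simp add: concave_fun_on_def)
next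
  case (Suc k)
  show ?case unfolding concave_fun_on_def
  proof (intro ballI allI impI)
    fix p1 p2 and l :: real assume p: "p1 \<in> PXS mx ms" "p2 \<in> PXS mx ms" and l: "0 \<le> l \<and> l \<le> 1"
    have mP: "mix l p1 p2 \<in> PXS mx ms" using mix_PXS p l by auto
    have "l * W (Suc k) p1 + (1 - l) * W (Suc k) p2 \<le> W (Suc k) (mix l p1 p2)"
    proof -
      have "l * W (Suc k) p1 + (1 - l) * W (Suc k) p2 \<le> bellman mx my ms Q a (W k) (mix l p1 p2)"
        if a: "a \<in> Aset mx my ms" for a
      proof -
        have "l * W (Suc k) p1 + (1 - l) * W (Suc k) p2 \<le> l * bellman mx my ms Q a (W k) p1 + (1 - l) * bellman mx my ms Q a (W k) p2"
          using l W_le_bellman[OF p(1) a] W_le_bellman[OF p(2) a] by (intro add_mono mult_left_mono) auto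
        also have "\<dots> \<le> bellman mx my ms Q a (W k) (mix l p1 p2)"
          using bellman_concave[OF Suc p _ _ a] l by auto
        finally show ?thesis .
      qed
      then show ?thesis using Aset_ne by (simp add: cINF_greatest)
    qed
    then show "l * W (Suc k) p1 + (1 - l) * W (Suc k) p2 \<le> W (Suc k) (\<lambda>x s. l * p1 x s + (1 - l) * p2 x s)"
      by (simp add: mix_def)
  qed
qed

end

lemma tendsto_fun_iff:
  "((f :: 'c \<Rightarrow> 'a \<Rightarrow> 'b::topological_space) \<longlongrightarrow> l) F \<longleftrightarrow> (\<forall>i. ((\<lambda>c. f c i) \<longlongrightarrow> l i) F)"
  using limitin_componentwise[of "\<lambda>_. euclidean" UNIV f l F]
  by (simp add: euclidean_product_topology)

lemma tendsto_belief_iff: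
  "((P :: 'c \<Rightarrow> int \<Rightarrow> int \<Rightarrow> real) \<longlongrightarrow> p) F \<longleftrightarrow> (\<forall>x s. ((\<lambda>n. P n x s) \<longlongrightarrow> p x s) F)"
  by (simp add: tendsto_fun_iff)

lemma tendsto_action_iff:
  "((A :: 'c \<Rightarrow> int \<Rightarrow> int \<Rightarrow> int \<Rightarrow> real) \<longlongrightarrow> a) F \<longleftrightarrow> (\<forall>x s y. ((\<lambda>n. A n x s y) \<longlongrightarrow> a x s y) F)"
  by (simp add: tendsto_fun_iff)

lemma xlnx_cont: "continuous_on {0..} (\<lambda>x::real. x * ln x)"
  unfolding continuous_on_eq_continuous_within
proof
  fix x :: real assume x: "x \<in> {0..}"
  show "continuous (at x within {0..}) (\<lambda>x. x * ln x)"
  proof (cases "x = 0")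
    case True
    have e: "at (0::real) within {0 ..} = at_right 0"
      by (auto simp: filter_eq_iff eventually_at_filter le_less)
    have "((\<lambda>x::real. x * ln x) \<longlongrightarrow> 0) (at_right 0)" by real_asymp
    then show ?thesis using True by (simp add: continuous_within e)
  next
    case False
    then have "((\<lambda>x. x * ln x) \<longlongrightarrow> x * ln x) (at x within {0..})"
      by (intro tendsto_intros) auto
    then show ?thesis by (simp add: continuous_within)
  qed
qed

lemma xlnx_tendsto:
  fixes f :: "'c \<Rightarrow> real"
  assumes "(f \<longlongrightarrow> t) F" "\<forall>\<^sub>F n in F. f n \<ge> 0" "t \<ge> 0"
  shows "((\<lambda>n. f n * ln (f n)) \<longlongrightarrow> t * ln t) F"
  using continuous_on_tendsto_compose[OF xlnx_cont assms(1)] assms(2,3) by auto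

context SM begin

lemma Pya_tendsto:
  assumes "\<And>x s. ((\<lambda>n. P n x s) \<longlongrightarrow> p x s) F" "\<And>x s y. ((\<lambda>n. A n x s y) \<longlongrightarrow> a x s y) F"
  shows "((\<lambda>n. Pya (P n) (A n) y) \<longlongrightarrow> Pya p a y) F"
  unfolding Pya_def by (intro tendsto_intros assms)

lemma Nf_tendsto:
  assumes "\<And>x s. ((\<lambda>n. P n x s) \<longlongrightarrow> p x s) F" "\<And>x s y. ((\<lambda>n. A n x s y) \<longlongrightarrow> a x s y) F"
  shows "((\<lambda>n. Nf (P n) (A n) y x' s') \<longlongrightarrow> Nf p a y x' s') F"
proof -
  have "((\<lambda>n. if s' + x - y \<in> {0..ms} then Q x x' * A n x (s' + x - y) y * P n x (s' + x - y) else 0)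
     \<longlongrightarrow> (if s' + x - y \<in> {0..ms} then Q x x' * a x (s' + x - y) y * p x (s' + x - y) else 0)) F" for x
    by (cases "s' + x - y \<in> {0..ms}") (auto intro!: tendsto_intros assms)
  then show ?thesis unfolding Nf_def
    by (cases "x' \<in> {0..mx} \<and> s' \<in> {0..ms}") (auto intro!: tendsto_sum)
qed

lemma Ia_tendsto:
  assumes hP: "\<And>x s. ((\<lambda>n. P n x s) \<longlongrightarrow> p x s) F" and hA: "\<And>x s y. ((\<lambda>n. A n x s y) \<longlongrightarrow> a x s y) F"
    and hPin: "\<And>n. P n \<in> PXS mx ms" and hAin: "\<And>n. A n \<in> Aset mx my ms"
    and hp: "p \<in> PXS mx ms" and ha: "a \<in> Aset mx my ms"
  shows "((\<lambda>n. Ia mx my ms (A n) (P n)) \<longlongrightarrow> Ia mx my ms a p) F"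
proof -
  have l1: "((\<lambda>n. A n x s y * ln (A n x s y)) \<longlongrightarrow> a x s y * ln (a x s y)) F"
    if "x \<in> {0..mx}" "s \<in> {0..ms}" "y \<in> {0..my}" for x s y
    using that by (intro xlnx_tendsto hA always_eventually allI Aset_nonneg[OF hAin] Aset_nonneg[OF ha])
  have l2: "((\<lambda>n. Pya (P n) (A n) y * ln (Pya (P n) (A n) y)) \<longlongrightarrow> Pya p a y * ln (Pya p a y)) F"
    if "y \<in> {0..my}" for y
    using that by (intro xlnx_tendsto Pya_tendsto hP hA always_eventually allI Pya_nonneg hPin hAin hp ha)
  have "((\<lambda>n. (\<Sum>x\<in>{0..mx}. \<Sum>s\<in>{0..ms}. \<Sum>y\<in>{0..my}. P n x s * (A n x s y * ln (A n x s y)))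
      - (\<Sum>y\<in>{0..my}. Pya (P n) (A n) y * ln (Pya (P n) (A n) y)))
    \<longlongrightarrow> (\<Sum>x\<in>{0..mx}. \<Sum>s\<in>{0..ms}. \<Sum>y\<in>{0..my}. p x s * (a x s y * ln (a x s y)))
      - (\<Sum>y\<in>{0..my}. Pya p a y * ln (Pya p a y))) F"
    by (intro tendsto_intros hP l1 l2) auto
  then show ?thesis using Ia_ent[OF hPin hAin] Ia_ent[OF hp ha] by simp
qed

lemma term_tendsto:
  assumes P: "\<And>x s. ((\<lambda>n. P n x s) \<longlongrightarrow> p x s) sequentially" and A: "\<And>x s y. ((\<lambda>n. A n x s y) \<longlongrightarrow> a x s y) sequentially"
    and Pin: "\<And>n. P n \<in> PXS mx ms" and Ain: "\<And>n. A n \<in> Aset mx my ms"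
    and p: "p \<in> PXS mx ms" and a: "a \<in> Aset mx my ms" and y: "y \<in> {0..my}"
    and V: "continuous_on (PXS mx ms) V" and Vb: "\<And>p. p \<in> PXS mx ms \<Longrightarrow> 0 \<le> V p \<and> V p \<le> M"
  shows "((\<lambda>n. Pya (P n) (A n) y * V (filt mx ms Q (P n) y (A n))) \<longlongrightarrow> Pya p a y * V (filt mx ms Q p y a)) sequentially"
proof (cases "Pya p a y = 0")
  case True
  have M: "M \<ge> 0" using Vb[OF p] by simp
  have "((\<lambda>n. Pya (P n) (A n) y * V (filt mx ms Q (P n) y (A n))) \<longlongrightarrow> 0) sequentially"
  proof (rule Lim_null_comparison)
    show "\<forall>\<^sub>F n in sequentially. norm (Pya (P n) (A n) y * V (filt mx ms Q (P n) y (A n))) \<le> Pya (P n) (A n) y * M"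
    proof (intro always_eventually allI)
      fix n
      have "0 \<le> V (filt mx ms Q (P n) y (A n))" "V (filt mx ms Q (P n) y (A n)) \<le> M"
        using Vb[OF filt_PXS[OF Pin Ain y]] by auto
      then show "norm (Pya (P n) (A n) y * V (filt mx ms Q (P n) y (A n))) \<le> Pya (P n) (A n) y * M"
        using Pya_nonneg[OF Pin Ain y] by (simp add: abs_mult mult_left_mono)
    qed
    show "((\<lambda>n. Pya (P n) (A n) y * M) \<longlongrightarrow> 0) sequentially"
      using Pya_tendsto[where P=P and A=A and p=p and a=a and y=y and F=sequentially, OF P A] True by (auto intro!: tendsto_eq_intros)
  qed
  then show ?thesis using True by simp
next
  case False
  then have pos: "Pya p a y > 0" using Pya_nonneg[OF p a y] by simp
  have Pyt: "((\<lambda>n. Pya (P n) (A n) y) \<longlongrightarrow> Pya p a y) sequentially" by (rule Pya_tendsto[OF P A])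
  have ev: "\<forall>\<^sub>F n in sequentially. Pya (P n) (A n) y > 0"
    using order_tendstoD(1)[OF Pyt pos] by simp
  have ft: "((\<lambda>n. filt mx ms Q (P n) y (A n)) \<longlongrightarrow> filt mx ms Q p y a) sequentially"
    unfolding tendsto_belief_iff
  proof (intro allI)
    fix x s
    have "((\<lambda>n. Nf (P n) (A n) y x s / Pya (P n) (A n) y) \<longlongrightarrow> Nf p a y x s / Pya p a y) sequentially"
      using False by (intro tendsto_intros Nf_tendsto[OF P A] Pyt)
    moreover have "\<forall>\<^sub>F n in sequentially. Nf (P n) (A n) y x s / Pya (P n) (A n) y = filt mx ms Q (P n) y (A n) x s"
      using ev by eventually_elim (simp add: filt_eq)
    ultimately show "((\<lambda>n. filt mx ms Q (P n) y (A n) x s) \<longlongrightarrow> filt mx ms Q p y a x s) sequentially"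
      using False by (simp add: filt_eq tendsto_cong)
  qed
  have "((\<lambda>n. V (filt mx ms Q (P n) y (A n))) \<longlongrightarrow> V (filt mx ms Q p y a)) sequentially"
    by (rule continuous_on_tendsto_compose[OF V ft]) (auto intro!: filt_PXS Pin Ain p a y always_eventually)
  then show ?thesis by (intro tendsto_intros Pyt)
qed

lemma bellman_tendsto:
  assumes P: "\<And>x s. ((\<lambda>n. P n x s) \<longlongrightarrow> p x s) sequentially" and A: "\<And>x s y. ((\<lambda>n. A n x s y) \<longlongrightarrow> a x s y) sequentially"
    and Pin: "\<And>n. P n \<in> PXS mx ms" and Ain: "\<And>n. A n \<in> Aset mx my ms"
    and p: "p \<in> PXS mx ms" and a: "a \<in> Aset mx my ms"
    and V: "continuous_on (PXS mx ms) V" and Vb: "\<And>p. p \<in> PXS mx ms \<Longrightarrow> 0 \<le> V p \<and> V p \<le> M"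
  shows "((\<lambda>n. bellman mx my ms Q (A n) V (P n)) \<longlongrightarrow> bellman mx my ms Q a V p) sequentially"
  unfolding bellman_eq
  by (intro tendsto_intros Ia_tendsto[OF P A Pin Ain p a] term_tendsto[OF P A Pin Ain p a _ V Vb])

end

lemma compact_funspace:
  assumes "compact S"
  shows "compact {f :: 'a \<Rightarrow> 'b::topological_space. \<forall>i. f i \<in> S}"
proof -
  have e: "{f :: 'a \<Rightarrow> 'b. \<forall>i. f i \<in> S} = PiE UNIV (\<lambda>_. S)"
    by (auto simp: PiE_UNIV_domain Pi_def)
  have "compactin (product_topology (\<lambda>_. euclidean) UNIV) (PiE UNIV (\<lambda>_. S::'b set))"
    using assms by (simp add: compactin_PiE)
  then show ?thesis unfolding e by (simp add: euclidean_product_topology)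
qed

lemma mutinf_cong:
  assumes "\<And>u v. u \<in> U \<Longrightarrow> v \<in> V \<Longrightarrow> f u v = g u v"
  shows "mutinf U V f = mutinf U V g"
proof -
  have s1: "\<And>u. u \<in> U \<Longrightarrow> (\<Sum>v'\<in>V. f u v') = (\<Sum>v'\<in>V. g u v')" by (rule sum.cong) (auto simp: assms)
  have s2: "\<And>v. v \<in> V \<Longrightarrow> (\<Sum>u'\<in>U. f u' v) = (\<Sum>u'\<in>U. g u' v)" by (rule sum.cong) (auto simp: assms)
  show ?thesis unfolding mutinf_def by (intro sum.cong refl) (simp add: assms s1 s2)
qed

context SM begin

lemma W_lower:
  assumes p: "p \<in> PXS mx ms" and q: "q \<in> PXS mx ms" and lam: "0 < lam" "lam \<le> 1"
    and ge: "\<And>x s. q x s \<ge> (1 - lam) * p x s"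
  shows "W k q \<ge> (1 - lam) * W k p"
proof -
  define r where "r = (\<lambda>x s. (q x s - (1 - lam) * p x s) / lam)"
  have rP: "r \<in> PXS mx ms"
  proof -
    have "(\<Sum>x\<in>{0..mx}. \<Sum>s\<in>{0..ms}. r x s) = ((\<Sum>x\<in>{0..mx}. \<Sum>s\<in>{0..ms}. q x s) - (1 - lam) * (\<Sum>x\<in>{0..mx}. \<Sum>s\<in>{0..ms}. p x s)) / lam"
      unfolding r_def by (simp add: sum_divide_distrib[symmetric] sum_subtractf sum_distrib_left)
    also have "\<dots> = 1" using PXS_sum[OF p] PXS_sum[OF q] lam by simp
    finally have "(\<Sum>x\<in>{0..mx}. \<Sum>s\<in>{0..ms}. r x s) = 1" .
    moreover have "r x s \<ge> 0" for x s using ge[of x s] lam by (simp add: r_def)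
    moreover have "r x s = 0" if "(x, s) \<notin> {0..mx} \<times> {0..ms}" for x s
      using PXS_out[OF p] PXS_out[OF q] that by (simp add: r_def)
    ultimately show ?thesis by (simp add: PXS_def)
  qed
  have mq: "mix lam r p = q" using lam by (simp add: mix_def r_def fun_eq_iff)
  have "lam * W k r + (1 - lam) * W k p \<le> W k (mix lam r p)"
    using W_concave[of k] rP p lam unfolding concave_fun_on_def mix_def by auto
  moreover have "W k r \<ge> 0" using W_bounds[OF rP] by simp
  ultimately show ?thesis using mq lam by (smt (verit) mult_nonneg_nonneg)
qed

lemma W_bdd:
  assumes "p \<in> PXS mx ms"
  shows "bdd_below ((\<lambda>a. bellman mx my ms Q a (W k) p) ` Aset mx my ms)"
proof -
  have "\<And>a. a \<in> Aset mx my ms \<Longrightarrow> bellman mx my ms Q a (W k) p \<ge> 0"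
    using assms W_bounds by (intro bellman_nonneg) auto
  then show ?thesis by (intro bdd_belowI[of _ 0]) auto
qed

lemma W_cont: "continuous_on (PXS mx ms) (W k)"
proof (induction k)
  case 0 then show ?case by simp
next
  case (Suc k)
  show ?case
  proof (rule continuous_on_sequentiallyI)
    fix u p assume u: "\<forall>n. u n \<in> PXS mx ms" and p: "p \<in> PXS mx ms" and conv: "u \<longlonglongrightarrow> p"
    have pw: "\<And>x s. (\<lambda>n. u n x s) \<longlonglongrightarrow> p x s" using conv by (simp add: tendsto_belief_iff)
    have Vb: "\<And>p. p \<in> PXS mx ms \<Longrightarrow> 0 \<le> W k p \<and> W k p \<le> real k * CY" using W_bounds by blast
    show "(\<lambda>n. W (Suc k) (u n)) \<longlonglongrightarrow> W (Suc k) p"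
    proof (rule tendstoI)
      fix e :: real assume e: "e > 0"
      obtain a where a: "a \<in> Aset mx my ms" and ba: "bellman mx my ms Q a (W k) p < W (Suc k) p + e"
        using cINF_less_iff[OF Aset_ne W_bdd[OF p, of k], where a="W (Suc k) p + e"] e by auto
      have bt: "(\<lambda>n. bellman mx my ms Q a (W k) (u n)) \<longlonglongrightarrow> bellman mx my ms Q a (W k) p"
        by (rule bellman_tendsto[OF pw _ _ _ p a Suc Vb]) (use u a in auto)
      have up: "\<forall>\<^sub>F n in sequentially. W (Suc k) (u n) < W (Suc k) p + e"
        using order_tendstoD(2)[OF bt ba]
      proof eventually_elim
        case (elim n) then show ?case using W_le_bellman[OF _ a, of "u n" k] u by force
      qed
      define lam where "lam = min 1 (e / (W (Suc k) p + 1))"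
      have Wp: "W (Suc k) p \<ge> 0" using W_bounds[OF p] by blast
      have lam: "0 < lam" "lam \<le> 1" using e Wp by (auto simp: lam_def)
      have ev1: "\<forall>\<^sub>F n in sequentially. \<forall>xs\<in>{0..mx} \<times> {0..ms}. u n (fst xs) (snd xs) \<ge> (1 - lam) * p (fst xs) (snd xs)"
      proof (rule eventually_ball_finite)
        show "finite ({0..mx} \<times> {0..ms})" by simp
        show "\<forall>xs\<in>{0..mx} \<times> {0..ms}. \<forall>\<^sub>F n in sequentially. (1 - lam) * p (fst xs) (snd xs) \<le> u n (fst xs) (snd xs)"
        proof
          fix xs assume "xs \<in> {0..mx} \<times> {0..ms}"
          show "\<forall>\<^sub>F n in sequentially. (1 - lam) * p (fst xs) (snd xs) \<le> u n (fst xs) (snd xs)"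
          proof (cases "p (fst xs) (snd xs) = 0")
            case True then show ?thesis using u by (auto intro!: always_eventually PXS_nonneg)
          next
            case False
            then have "p (fst xs) (snd xs) > 0" using PXS_nonneg[OF p] by (simp add: less_le)
            then have "(1 - lam) * p (fst xs) (snd xs) < p (fst xs) (snd xs)" using lam by simp
            from order_tendstoD(1)[OF pw this] show ?thesis by eventually_elim simp
          qed
        qed
      qed
      have lo: "\<forall>\<^sub>F n in sequentially. W (Suc k) (u n) > W (Suc k) p - e"
        using ev1
      proof eventually_elim
        case (elim n)
        have ge: "u n x s \<ge> (1 - lam) * p x s" for x s
        proof (cases "(x, s) \<in> {0..mx} \<times> {0..ms}")
          case True then show ?thesis using elim by force
        next
          case False
          have "u n x s \<ge> 0" using u PXS_nonneg by blast
          moreover have "p x s = 0" using PXS_out[OF p] False by auto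
          ultimately show ?thesis by simp
        qed
        have "W (Suc k) (u n) \<ge> (1 - lam) * W (Suc k) p" by (rule W_lower[OF p _ lam ge]) (use u in auto)
        moreover have "lam * W (Suc k) p < e"
        proof -
          have "lam * W (Suc k) p \<le> e / (W (Suc k) p + 1) * W (Suc k) p"
            using Wp by (intro mult_right_mono) (auto simp: lam_def)
          also have "\<dots> < e" using e Wp by (simp add: field_simps)
          finally show ?thesis .
        qed
        ultimately show ?case by (simp add: algebra_simps)
      qed
      show "\<forall>\<^sub>F n in sequentially. dist (W (Suc k) (u n)) (W (Suc k) p) < e"
        using up lo by eventually_elim (simp add: dist_real_def abs_less_iff)
    qed
  qed
qed

definition trunc :: "action \<Rightarrow> action" where
  "trunc a = (\<lambda>x s y. if x \<in> {0..mx} \<and> s \<in> {0..ms} \<and> y \<in> {0..my} then a x s y else 0)"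

lemma bellman_cong:
  assumes eq: "\<And>x s y. x \<in> {0..mx} \<Longrightarrow> s \<in> {0..ms} \<Longrightarrow> y \<in> {0..my} \<Longrightarrow> a x s y = a' x s y"
  shows "bellman mx my ms Q a V p = bellman mx my ms Q a' V p"
proof -
  have f: "filt mx ms Q p y a = filt mx ms Q p y a'" if "y \<in> {0..my}" for y
    unfolding filt_def Let_def using that by (intro ext) (auto intro!: sum.cong simp: eq)
  have i: "Ia mx my ms a p = Ia mx my ms a' p"
    unfolding Ia_def by (rule mutinf_cong) (auto simp: eq)
  show ?thesis unfolding bellman_def i by (intro arg_cong2[where f="(+)"] refl sum.cong) (auto simp: eq f)
qed

lemma trunc_Aset:
  assumes a: "a \<in> Aset mx my ms" shows "trunc a \<in> Aset mx my ms"
proof -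
  have "(\<forall>y\<in>{0..my}. trunc a x s y \<ge> 0) \<and> (\<Sum>y\<in>{0..my}. trunc a x s y) = 1
      \<and> (\<Sum>y\<in>Yo my ms (s - x). trunc a x s y) = 1" if xs: "x \<in> {0..mx}" "s \<in> {0..ms}" for x s
  proof -
    have e: "\<forall>y\<in>{0..my}. trunc a x s y = a x s y" using xs by (simp add: trunc_def)
    have sub: "Yo my ms (s - x) \<subseteq> {0..my}" by (auto simp: Yo_def)
    have "(\<Sum>y\<in>{0..my}. trunc a x s y) = (\<Sum>y\<in>{0..my}. a x s y)" using e by (intro sum.cong) auto
    moreover have "(\<Sum>y\<in>Yo my ms (s - x). trunc a x s y) = (\<Sum>y\<in>Yo my ms (s - x). a x s y)"
      using e sub by (intro sum.cong) auto
    ultimately show ?thesis using a xs e by (auto simp: Aset_def)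
  qed
  then show ?thesis by (simp add: Aset_def)
qed

lemma trunc_bellman: "bellman mx my ms Q (trunc a) V p = bellman mx my ms Q a V p"
  by (rule bellman_cong) (simp add: trunc_def)

lemma W_attain:
  assumes p: "p \<in> PXS mx ms"
  shows "\<exists>a\<in>Aset mx my ms. bellman mx my ms Q a (W k) p = W (Suc k) p"
proof -
  have Vb: "\<And>p. p \<in> PXS mx ms \<Longrightarrow> 0 \<le> W k p \<and> W k p \<le> real k * CY" using W_bounds by blast
  have "\<forall>n. \<exists>a\<in>Aset mx my ms. bellman mx my ms Q a (W k) p < W (Suc k) p + inverse (real (Suc n))"
  proof
    fix n
    have "W (Suc k) p < W (Suc k) p + inverse (real (Suc n))" by simp
    then show "\<exists>a\<in>Aset mx my ms. bellman mx my ms Q a (W k) p < W (Suc k) p + inverse (real (Suc n))"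
      using cINF_less_iff[OF Aset_ne W_bdd[OF p, of k], where a="W (Suc k) p + inverse (real (Suc n))"] by simp
  qed
  then obtain A where A: "\<And>n. A n \<in> Aset mx my ms"
    and Ab: "\<And>n. bellman mx my ms Q (A n) (W k) p < W (Suc k) p + inverse (real (Suc n))"
    by metis
  define K where "K = {a :: action. \<forall>x. a x \<in> {f. \<forall>s. f s \<in> {g. \<forall>y. g y \<in> {0..(1::real)}}}}"
  have cK: "compact K" unfolding K_def by (intro compact_funspace compact_Icc)
  define B where "B n = trunc (A n)" for n
  have BA: "B n \<in> Aset mx my ms" for n using trunc_Aset A by (simp add: B_def)
  have BK: "B n \<in> K" for n
    using Aset_nonneg[OF A] Aset_le1[OF A] by (auto simp: K_def B_def trunc_def)
  obtain l r where lK: "l \<in> K" and r: "strict_mono r" and lim: "(B \<circ> r) \<longlonglongrightarrow> l"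
    using seq_compactE[OF compact_imp_seq_compact[OF cK], of B] BK by blast
  have pw: "\<And>x s y. (\<lambda>n. B (r n) x s y) \<longlonglongrightarrow> l x s y"
    using lim by (simp add: tendsto_action_iff o_def)
  have lA: "l \<in> Aset mx my ms"
    unfolding Aset_def
  proof (intro CollectI ballI conjI)
    fix x s assume xs: "x \<in> {0..mx}" "s \<in> {0..ms}"
    show "\<And>y. y \<in> {0..my} \<Longrightarrow> l x s y \<ge> 0" using lK by (auto simp: K_def)
    have "(\<lambda>n. \<Sum>y\<in>{0..my}. B (r n) x s y) \<longlonglongrightarrow> (\<Sum>y\<in>{0..my}. l x s y)" by (intro tendsto_intros pw)
    moreover have "(\<lambda>n. \<Sum>y\<in>{0..my}. B (r n) x s y) = (\<lambda>n. 1)" using Aset_sum[OF BA xs] by simp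
    ultimately show "(\<Sum>y\<in>{0..my}. l x s y) = 1" using LIMSEQ_unique tendsto_const by metis
    have "(\<lambda>n. \<Sum>y\<in>Yo my ms (s - x). B (r n) x s y) \<longlonglongrightarrow> (\<Sum>y\<in>Yo my ms (s - x). l x s y)" by (intro tendsto_intros pw)
    moreover have "(\<lambda>n. \<Sum>y\<in>Yo my ms (s - x). B (r n) x s y) = (\<lambda>n. 1)" using BA xs by (simp add: Aset_def)
    ultimately show "(\<Sum>y\<in>Yo my ms (s - x). l x s y) = 1" using LIMSEQ_unique tendsto_const by metis
  qed
  have t1: "(\<lambda>n. bellman mx my ms Q (B (r n)) (W k) p) \<longlonglongrightarrow> bellman mx my ms Q l (W k) p"
    by (rule bellman_tendsto[OF _ pw _ _ p lA W_cont Vb]) (use p BA in auto)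
  have t2: "(\<lambda>n. bellman mx my ms Q (B (r n)) (W k) p) \<longlonglongrightarrow> W (Suc k) p"
  proof (rule tendsto_sandwich[of "\<lambda>n. W (Suc k) p" _ _ "\<lambda>n. W (Suc k) p + inverse (real (Suc n))"])
    show "\<forall>\<^sub>F n in sequentially. W (Suc k) p \<le> bellman mx my ms Q (B (r n)) (W k) p"
      using W_le_bellman[OF p BA] by simp
    show "\<forall>\<^sub>F n in sequentially. bellman mx my ms Q (B (r n)) (W k) p \<le> W (Suc k) p + inverse (real (Suc n))"
    proof (intro always_eventually allI)
      fix n
      have "bellman mx my ms Q (B (r n)) (W k) p < W (Suc k) p + inverse (real (Suc (r n)))"
        using Ab[of "r n"] by (simp add: B_def trunc_bellman)
      also have "inverse (real (Suc (r n))) \<le> inverse (real (Suc n))"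
        using seq_suble[OF r, of n] by (simp add: field_simps)
      finally show "bellman mx my ms Q (B (r n)) (W k) p \<le> W (Suc k) p + inverse (real (Suc n))" by simp
    qed
    show "(\<lambda>n. W (Suc k) p) \<longlonglongrightarrow> W (Suc k) p" by simp
    show "(\<lambda>n. W (Suc k) p + inverse (real (Suc n))) \<longlonglongrightarrow> W (Suc k) p"
      using tendsto_add[OF tendsto_const LIMSEQ_inverse_real_of_nat, of "W (Suc k) p"] by simp
  qed
  show ?thesis using LIMSEQ_unique[OF t1 t2] lA by blast
qed

end

lemma seqs_mem: "l \<in> seqs n A \<longleftrightarrow> length l = n \<and> set l \<subseteq> A"
  by (simp add: seqs_def)

lemma seqs_0: "seqs 0 A = {[]}"
  by (auto simp: seqs_def)

lemma seqs_Suc: "seqs (Suc n) A = (\<lambda>(l, a). l @ [a]) ` (seqs n A \<times> A)"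
proof (intro set_eqI iffI)
  fix l assume "l \<in> seqs (Suc n) A"
  then have l: "length l = Suc n" "set l \<subseteq> A" by (auto simp: seqs_def)
  then have "l = butlast l @ [last l]" by (metis append_butlast_last_id list.size(3) nat.distinct(1))
  moreover have "butlast l \<in> seqs n A" using l by (auto simp: seqs_def dest: in_set_butlastD)
  moreover have "last l \<in> A" using l by (metis last_in_set list.size(3) nat.distinct(1) subset_code(1))
  ultimately show "l \<in> (\<lambda>(l, a). l @ [a]) ` (seqs n A \<times> A)" by (auto intro!: image_eqI[where x="(butlast l, last l)"])
qed (auto simp: seqs_def)

lemma finite_seqs: "finite A \<Longrightarrow> finite (seqs n A)"
  by (induction n) (auto simp: seqs_0 seqs_Suc)

lemma sum_seqs_Suc:
  assumes "finite A"
  shows "(\<Sum>l\<in>seqs (Suc n) A. f l) = (\<Sum>l\<in>seqs n A. \<Sum>a\<in>A. f (l @ [a]))"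
proof -
  have inj: "inj_on (\<lambda>(l, a). l @ [a]) (seqs n A \<times> A)" by (auto simp: inj_on_def)
  have "(\<Sum>l\<in>seqs (Suc n) A. f l) = (\<Sum>p\<in>seqs n A \<times> A. f ((\<lambda>(l, a). l @ [a]) p))"
    unfolding seqs_Suc by (rule sum.reindex[OF inj, unfolded o_def])
  also have "\<dots> = (\<Sum>l\<in>seqs n A. \<Sum>a\<in>A. f (l @ [a]))"
    by (simp add: sum.cartesian_product split_beta)
  finally show ?thesis .
qed

lemma seqs_snoc_mem: "l @ [a] \<in> seqs (Suc n) A \<longleftrightarrow> l \<in> seqs n A \<and> a \<in> A"
  by (auto simp: seqs_def)

lemma sum5_nested:
  "(\<Sum>(a,b,c,d,e)\<in>A \<times> B \<times> C \<times> D \<times> E. f a b c d e) = (\<Sum>a\<in>A. \<Sum>b\<in>B. \<Sum>c\<in>C. \<Sum>d\<in>D. \<Sum>e\<in>E. f a b c d e)"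
  by (simp add: sum.cartesian_product split_beta)

lemma seqs_SucE:
  assumes "l \<in> seqs (Suc n) A"
  obtains l0 a where "l = l0 @ [a]" "l0 \<in> seqs n A" "a \<in> A"
  using assms unfolding seqs_Suc by auto

lemma seqs_nth: "l \<in> seqs n A \<Longrightarrow> i < n \<Longrightarrow> l ! i \<in> A"
  by (auto simp: seqs_def)

locale POL = SM +
  fixes PX1 PS1 :: "int \<Rightarrow> real" and q :: policy
  assumes PX1: "is_pmf_on {0..mx} PX1" and PS1: "is_pmf_on {0..ms} PS1"
    and qpol: "q \<in> policies mx my ms"
begin

abbreviation "LX n \<equiv> seqs n {0..mx}"
abbreviation "LS n \<equiv> seqs n {0..ms}"
abbreviation "LY n \<equiv> seqs n {0..my}"

lemma PX1_nonneg: "x \<in> {0..mx} \<Longrightarrow> PX1 x \<ge> 0" using PX1 by (auto simp: is_pmf_on_def)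
lemma PS1_nonneg: "s \<in> {0..ms} \<Longrightarrow> PS1 s \<ge> 0" using PS1 by (auto simp: is_pmf_on_def)
lemma PX1_sum: "(\<Sum>x\<in>{0..mx}. PX1 x) = 1" using PX1 by (auto simp: is_pmf_on_def)
lemma PS1_sum: "(\<Sum>s\<in>{0..ms}. PS1 s) = 1" using PS1 by (auto simp: is_pmf_on_def)

definition qn :: "nat \<Rightarrow> int list \<Rightarrow> int \<Rightarrow> int list \<Rightarrow> int \<Rightarrow> int list \<Rightarrow> int \<Rightarrow> real" where
  "qn n xs x ss s ys y = q (Suc n) (xs @ [x]) (ss @ [s]) ys y"

lemma q_facts:
  assumes "xs \<in> LX n" "x \<in> {0..mx}" "ss \<in> LS n" "s \<in> {0..ms}" "ys \<in> LY n"
  shows "(\<forall>y\<in>{0..my}. qn n xs x ss s ys y \<ge> 0) \<and> (\<Sum>y\<in>{0..my}. qn n xs x ss s ys y) = 1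
      \<and> (\<Sum>y\<in>Yo my ms (s - x). qn n xs x ss s ys y) = 1"
proof -
  have m: "xs @ [x] \<in> seqs (Suc n) {0..mx}" "ss @ [s] \<in> seqs (Suc n) {0..ms}" "ys \<in> seqs n {0..my}"
    using assms by (auto simp: seqs_snoc_mem)
  have P: "\<And>t xs ss ys. t \<ge> 1 \<Longrightarrow> xs \<in> seqs t {0..mx} \<Longrightarrow> ss \<in> seqs t {0..ms} \<Longrightarrow> ys \<in> seqs (t - 1) {0..my} \<Longrightarrow>
      (\<forall>y\<in>{0..my}. q t xs ss ys y \<ge> 0) \<and> (\<Sum>y\<in>{0..my}. q t xs ss ys y) = 1
      \<and> (\<Sum>y\<in>Yo my ms (last ss - last xs). q t xs ss ys y) = 1"
    using qpol unfolding policies_def by blast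
  have "(\<forall>y\<in>{0..my}. q (Suc n) (xs @ [x]) (ss @ [s]) ys y \<ge> 0) \<and> (\<Sum>y\<in>{0..my}. q (Suc n) (xs @ [x]) (ss @ [s]) ys y) = 1
      \<and> (\<Sum>y\<in>Yo my ms (last (ss @ [s]) - last (xs @ [x])). q (Suc n) (xs @ [x]) (ss @ [s]) ys y) = 1"
    using P[of "Suc n" "xs @ [x]" "ss @ [s]" ys] m by simp
  then show ?thesis by (simp add: qn_def)
qed

lemma q_nonneg:
  assumes "xs \<in> LX n" "x \<in> {0..mx}" "ss \<in> LS n" "s \<in> {0..ms}" "ys \<in> LY n" "y \<in> {0..my}"
  shows "qn n xs x ss s ys y \<ge> 0"
  using q_facts[OF assms(1-5)] assms(6) by auto

lemma q_sum:
  assumes "xs \<in> LX n" "x \<in> {0..mx}" "ss \<in> LS n" "s \<in> {0..ms}" "ys \<in> LY n"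
  shows "(\<Sum>y\<in>{0..my}. qn n xs x ss s ys y) = 1"
  using q_facts[OF assms] by auto

lemma q_supp:
  assumes "xs \<in> LX n" "x \<in> {0..mx}" "ss \<in> LS n" "s \<in> {0..ms}" "ys \<in> LY n" "y \<in> {0..my}"
    and nz: "qn n xs x ss s ys y \<noteq> 0"
  shows "s - x + y \<in> {0..ms}"
proof (rule ccontr)
  assume n: "s - x + y \<notin> {0..ms}"
  have "qn n xs x ss s ys y = 0"
    apply (rule sum_subset_one_zero[where B="{0..my}" and C="Yo my ms (s - x)" and g="qn n xs x ss s ys"])
    using q_facts[OF assms(1-5)] assms(6) n by (auto simp: Yo_def)
  then show False using nz by simp
qed

definition J :: "nat \<Rightarrow> int list \<Rightarrow> int list \<Rightarrow> int list \<Rightarrow> real" where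
  "J n xs ss ys = joint PX1 PS1 Q q n ss xs ys"

definition iQ :: "int \<Rightarrow> int \<Rightarrow> int \<Rightarrow> int \<Rightarrow> int \<Rightarrow> real" where
  "iQ x s y x' s' = (if s' = s - x + y then 1 else 0) * Q x x'"

definition Kx :: "nat \<Rightarrow> int list \<Rightarrow> int \<Rightarrow> int list \<Rightarrow> int \<Rightarrow> int list \<Rightarrow> real" where
  "Kx n xs x ss s ys = (if n = 0 then PX1 x * PS1 s else J n xs ss ys * iQ (last xs) (last ss) (last ys) x s)"

definition Cq :: "nat \<Rightarrow> int list \<Rightarrow> int list \<Rightarrow> int list \<Rightarrow> real" where
  "Cq n xs ss ys = (\<Prod>i<n. q (Suc i) (take (Suc i) xs) (take (Suc i) ss) (take i ys) (ys ! i))"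

lemma J_0: "J 0 xs ss ys = 1" by (simp add: J_def joint_def)

lemma JK:
  assumes "length xs = n" "length ss = n" "length ys = n"
  shows "J (Suc n) (xs @ [x]) (ss @ [s]) (ys @ [y]) = Kx n xs x ss s ys * qn n xs x ss s ys y"
proof -
  define f where "f xs ss ys i = (if i = 0 then PS1 (ss ! 0) * PX1 (xs ! 0)
              else (if ss ! i = ss ! (i - 1) - xs ! (i - 1) + ys ! (i - 1) then 1 else 0)
                   * Q (xs ! (i - 1)) (xs ! i))
            * q (Suc i) (take (Suc i) xs) (take (Suc i) ss) (take i ys) (ys ! i)" for xs ss ys :: "int list" and i
  have Jf: "J m xs' ss' ys' = (\<Prod>i<m. f xs' ss' ys' i)" for m xs' ss' ys'
    by (simp add: J_def joint_def f_def)
  have eq: "f (xs @ [x]) (ss @ [s]) (ys @ [y]) i = f xs ss ys i" if "i < n" for i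
    using that assms by (auto simp: f_def nth_append)
  have "J (Suc n) (xs @ [x]) (ss @ [s]) (ys @ [y]) = J n xs ss ys * f (xs @ [x]) (ss @ [s]) (ys @ [y]) n"
    unfolding Jf by (simp add: eq)
  also have "f (xs @ [x]) (ss @ [s]) (ys @ [y]) n = (if n = 0 then PS1 s * PX1 x else iQ (last xs) (last ss) (last ys) x s) * qn n xs x ss s ys y"
  proof (cases n)
    case 0 then show ?thesis using assms by (simp add: f_def qn_def)
  next
    case (Suc m)
    have ne: "xs \<noteq> []" "ss \<noteq> []" "ys \<noteq> []" using assms Suc by auto
    have "last xs = xs ! m" "last ss = ss ! m" "last ys = ys ! m" using assms Suc ne by (simp_all add: last_conv_nth)
    then show ?thesis using assms Suc by (simp add: f_def nth_append iQ_def qn_def)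
  qed
  finally show ?thesis by (cases "n = 0") (auto simp: Kx_def J_0)
qed

lemma Kx_Suc:
  assumes "length xs = n" "length ss = n" "length ys = n"
  shows "Kx (Suc n) (xs @ [x]) x' (ss @ [s]) s' (ys @ [y]) = Kx n xs x ss s ys * qn n xs x ss s ys y * iQ x s y x' s'"
  using JK[OF assms] by (simp add: Kx_def)

lemma Cq_0: "Cq 0 xs ss ys = 1" by (simp add: Cq_def)

lemma Cq_Suc:
  assumes "length xs = n" "length ss = n" "length ys = n"
  shows "Cq (Suc n) (xs @ [x]) (ss @ [s]) (ys @ [y]) = Cq n xs ss ys * qn n xs x ss s ys y"
proof -
  define g where "g xs' ss' ys' i = q (Suc i) (take (Suc i) xs') (take (Suc i) ss') (take i ys') (ys' ! i)" for xs' ss' ys' i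
  have "g (xs @ [x]) (ss @ [s]) (ys @ [y]) i = g xs ss ys i" if "i < n" for i
    using that assms by (simp add: nth_append g_def)
  then have "(\<Prod>i<n. g (xs @ [x]) (ss @ [s]) (ys @ [y]) i) = (\<Prod>i<n. g xs ss ys i)" by (intro prod.cong) auto
  moreover have "g (xs @ [x]) (ss @ [s]) (ys @ [y]) n = qn n xs x ss s ys y"
    using assms by (simp add: g_def qn_def nth_append)
  ultimately show ?thesis unfolding Cq_def g_def[symmetric] by simp
qed

lemma iQ_nonneg: "x \<in> {0..mx} \<Longrightarrow> x' \<in> {0..mx} \<Longrightarrow> iQ x s y x' s' \<ge> 0"
  by (simp add: iQ_def Q_nonneg)

lemma iQ_sum:
  assumes "x \<in> {0..mx}" "s - x + y \<in> {0..ms}"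
  shows "(\<Sum>x'\<in>{0..mx}. \<Sum>s'\<in>{0..ms}. iQ x s y x' s') = 1"
proof -
  have "(\<Sum>s'\<in>{0..ms}. iQ x s y x' s') = Q x x'" for x'
    unfolding iQ_def using sum_ind_eq[of "{0..ms}" "s - x + y" "\<lambda>_. Q x x'"] assms by simp
  then show ?thesis using Q_sum[OF assms(1)] by simp
qed

lemma JK_nonneg:
  "xs \<in> LX n \<Longrightarrow> ss \<in> LS n \<Longrightarrow> ys \<in> LY n \<Longrightarrow> J n xs ss ys \<ge> 0
    \<and> (\<forall>x\<in>{0..mx}. \<forall>s\<in>{0..ms}. Kx n xs x ss s ys \<ge> 0)"
proof (induction n arbitrary: xs ss ys)
  case 0
  then show ?case by (auto simp: J_0 Kx_def PX1_nonneg PS1_nonneg seqs_0)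
next
  case (Suc n)
  obtain xs0 x where xs: "xs = xs0 @ [x]" "xs0 \<in> LX n" "x \<in> {0..mx}" using Suc.prems(1) by (rule seqs_SucE)
  obtain ss0 s where ss: "ss = ss0 @ [s]" "ss0 \<in> LS n" "s \<in> {0..ms}" using Suc.prems(2) by (rule seqs_SucE)
  obtain ys0 y where ys: "ys = ys0 @ [y]" "ys0 \<in> LY n" "y \<in> {0..my}" using Suc.prems(3) by (rule seqs_SucE)
  have l: "length xs0 = n" "length ss0 = n" "length ys0 = n" using xs ss ys by (auto simp: seqs_def)
  have J: "J (Suc n) xs ss ys \<ge> 0"
    unfolding xs ss ys JK[OF l] using Suc.IH[OF xs(2) ss(2) ys(2)] xs ss ys
    by (intro mult_nonneg_nonneg q_nonneg) auto
  moreover have "\<forall>x'\<in>{0..mx}. \<forall>s'\<in>{0..ms}. Kx (Suc n) xs x' ss s' ys \<ge> 0"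
    using J xs by (auto simp: Kx_def iQ_nonneg simp del: JK)
  ultimately show ?case by simp
qed

lemma J_nonneg: "xs \<in> LX n \<Longrightarrow> ss \<in> LS n \<Longrightarrow> ys \<in> LY n \<Longrightarrow> J n xs ss ys \<ge> 0"
  using JK_nonneg by blast

lemma Kx_nonneg: "xs \<in> LX n \<Longrightarrow> x \<in> {0..mx} \<Longrightarrow> ss \<in> LS n \<Longrightarrow> s \<in> {0..ms} \<Longrightarrow> ys \<in> LY n \<Longrightarrow> Kx n xs x ss s ys \<ge> 0"
  using JK_nonneg by blast

lemma Kx_Cq_pos:
  "xs \<in> LX n \<Longrightarrow> x \<in> {0..mx} \<Longrightarrow> ss \<in> LS n \<Longrightarrow> s \<in> {0..ms} \<Longrightarrow> ys \<in> LY n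
   \<Longrightarrow> Kx n xs x ss s ys \<noteq> 0 \<Longrightarrow> Cq n xs ss ys > 0"
proof (induction n arbitrary: xs x ss s ys)
  case 0 then show ?case by (simp add: Cq_0)
next
  case (Suc n)
  obtain xs0 x0 where xs: "xs = xs0 @ [x0]" "xs0 \<in> LX n" "x0 \<in> {0..mx}" using Suc.prems(1) by (rule seqs_SucE)
  obtain ss0 s0 where ss: "ss = ss0 @ [s0]" "ss0 \<in> LS n" "s0 \<in> {0..ms}" using Suc.prems(3) by (rule seqs_SucE)
  obtain ys0 y where ys: "ys = ys0 @ [y]" "ys0 \<in> LY n" "y \<in> {0..my}" using Suc.prems(5) by (rule seqs_SucE)
  have l: "length xs0 = n" "length ss0 = n" "length ys0 = n" using xs ss ys by (auto simp: seqs_def)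
  have nz: "Kx n xs0 x0 ss0 s0 ys0 \<noteq> 0" "qn n xs0 x0 ss0 s0 ys0 y \<noteq> 0"
    using Suc.prems(6) unfolding xs ss ys Kx_Suc[OF l] by auto
  have "Cq n xs0 ss0 ys0 > 0" using Suc.IH[OF xs(2,3) ss(2,3) ys(2) nz(1)] .
  moreover have "qn n xs0 x0 ss0 s0 ys0 y > 0" using nz(2) q_nonneg[OF xs(2,3) ss(2,3) ys(2,3)] by simp
  ultimately show ?case unfolding xs ss ys Cq_Suc[OF l] by simp
qed

end

lemma sum4_swap: "(\<Sum>a\<in>A. \<Sum>b\<in>B. \<Sum>c\<in>C. \<Sum>d\<in>D. f a b c d) = (\<Sum>c\<in>C. \<Sum>d\<in>D. \<Sum>a\<in>A. \<Sum>b\<in>B. f a b c d)"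
proof -
  have "(\<Sum>a\<in>A. \<Sum>b\<in>B. \<Sum>c\<in>C. \<Sum>d\<in>D. f a b c d) = (\<Sum>a\<in>A. \<Sum>c\<in>C. \<Sum>b\<in>B. \<Sum>d\<in>D. f a b c d)"
    by (rule sum.cong[OF refl], rule sum.swap)
  also have "\<dots> = (\<Sum>c\<in>C. \<Sum>a\<in>A. \<Sum>b\<in>B. \<Sum>d\<in>D. f a b c d)" by (rule sum.swap)
  also have "\<dots> = (\<Sum>c\<in>C. \<Sum>a\<in>A. \<Sum>d\<in>D. \<Sum>b\<in>B. f a b c d)"
    by (rule sum.cong[OF refl], rule sum.cong[OF refl], rule sum.swap)
  also have "\<dots> = (\<Sum>c\<in>C. \<Sum>d\<in>D. \<Sum>a\<in>A. \<Sum>b\<in>B. f a b c d)" by (rule sum.cong[OF refl], rule sum.swap)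
  finally show ?thesis .
qed

lemma sum_nonzero_ex: "sum f A \<noteq> 0 \<Longrightarrow> \<exists>a\<in>A. f a \<noteq> 0"
  by (meson sum.neutral)

context POL begin

definition \<beta> :: "nat \<Rightarrow> int list \<Rightarrow> int \<Rightarrow> int \<Rightarrow> real" where
  "\<beta> n ys x s = (if x \<in> {0..mx} \<and> s \<in> {0..ms} then (\<Sum>xs\<in>LX n. \<Sum>ss\<in>LS n. Kx n xs x ss s ys) else 0)"

definition \<alpha> :: "nat \<Rightarrow> int list \<Rightarrow> int \<Rightarrow> int \<Rightarrow> int \<Rightarrow> real" where
  "\<alpha> n ys x s y = (\<Sum>xs\<in>LX n. \<Sum>ss\<in>LS n. Kx n xs x ss s ys * qn n xs x ss s ys y)"

definition PY :: "nat \<Rightarrow> int list \<Rightarrow> real" where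
  "PY n ys = (\<Sum>x\<in>{0..mx}. \<Sum>s\<in>{0..ms}. \<beta> n ys x s)"

definition \<pi> :: "nat \<Rightarrow> int list \<Rightarrow> belief" where
  "\<pi> n ys = (\<lambda>x s. \<beta> n ys x s / PY n ys)"

definition eff :: "nat \<Rightarrow> int list \<Rightarrow> action" where
  "eff n ys = (\<lambda>x s y. if \<beta> n ys x s = 0 then a_default x s y else \<alpha> n ys x s y / \<beta> n ys x s)"

lemma \<beta>_nonneg: "ys \<in> LY n \<Longrightarrow> \<beta> n ys x s \<ge> 0"
  unfolding \<beta>_def by (auto intro!: sum_nonneg Kx_nonneg)

lemma \<alpha>_nonneg: "ys \<in> LY n \<Longrightarrow> x \<in> {0..mx} \<Longrightarrow> s \<in> {0..ms} \<Longrightarrow> y \<in> {0..my} \<Longrightarrow> \<alpha> n ys x s y \<ge> 0"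
  unfolding \<alpha>_def by (auto intro!: sum_nonneg mult_nonneg_nonneg Kx_nonneg q_nonneg)

lemma \<alpha>_sum:
  assumes "ys \<in> LY n" "x \<in> {0..mx}" "s \<in> {0..ms}"
  shows "(\<Sum>y\<in>{0..my}. \<alpha> n ys x s y) = \<beta> n ys x s"
    and "(\<Sum>y\<in>Yo my ms (s - x). \<alpha> n ys x s y) = \<beta> n ys x s"
proof -
  have "(\<Sum>y\<in>{0..my}. \<alpha> n ys x s y) = (\<Sum>xs\<in>LX n. \<Sum>ss\<in>LS n. Kx n xs x ss s ys * (\<Sum>y\<in>{0..my}. qn n xs x ss s ys y))"
    unfolding \<alpha>_def by (subst sum3_swap[symmetric]) (simp add: sum_distrib_left)
  also have "\<dots> = \<beta> n ys x s" using assms q_facts by (simp add: \<beta>_def)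
  finally show "(\<Sum>y\<in>{0..my}. \<alpha> n ys x s y) = \<beta> n ys x s" .
  have "(\<Sum>y\<in>Yo my ms (s - x). \<alpha> n ys x s y) = (\<Sum>xs\<in>LX n. \<Sum>ss\<in>LS n. Kx n xs x ss s ys * (\<Sum>y\<in>Yo my ms (s - x). qn n xs x ss s ys y))"
    unfolding \<alpha>_def by (subst sum3_swap[symmetric]) (simp add: sum_distrib_left)
  also have "\<dots> = \<beta> n ys x s" using assms q_facts by (simp add: \<beta>_def)
  finally show "(\<Sum>y\<in>Yo my ms (s - x). \<alpha> n ys x s y) = \<beta> n ys x s" .
qed

lemma \<alpha>_zero:
  assumes "ys \<in> LY n" "x \<in> {0..mx}" "s \<in> {0..ms}" "y \<in> {0..my}" "\<beta> n ys x s = 0"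
  shows "\<alpha> n ys x s y = 0"
  by (rule sum_nonneg_zero[of "{0..my}" "\<alpha> n ys x s"]) (use assms \<alpha>_nonneg \<alpha>_sum in auto)

lemma \<alpha>_supp:
  assumes "ys \<in> LY n" "x \<in> {0..mx}" "s \<in> {0..ms}" "y \<in> {0..my}" "\<alpha> n ys x s y \<noteq> 0"
  shows "s - x + y \<in> {0..ms}"
proof -
  obtain xs where xs: "xs \<in> LX n" and "(\<Sum>ss\<in>LS n. Kx n xs x ss s ys * qn n xs x ss s ys y) \<noteq> 0"
    using assms(5) unfolding \<alpha>_def by (meson sum.neutral)
  then obtain ss where ss: "ss \<in> LS n" and "Kx n xs x ss s ys * qn n xs x ss s ys y \<noteq> 0"
    by (meson sum.neutral)
  then show ?thesis using q_supp[OF xs assms(2) ss assms(3) assms(1) assms(4)] by auto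
qed

lemma eff_Aset: assumes "ys \<in> LY n" shows "eff n ys \<in> Aset mx my ms"
proof -
  have "(\<forall>y\<in>{0..my}. eff n ys x s y \<ge> 0) \<and> (\<Sum>y\<in>{0..my}. eff n ys x s y) = 1
      \<and> (\<Sum>y\<in>Yo my ms (s - x). eff n ys x s y) = 1" if xs: "x \<in> {0..mx}" "s \<in> {0..ms}" for x s
  proof (cases "\<beta> n ys x s = 0")
    case True
    then show ?thesis using a_default_Aset xs by (simp add: eff_def Aset_def)
  next
    case False
    then show ?thesis using \<alpha>_sum[OF assms xs] \<alpha>_nonneg[OF assms xs] \<beta>_nonneg[OF assms]
      by (simp add: eff_def sum_divide_distrib[symmetric])
  qed
  then show ?thesis by (simp add: Aset_def)
qed

lemma eff_mul:
  assumes "ys \<in> LY n" "x \<in> {0..mx}" "s \<in> {0..ms}" "y \<in> {0..my}"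
  shows "\<beta> n ys x s * eff n ys x s y = \<alpha> n ys x s y"
  using \<alpha>_zero[OF assms] by (cases "\<beta> n ys x s = 0") (auto simp: eff_def)

lemma \<beta>_Suc:
  assumes ys: "ys \<in> LY n" and y: "y \<in> {0..my}" and x': "x' \<in> {0..mx}" and s': "s' \<in> {0..ms}"
  shows "\<beta> (Suc n) (ys @ [y]) x' s' = (\<Sum>x\<in>{0..mx}. \<Sum>s\<in>{0..ms}. \<alpha> n ys x s y * iQ x s y x' s')"
proof -
  have ly: "length ys = n" using ys by (simp add: seqs_def)
  have "\<beta> (Suc n) (ys @ [y]) x' s' = (\<Sum>xs\<in>LX n. \<Sum>x\<in>{0..mx}. \<Sum>ss\<in>LS n. \<Sum>s\<in>{0..ms}.
        Kx (Suc n) (xs @ [x]) x' (ss @ [s]) s' (ys @ [y]))"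
    using x' s' by (simp add: \<beta>_def sum_seqs_Suc)
  also have "\<dots> = (\<Sum>xs\<in>LX n. \<Sum>x\<in>{0..mx}. \<Sum>ss\<in>LS n. \<Sum>s\<in>{0..ms}.
        Kx n xs x ss s ys * qn n xs x ss s ys y * iQ x s y x' s')"
    using ly by (intro sum.cong refl) (simp add: Kx_Suc seqs_def)
  also have "\<dots> = (\<Sum>x\<in>{0..mx}. \<Sum>xs\<in>LX n. \<Sum>ss\<in>LS n. \<Sum>s\<in>{0..ms}.
        Kx n xs x ss s ys * qn n xs x ss s ys y * iQ x s y x' s')"
    by (rule sum.swap)
  also have "\<dots> = (\<Sum>x\<in>{0..mx}. \<Sum>s\<in>{0..ms}. \<Sum>xs\<in>LX n. \<Sum>ss\<in>LS n.
        Kx n xs x ss s ys * qn n xs x ss s ys y * iQ x s y x' s')"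
    by (rule sum.cong[OF refl], rule sum3_swap)
  also have "\<dots> = (\<Sum>x\<in>{0..mx}. \<Sum>s\<in>{0..ms}. \<alpha> n ys x s y * iQ x s y x' s')"
    unfolding \<alpha>_def by (simp add: sum_distrib_right)
  finally show ?thesis .
qed

lemma PY_Suc:
  assumes ys: "ys \<in> LY n" and y: "y \<in> {0..my}"
  shows "PY (Suc n) (ys @ [y]) = (\<Sum>x\<in>{0..mx}. \<Sum>s\<in>{0..ms}. \<alpha> n ys x s y)"
proof -
  have "PY (Suc n) (ys @ [y]) = (\<Sum>x'\<in>{0..mx}. \<Sum>s'\<in>{0..ms}. \<Sum>x\<in>{0..mx}. \<Sum>s\<in>{0..ms}. \<alpha> n ys x s y * iQ x s y x' s')"
    unfolding PY_def by (intro sum.cong refl \<beta>_Suc ys y) auto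
  also have "\<dots> = (\<Sum>x\<in>{0..mx}. \<Sum>s\<in>{0..ms}. \<Sum>x'\<in>{0..mx}. \<Sum>s'\<in>{0..ms}. \<alpha> n ys x s y * iQ x s y x' s')"
    by (rule sum4_swap)
  also have "\<dots> = (\<Sum>x\<in>{0..mx}. \<Sum>s\<in>{0..ms}. \<alpha> n ys x s y * (\<Sum>x'\<in>{0..mx}. \<Sum>s'\<in>{0..ms}. iQ x s y x' s'))"
    by (simp add: sum_distrib_left)
  also have "\<dots> = (\<Sum>x\<in>{0..mx}. \<Sum>s\<in>{0..ms}. \<alpha> n ys x s y)"
  proof (intro sum.cong refl)
    fix x s assume xs: "x \<in> {0..mx}" "s \<in> {0..ms}"
    show "\<alpha> n ys x s y * (\<Sum>x'\<in>{0..mx}. \<Sum>s'\<in>{0..ms}. iQ x s y x' s') = \<alpha> n ys x s y"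
      using \<alpha>_supp[OF ys xs y] iQ_sum[OF xs(1)] by (cases "\<alpha> n ys x s y = 0") auto
  qed
  finally show ?thesis .
qed

lemma PY_nonneg: "ys \<in> LY n \<Longrightarrow> PY n ys \<ge> 0"
  unfolding PY_def by (intro sum_nonneg \<beta>_nonneg)

lemma PY_sum:
  assumes ys: "ys \<in> LY n"
  shows "(\<Sum>y\<in>{0..my}. PY (Suc n) (ys @ [y])) = PY n ys"
proof -
  have "(\<Sum>y\<in>{0..my}. PY (Suc n) (ys @ [y])) = (\<Sum>y\<in>{0..my}. \<Sum>x\<in>{0..mx}. \<Sum>s\<in>{0..ms}. \<alpha> n ys x s y)"
    by (intro sum.cong refl PY_Suc ys) auto
  also have "\<dots> = (\<Sum>x\<in>{0..mx}. \<Sum>s\<in>{0..ms}. \<Sum>y\<in>{0..my}. \<alpha> n ys x s y)"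
    by (rule sum3_swap[symmetric])
  also have "\<dots> = PY n ys" unfolding PY_def by (intro sum.cong refl \<alpha>_sum ys) auto
  finally show ?thesis .
qed

lemma \<beta>_le_PY:
  assumes "ys \<in> LY n"
  shows "\<beta> n ys x s \<le> PY n ys"
proof (cases "x \<in> {0..mx} \<and> s \<in> {0..ms}")
  case True
  have "\<beta> n ys x s \<le> (\<Sum>s\<in>{0..ms}. \<beta> n ys x s)" using True assms
    by (intro member_le_sum \<beta>_nonneg) auto
  also have "\<dots> \<le> PY n ys" unfolding PY_def using True assms
    by (intro member_le_sum[where f="\<lambda>x. \<Sum>s\<in>{0..ms}. \<beta> n ys x s"] sum_nonneg \<beta>_nonneg) auto
  finally show ?thesis .
next
  case False then show ?thesis using PY_nonneg[OF assms] by (auto simp: \<beta>_def)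
qed

lemma \<pi>_PXS:
  assumes "ys \<in> LY n" "PY n ys > 0"
  shows "\<pi> n ys \<in> PXS mx ms"
proof -
  have "(\<Sum>x\<in>{0..mx}. \<Sum>s\<in>{0..ms}. \<pi> n ys x s) = (\<Sum>x\<in>{0..mx}. \<Sum>s\<in>{0..ms}. \<beta> n ys x s) / PY n ys"
    by (simp add: \<pi>_def sum_divide_distrib)
  then have "(\<Sum>x\<in>{0..mx}. \<Sum>s\<in>{0..ms}. \<pi> n ys x s) = 1" using assms by (simp add: PY_def)
  moreover have "\<pi> n ys x s \<ge> 0" for x s using \<beta>_nonneg[OF assms(1)] assms(2) by (simp add: \<pi>_def)
  moreover have "\<pi> n ys x s = 0" if "(x, s) \<notin> {0..mx} \<times> {0..ms}" for x s using that by (auto simp: \<pi>_def \<beta>_def)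
  ultimately show ?thesis by (simp add: PXS_def)
qed

lemma PY_0: "PY 0 [] = 1"
  by (simp add: PY_def \<beta>_def seqs_0 Kx_def sum_distrib_left[symmetric] sum_distrib_right[symmetric] PX1_sum PS1_sum)

lemma \<pi>_0: "\<pi> 0 [] = pi1 mx ms PX1 PS1"
  by (simp add: \<pi>_def PY_0 \<beta>_def seqs_0 Kx_def pi1_def fun_eq_iff)

lemma Pya_pi_eff:
  assumes ys: "ys \<in> LY n" and y: "y \<in> {0..my}"
  shows "PY n ys * Pya (\<pi> n ys) (eff n ys) y = PY (Suc n) (ys @ [y])"
proof (cases "PY n ys = 0")
  case True
  have "PY (Suc n) (ys @ [y]) = 0"
    using PY_sum[OF ys] True sum_nonneg_zero[of "{0..my}" "\<lambda>y. PY (Suc n) (ys @ [y])" y] PY_nonneg y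
    by (simp add: seqs_snoc_mem ys)
  then show ?thesis using True by simp
next
  case False
  have "PY n ys * Pya (\<pi> n ys) (eff n ys) y = (\<Sum>x\<in>{0..mx}. \<Sum>s\<in>{0..ms}. \<beta> n ys x s * eff n ys x s y)"
    unfolding Pya_def \<pi>_def using False by (simp add: sum_distrib_left field_simps)
  also have "\<dots> = (\<Sum>x\<in>{0..mx}. \<Sum>s\<in>{0..ms}. \<alpha> n ys x s y)"
    by (intro sum.cong refl eff_mul ys y) auto
  finally show ?thesis using PY_Suc[OF ys y] by simp
qed

lemma sum_ind_shift:
  fixes x y s' :: int and A :: "int set"
  assumes "finite A"
  shows "(\<Sum>s\<in>A. f s * ((if s' = s - x + y then 1 else 0) * c)) = (if s' + x - y \<in> A then f (s' + x - y) * c else (0::real))"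
proof -
  have e: "\<And>s. (s' = s - x + y) = (s = s' + x - y)" by (auto simp: algebra_simps)
  have "(\<Sum>s\<in>A. f s * ((if s' = s - x + y then 1 else 0) * c)) = (\<Sum>s\<in>A. if s = s' + x - y then f s * c else 0)"
    by (rule sum.cong) (simp_all add: e)
  then show ?thesis using assms by (simp add: sum.delta)
qed

lemma \<pi>_filt:
  assumes ys: "ys \<in> LY n" and y: "y \<in> {0..my}" and p: "PY n ys > 0" and p': "PY (Suc n) (ys @ [y]) > 0"
  shows "\<pi> (Suc n) (ys @ [y]) = filt mx ms Q (\<pi> n ys) y (eff n ys)"
proof -
  have Py: "Pya (\<pi> n ys) (eff n ys) y = PY (Suc n) (ys @ [y]) / PY n ys"
    using Pya_pi_eff[OF ys y] p by (simp add: field_simps)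
  have Pyn: "Pya (\<pi> n ys) (eff n ys) y \<noteq> 0" using Py p p' by simp
  have "\<beta> (Suc n) (ys @ [y]) x' s' = Nf (\<pi> n ys) (eff n ys) y x' s' * PY n ys" for x' s'
  proof (cases "x' \<in> {0..mx} \<and> s' \<in> {0..ms}")
    case True
    have "\<beta> (Suc n) (ys @ [y]) x' s' = (\<Sum>x\<in>{0..mx}. \<Sum>s\<in>{0..ms}. \<alpha> n ys x s y * ((if s' = s - x + y then 1 else 0) * Q x x'))"
      using \<beta>_Suc[OF ys y] True by (simp add: iQ_def)
    also have "\<dots> = (\<Sum>x\<in>{0..mx}. if s' + x - y \<in> {0..ms} then \<alpha> n ys x (s' + x - y) y * Q x x' else 0)"
      by (intro sum.cong refl sum_ind_shift) simp
    also have "\<dots> = (\<Sum>x\<in>{0..mx}. (if s' + x - y \<in> {0..ms} then Q x x' * eff n ys x (s' + x - y) y * \<pi> n ys x (s' + x - y) else 0) * PY n ys)"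
    proof (intro sum.cong refl)
      fix x assume x: "x \<in> {0..mx}"
      show "(if s' + x - y \<in> {0..ms} then \<alpha> n ys x (s' + x - y) y * Q x x' else 0)
          = (if s' + x - y \<in> {0..ms} then Q x x' * eff n ys x (s' + x - y) y * \<pi> n ys x (s' + x - y) else 0) * PY n ys"
        using eff_mul[OF ys x _ y, of "s' + x - y"] p by (auto simp: \<pi>_def field_simps)
    qed
    also have "\<dots> = Nf (\<pi> n ys) (eff n ys) y x' s' * PY n ys"
      using True by (simp add: Nf_def sum_distrib_right)
    finally show ?thesis .
  next
    case False then show ?thesis by (auto simp: \<beta>_def Nf_def)
  qed
  then show ?thesis using Pyn Py p p' by (auto simp: filt_eq \<pi>_def fun_eq_iff field_simps)
qed

lemma DP_ys:
  assumes ys: "ys \<in> LY n"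
  shows "PY n ys * bellman mx my ms Q (eff n ys) V (\<pi> n ys)
     = PY n ys * Ia mx my ms (eff n ys) (\<pi> n ys) + (\<Sum>y\<in>{0..my}. PY (Suc n) (ys @ [y]) * V (\<pi> (Suc n) (ys @ [y])))"
proof (cases "PY n ys = 0")
  case True
  have "PY (Suc n) (ys @ [y]) = 0" if "y \<in> {0..my}" for y
    using PY_sum[OF ys] True sum_nonneg_zero[of "{0..my}" "\<lambda>y. PY (Suc n) (ys @ [y])" y] PY_nonneg that
    by (simp add: seqs_snoc_mem ys)
  then show ?thesis using True by simp
next
  case False
  then have p: "PY n ys > 0" using PY_nonneg[OF ys] by simp
  have "PY n ys * (\<Sum>y\<in>{0..my}. Pya (\<pi> n ys) (eff n ys) y * V (filt mx ms Q (\<pi> n ys) y (eff n ys)))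
     = (\<Sum>y\<in>{0..my}. PY (Suc n) (ys @ [y]) * V (\<pi> (Suc n) (ys @ [y])))"
    unfolding sum_distrib_left
  proof (intro sum.cong refl)
    fix y assume y: "y \<in> {0..my}"
    show "PY n ys * (Pya (\<pi> n ys) (eff n ys) y * V (filt mx ms Q (\<pi> n ys) y (eff n ys)))
       = PY (Suc n) (ys @ [y]) * V (\<pi> (Suc n) (ys @ [y]))"
    proof (cases "PY (Suc n) (ys @ [y]) = 0")
      case True then show ?thesis using Pya_pi_eff[OF ys y] by (simp add: mult.assoc[symmetric])
    next
      case False
      then have "PY (Suc n) (ys @ [y]) > 0" using PY_nonneg[of "ys @ [y]" "Suc n"] ys y by (simp add: seqs_snoc_mem)
      then show ?thesis using Pya_pi_eff[OF ys y] \<pi>_filt[OF ys y p] by (simp add: mult.assoc[symmetric])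
    qed
  qed
  then show ?thesis unfolding bellman_eq by (simp add: distrib_left)
qed

end

definition hterm :: "real \<Rightarrow> real \<Rightarrow> real \<Rightarrow> real" where
  "hterm k c p = (if k = 0 then 0 else k * (ln c - ln p))"

definition dterm :: "real \<Rightarrow> real \<Rightarrow> real \<Rightarrow> real \<Rightarrow> real" where
  "dterm u c p' p = (if u = 0 then 0 else u * (ln c - ln p' + ln p))"

context POL begin

definition H :: "nat \<Rightarrow> (int list \<times> int \<times> int list \<times> int \<times> int list) set" where
  "H n = LX n \<times> {0..mx} \<times> LS n \<times> {0..ms} \<times> LY n"

lemma finite_H: "finite (H n)" by (simp add: H_def finite_seqs)

lemma sum_H_Suc:
  "(\<Sum>h\<in>H (Suc n). F h) = (\<Sum>(xs,x,ss,s,ys)\<in>H n. \<Sum>y\<in>{0..my}. \<Sum>x'\<in>{0..mx}. \<Sum>s'\<in>{0..ms}. F (xs @ [x], x', ss @ [s], s', ys @ [y]))"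
proof -
  define G where "G = (\<lambda>((xs::int list,x::int,ss::int list,s::int,ys::int list),y::int,x'::int,s'::int). (xs @ [x], x', ss @ [s], s', ys @ [y]))"
  have inj: "inj_on G (H n \<times> {0..my} \<times> {0..mx} \<times> {0..ms})" by (auto simp: inj_on_def G_def)
  have img: "G ` (H n \<times> {0..my} \<times> {0..mx} \<times> {0..ms}) = H (Suc n)"
  proof (intro set_eqI iffI)
    fix h assume "h \<in> G ` (H n \<times> {0..my} \<times> {0..mx} \<times> {0..ms})"
    then show "h \<in> H (Suc n)" by (auto simp: G_def H_def seqs_snoc_mem)
  next
    fix h assume "h \<in> H (Suc n)"
    then obtain xs' x' ss' s' ys' where h: "h = (xs', x', ss', s', ys')" "xs' \<in> LX (Suc n)" "x' \<in> {0..mx}"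
      "ss' \<in> LS (Suc n)" "s' \<in> {0..ms}" "ys' \<in> LY (Suc n)" by (auto simp: H_def)
    obtain xs x where xs: "xs' = xs @ [x]" "xs \<in> LX n" "x \<in> {0..mx}" using h(2) by (rule seqs_SucE)
    obtain ss s where ss: "ss' = ss @ [s]" "ss \<in> LS n" "s \<in> {0..ms}" using h(4) by (rule seqs_SucE)
    obtain ys y where ys: "ys' = ys @ [y]" "ys \<in> LY n" "y \<in> {0..my}" using h(6) by (rule seqs_SucE)
    show "h \<in> G ` (H n \<times> {0..my} \<times> {0..mx} \<times> {0..ms})"
      using h xs ss ys by (auto simp: G_def H_def intro!: image_eqI[where x="((xs,x,ss,s,ys),y,x',s')"])
  qed
  have "(\<Sum>h\<in>H (Suc n). F h) = (\<Sum>p\<in>H n \<times> {0..my} \<times> {0..mx} \<times> {0..ms}. F (G p))"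
    unfolding img[symmetric] by (rule sum.reindex[OF inj, unfolded o_def])
  also have "\<dots> = (\<Sum>h\<in>H n. \<Sum>y\<in>{0..my}. \<Sum>x'\<in>{0..mx}. \<Sum>s'\<in>{0..ms}. F (G (h, y, x', s')))"
    by (simp add: sum.cartesian_product split_beta)
  finally show ?thesis by (simp add: G_def split_beta)
qed

lemma sum_H_regroup:
  "(\<Sum>(xs,x,ss,s,ys)\<in>H n. F xs x ss s ys) = (\<Sum>ys\<in>LY n. \<Sum>x\<in>{0..mx}. \<Sum>s\<in>{0..ms}. \<Sum>xs\<in>LX n. \<Sum>ss\<in>LS n. F xs x ss s ys)"
proof -
  define G where "G = (\<lambda>(ys::int list,x::int,s::int,xs::int list,ss::int list). (xs,x,ss,s,ys))"
  have inj: "inj_on G (LY n \<times> {0..mx} \<times> {0..ms} \<times> LX n \<times> LS n)" by (auto simp: inj_on_def G_def)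
  have img: "G ` (LY n \<times> {0..mx} \<times> {0..ms} \<times> LX n \<times> LS n) = H n"
    by (auto simp: G_def H_def image_iff)
  have "(\<Sum>(xs,x,ss,s,ys)\<in>H n. F xs x ss s ys) = (\<Sum>p\<in>LY n \<times> {0..mx} \<times> {0..ms} \<times> LX n \<times> LS n. (\<lambda>(xs,x,ss,s,ys). F xs x ss s ys) (G p))"
    unfolding img[symmetric] by (rule sum.reindex[OF inj, unfolded o_def])
  also have "\<dots> = (\<Sum>(ys,x,s,xs,ss)\<in>LY n \<times> {0..mx} \<times> {0..ms} \<times> LX n \<times> LS n. F xs x ss s ys)"
    by (rule sum.cong) (auto simp: G_def)
  also have "\<dots> = (\<Sum>ys\<in>LY n. \<Sum>x\<in>{0..mx}. \<Sum>s\<in>{0..ms}. \<Sum>xs\<in>LX n. \<Sum>ss\<in>LS n. F xs x ss s ys)"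
    by (rule sum5_nested)
  finally show ?thesis .
qed

definition L :: "nat \<Rightarrow> real" where
  "L n = (\<Sum>(xs,x,ss,s,ys)\<in>H n. hterm (Kx n xs x ss s ys) (Cq n xs ss ys) (PY n ys))"

definition \<Delta> :: "nat \<Rightarrow> real" where
  "\<Delta> n = (\<Sum>(xs,x,ss,s,ys)\<in>H n. \<Sum>y\<in>{0..my}.
      dterm (Kx n xs x ss s ys * qn n xs x ss s ys y) (qn n xs x ss s ys y) (PY (Suc n) (ys @ [y])) (PY n ys))"

lemma L_0: "L 0 = 0"
  unfolding L_def by (intro sum.neutral) (auto simp: H_def seqs_0 hterm_def Cq_0 PY_0)

lemma L_Suc: "L (Suc n) = L n + \<Delta> n"
proof -
  have step: "(\<Sum>y\<in>{0..my}. \<Sum>x'\<in>{0..mx}. \<Sum>s'\<in>{0..ms}.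
        hterm (Kx (Suc n) (xs @ [x]) x' (ss @ [s]) s' (ys @ [y])) (Cq (Suc n) (xs @ [x]) (ss @ [s]) (ys @ [y])) (PY (Suc n) (ys @ [y])))
     = hterm (Kx n xs x ss s ys) (Cq n xs ss ys) (PY n ys)
       + (\<Sum>y\<in>{0..my}. dterm (Kx n xs x ss s ys * qn n xs x ss s ys y) (qn n xs x ss s ys y) (PY (Suc n) (ys @ [y])) (PY n ys))"
    if h: "(xs, x, ss, s, ys) \<in> H n" for xs x ss s ys
  proof -
    have hx: "xs \<in> LX n" "x \<in> {0..mx}" "ss \<in> LS n" "s \<in> {0..ms}" "ys \<in> LY n" using h by (auto simp: H_def)
    have l: "length xs = n" "length ss = n" "length ys = n" using hx by (auto simp: seqs_def)
    define K where "K = Kx n xs x ss s ys"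
    define C where "C = Cq n xs ss ys"
    define qq where "qq y = qn n xs x ss s ys y" for y
    define F where "F y = (if K * qq y = 0 then 0 else K * qq y * (ln (C * qq y) - ln (PY (Suc n) (ys @ [y]))))" for y
    have K0: "K \<ge> 0" using Kx_nonneg[OF hx] by (simp add: K_def)
    have q0: "y \<in> {0..my} \<Longrightarrow> qq y \<ge> 0" for y using q_nonneg[OF hx] by (simp add: qq_def)
    have "(\<Sum>x'\<in>{0..mx}. \<Sum>s'\<in>{0..ms}. hterm (Kx (Suc n) (xs @ [x]) x' (ss @ [s]) s' (ys @ [y])) (Cq (Suc n) (xs @ [x]) (ss @ [s]) (ys @ [y])) (PY (Suc n) (ys @ [y])))
        = F y" if y: "y \<in> {0..my}" for y
    proof -
      have "(\<Sum>x'\<in>{0..mx}. \<Sum>s'\<in>{0..ms}. hterm (Kx (Suc n) (xs @ [x]) x' (ss @ [s]) s' (ys @ [y])) (Cq (Suc n) (xs @ [x]) (ss @ [s]) (ys @ [y])) (PY (Suc n) (ys @ [y])))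
        = (\<Sum>x'\<in>{0..mx}. \<Sum>s'\<in>{0..ms}. iQ x s y x' s' * F y)"
      proof (intro sum.cong refl)
        fix x' s' assume x': "x' \<in> {0..mx}"
        have iq: "iQ x s y x' s' \<ge> 0" using iQ_nonneg hx x' by simp
        show "hterm (Kx (Suc n) (xs @ [x]) x' (ss @ [s]) s' (ys @ [y])) (Cq (Suc n) (xs @ [x]) (ss @ [s]) (ys @ [y])) (PY (Suc n) (ys @ [y]))
          = iQ x s y x' s' * F y"
          unfolding Kx_Suc[OF l] Cq_Suc[OF l] K_def[symmetric] C_def[symmetric] qq_def[symmetric]
          using iq by (auto simp: hterm_def F_def)
      qed
      also have "\<dots> = F y * (\<Sum>x'\<in>{0..mx}. \<Sum>s'\<in>{0..ms}. iQ x s y x' s')"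
        by (simp add: sum_distrib_left sum_distrib_right mult.commute)
      also have "\<dots> = F y"
      proof (cases "F y = 0")
        case False
        then have "qq y \<noteq> 0" by (auto simp: F_def)
        then have "s - x + y \<in> {0..ms}" using q_supp[OF hx y] by (simp add: qq_def)
        then show ?thesis using iQ_sum[OF hx(2)] by simp
      qed simp
      finally show ?thesis .
    qed
    then have "(\<Sum>y\<in>{0..my}. \<Sum>x'\<in>{0..mx}. \<Sum>s'\<in>{0..ms}. hterm (Kx (Suc n) (xs @ [x]) x' (ss @ [s]) s' (ys @ [y])) (Cq (Suc n) (xs @ [x]) (ss @ [s]) (ys @ [y])) (PY (Suc n) (ys @ [y])))
        = (\<Sum>y\<in>{0..my}. F y)" by (intro sum.cong) auto
    also have "\<dots> = (\<Sum>y\<in>{0..my}. (if K = 0 then 0 else K * qq y * (ln C - ln (PY n ys)))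
         + dterm (K * qq y) (qq y) (PY (Suc n) (ys @ [y])) (PY n ys))"
    proof (intro sum.cong refl)
      fix y assume y: "y \<in> {0..my}"
      show "F y = (if K = 0 then 0 else K * qq y * (ln C - ln (PY n ys))) + dterm (K * qq y) (qq y) (PY (Suc n) (ys @ [y])) (PY n ys)"
      proof (cases "K * qq y = 0")
        case True then show ?thesis by (auto simp: F_def dterm_def)
      next
        case False
        then have "K \<noteq> 0" "qq y \<noteq> 0" by auto
        then have Cp: "C > 0" and qp: "qq y > 0" using Kx_Cq_pos[OF hx] q0[OF y] by (auto simp: K_def C_def)
        have "ln (C * qq y) = ln C + ln (qq y)" using Cp qp by (simp add: ln_mult)
        then show ?thesis using False by (simp add: F_def dterm_def algebra_simps)
      qed
    qed
    also have "\<dots> = (\<Sum>y\<in>{0..my}. (if K = 0 then 0 else K * qq y * (ln C - ln (PY n ys))))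
         + (\<Sum>y\<in>{0..my}. dterm (K * qq y) (qq y) (PY (Suc n) (ys @ [y])) (PY n ys))"
      by (rule sum.distrib)
    also have "(\<Sum>y\<in>{0..my}. (if K = 0 then 0 else K * qq y * (ln C - ln (PY n ys)))) = hterm K C (PY n ys)"
    proof (cases "K = 0")
      case False
      have "(\<Sum>y\<in>{0..my}. K * qq y * (ln C - ln (PY n ys))) = K * (\<Sum>y\<in>{0..my}. qq y) * (ln C - ln (PY n ys))"
        by (simp add: sum_distrib_left sum_distrib_right mult.assoc)
      then show ?thesis using False q_sum[OF hx] by (simp add: hterm_def qq_def)
    qed (simp add: hterm_def)
    finally show ?thesis by (simp add: K_def C_def qq_def)
  qed
  have "L (Suc n) = (\<Sum>(xs,x,ss,s,ys)\<in>H n. \<Sum>y\<in>{0..my}. \<Sum>x'\<in>{0..mx}. \<Sum>s'\<in>{0..ms}.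
        hterm (Kx (Suc n) (xs @ [x]) x' (ss @ [s]) s' (ys @ [y])) (Cq (Suc n) (xs @ [x]) (ss @ [s]) (ys @ [y])) (PY (Suc n) (ys @ [y])))"
    unfolding L_def by (subst sum_H_Suc) (simp add: split_beta)
  also have "\<dots> = (\<Sum>(xs,x,ss,s,ys)\<in>H n. hterm (Kx n xs x ss s ys) (Cq n xs ss ys) (PY n ys)
       + (\<Sum>y\<in>{0..my}. dterm (Kx n xs x ss s ys * qn n xs x ss s ys y) (qn n xs x ss s ys y) (PY (Suc n) (ys @ [y])) (PY n ys)))"
    by (rule sum.cong) (auto simp: step)
  also have "\<dots> = L n + \<Delta> n"
    unfolding L_def \<Delta>_def by (simp add: sum.distrib split_beta)
  finally show ?thesis .
qed

lemma L_eq: "L n = (\<Sum>i<n. \<Delta> i)"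
  by (induction n) (simp_all add: L_0 L_Suc)

end

lemma dterm_eq: "dterm u c p' p = u * (ln c - ln p' + ln p)" by (simp add: dterm_def)
lemma hterm_eq: "hterm k c p = k * (ln c - ln p)" by (simp add: hterm_def)

context POL begin

definition Gib :: "nat \<Rightarrow> real" where
  "Gib n = (\<Sum>ys\<in>LY n. \<Sum>x\<in>{0..mx}. \<Sum>s\<in>{0..ms}. \<Sum>y\<in>{0..my}. \<Sum>xs\<in>LX n. \<Sum>ss\<in>LS n.
     Kx n xs x ss s ys * qn n xs x ss s ys y * (ln (qn n xs x ss s ys y) - ln (eff n ys x s y)))"

definition R :: "nat \<Rightarrow> real" where
  "R n = (\<Sum>ys\<in>LY n. \<Sum>x\<in>{0..mx}. \<Sum>s\<in>{0..ms}. \<Sum>y\<in>{0..my}.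
     \<alpha> n ys x s y * (ln (eff n ys x s y) - ln (PY (Suc n) (ys @ [y])) + ln (PY n ys)))"

lemma Delta_split: "\<Delta> n = Gib n + R n"
proof -
  have "\<Delta> n = (\<Sum>ys\<in>LY n. \<Sum>x\<in>{0..mx}. \<Sum>s\<in>{0..ms}. \<Sum>xs\<in>LX n. \<Sum>ss\<in>LS n. \<Sum>y\<in>{0..my}.
      Kx n xs x ss s ys * qn n xs x ss s ys y * (ln (qn n xs x ss s ys y) - ln (PY (Suc n) (ys @ [y])) + ln (PY n ys)))"
    unfolding \<Delta>_def dterm_eq by (rule sum_H_regroup)
  also have "\<dots> = (\<Sum>ys\<in>LY n. \<Sum>x\<in>{0..mx}. \<Sum>s\<in>{0..ms}. \<Sum>y\<in>{0..my}. \<Sum>xs\<in>LX n. \<Sum>ss\<in>LS n.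
      Kx n xs x ss s ys * qn n xs x ss s ys y * (ln (qn n xs x ss s ys y) - ln (PY (Suc n) (ys @ [y])) + ln (PY n ys)))"
    by (intro sum.cong refl sum3_swap)
  also have "\<dots> = (\<Sum>ys\<in>LY n. \<Sum>x\<in>{0..mx}. \<Sum>s\<in>{0..ms}. \<Sum>y\<in>{0..my}. \<Sum>xs\<in>LX n. \<Sum>ss\<in>LS n.
      Kx n xs x ss s ys * qn n xs x ss s ys y * (ln (qn n xs x ss s ys y) - ln (eff n ys x s y))
      + Kx n xs x ss s ys * qn n xs x ss s ys y * (ln (eff n ys x s y) - ln (PY (Suc n) (ys @ [y])) + ln (PY n ys)))"
    by (intro sum.cong refl) (simp add: algebra_simps)
  also have "\<dots> = Gib n + R n"
    unfolding Gib_def R_def \<alpha>_def by (simp add: sum.distrib sum_distrib_right)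
  finally show ?thesis .
qed

lemma R_eq: "R n = (\<Sum>ys\<in>LY n. PY n ys * Ia mx my ms (eff n ys) (\<pi> n ys))"
  unfolding R_def
proof (intro sum.cong refl)
  fix ys assume ys: "ys \<in> LY n"
  show "(\<Sum>x\<in>{0..mx}. \<Sum>s\<in>{0..ms}. \<Sum>y\<in>{0..my}. \<alpha> n ys x s y * (ln (eff n ys x s y) - ln (PY (Suc n) (ys @ [y])) + ln (PY n ys)))
     = PY n ys * Ia mx my ms (eff n ys) (\<pi> n ys)"
  proof (cases "PY n ys = 0")
    case True
    have "\<beta> n ys x s = 0" for x s using \<beta>_le_PY[OF ys, of x s] \<beta>_nonneg[OF ys, of x s] True by simp
    then have "\<alpha> n ys x s y = 0" if "x \<in> {0..mx}" "s \<in> {0..ms}" "y \<in> {0..my}" for x s y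
      using \<alpha>_zero[OF ys that] by simp
    then show ?thesis using True by simp
  next
    case False
    then have p: "PY n ys > 0" using PY_nonneg[OF ys] by simp
    have piP: "\<pi> n ys \<in> PXS mx ms" by (rule \<pi>_PXS[OF ys p])
    have eA: "eff n ys \<in> Aset mx my ms" by (rule eff_Aset[OF ys])
    have "PY n ys * Ia mx my ms (eff n ys) (\<pi> n ys) = (\<Sum>x\<in>{0..mx}. \<Sum>s\<in>{0..ms}. \<Sum>y\<in>{0..my}. PY n ys * iterm (\<pi> n ys) (eff n ys) x s y)"
      unfolding Ia_formula[OF piP eA] by (simp add: sum_distrib_left)
    also have "\<dots> = (\<Sum>x\<in>{0..mx}. \<Sum>s\<in>{0..ms}. \<Sum>y\<in>{0..my}. \<alpha> n ys x s y * (ln (eff n ys x s y) - ln (PY (Suc n) (ys @ [y])) + ln (PY n ys)))"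
    proof (intro sum.cong refl)
      fix x s y assume xs: "x \<in> {0..mx}" "s \<in> {0..ms}" and y: "y \<in> {0..my}"
      have em: "eff n ys x s y * \<pi> n ys x s = \<alpha> n ys x s y / PY n ys"
        using eff_mul[OF ys xs y] by (simp add: \<pi>_def field_simps)
      have Py: "Pya (\<pi> n ys) (eff n ys) y = PY (Suc n) (ys @ [y]) / PY n ys"
        using Pya_pi_eff[OF ys y] p by (simp add: field_simps)
      show "PY n ys * iterm (\<pi> n ys) (eff n ys) x s y = \<alpha> n ys x s y * (ln (eff n ys x s y) - ln (PY (Suc n) (ys @ [y])) + ln (PY n ys))"
      proof (cases "\<alpha> n ys x s y = 0")
        case True then show ?thesis by (simp add: iterm_def em)
      next
        case False
        have a0: "\<alpha> n ys x s y > 0" using False \<alpha>_nonneg[OF ys xs y] by simp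
        have "\<alpha> n ys x s y \<le> (\<Sum>s'\<in>{0..ms}. \<alpha> n ys x s' y)"
          by (rule member_le_sum) (use xs in \<open>auto intro!: \<alpha>_nonneg ys y\<close>)
        also have "\<dots> \<le> (\<Sum>x'\<in>{0..mx}. \<Sum>s'\<in>{0..ms}. \<alpha> n ys x' s' y)"
          by (rule member_le_sum[where f="\<lambda>x'. \<Sum>s'\<in>{0..ms}. \<alpha> n ys x' s' y"]) (use xs in \<open>auto intro!: sum_nonneg \<alpha>_nonneg ys y\<close>)
        finally have "\<alpha> n ys x s y \<le> PY (Suc n) (ys @ [y])" unfolding PY_Suc[OF ys y] .
        then have p': "PY (Suc n) (ys @ [y]) > 0" using a0 by simp
        have lnd: "ln (PY (Suc n) (ys @ [y]) / PY n ys) = ln (PY (Suc n) (ys @ [y])) - ln (PY n ys)"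
          using p p' by (simp add: ln_div)
        have ne: "eff n ys x s y * \<pi> n ys x s \<noteq> 0" using em False p by simp
        have "PY n ys * iterm (\<pi> n ys) (eff n ys) x s y
            = PY n ys * (\<alpha> n ys x s y / PY n ys) * (ln (eff n ys x s y) - ln (PY (Suc n) (ys @ [y]) / PY n ys))"
          unfolding iterm_def using ne by (simp add: em Py)
        also have "\<dots> = \<alpha> n ys x s y * (ln (eff n ys x s y) - ln (PY (Suc n) (ys @ [y])) + ln (PY n ys))"
          using p by (simp add: lnd)
        finally show ?thesis .
      qed
    qed
    finally show ?thesis by simp
  qed
qed

lemma Gib_nonneg: "Gib n \<ge> 0"
  unfolding Gib_def
proof (rule sum_nonneg, rule sum_nonneg, rule sum_nonneg)
  fix ys x s assume ys: "ys \<in> LY n" and xs: "x \<in> {0..mx}" "s \<in> {0..ms}"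
  show "0 \<le> (\<Sum>y\<in>{0..my}. \<Sum>xs\<in>LX n. \<Sum>ss\<in>LS n.
     Kx n xs x ss s ys * qn n xs x ss s ys y * (ln (qn n xs x ss s ys y) - ln (eff n ys x s y)))"
  proof (cases "\<beta> n ys x s = 0")
    case True
    have "Kx n xs' x ss' s ys = 0" if hh: "xs' \<in> LX n" "ss' \<in> LS n" for xs' ss'
    proof -
      have z0: "(\<Sum>xs\<in>LX n. \<Sum>ss\<in>LS n. Kx n xs x ss s ys) = 0" using True xs by (simp add: \<beta>_def)
      have z1: "(\<Sum>ss\<in>LS n. Kx n xs' x ss s ys) = 0"
        apply (rule sum_nonneg_zero[of "LX n" "\<lambda>xs. \<Sum>ss\<in>LS n. Kx n xs x ss s ys" xs'])
        using z0 hh xs ys by (auto simp: finite_seqs intro!: sum_nonneg Kx_nonneg)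
      show ?thesis
        apply (rule sum_nonneg_zero[of "LS n" "\<lambda>ss. Kx n xs' x ss s ys" ss'])
           apply (simp add: finite_seqs)
          apply (rule Kx_nonneg[OF hh(1) xs(1) _ xs(2) ys], assumption)
         apply (rule z1)
        by (rule hh(2))
    qed
    then show ?thesis by simp
  next
    case False
    then have bp: "\<beta> n ys x s > 0" using \<beta>_nonneg[OF ys] by (simp add: less_le)
    have t: "Kx n xs' x ss' s ys * qn n xs' x ss' s ys y * (ln (qn n xs' x ss' s ys y) - ln (eff n ys x s y))
        \<ge> Kx n xs' x ss' s ys * (qn n xs' x ss' s ys y - eff n ys x s y)"
      if h: "xs' \<in> LX n" "ss' \<in> LS n" and y: "y \<in> {0..my}" for xs' ss' y
    proof -
      define K where "K = Kx n xs' x ss' s ys"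
      define c where "c = qn n xs' x ss' s ys y"
      define e where "e = eff n ys x s y"
      have K0: "K \<ge> 0" using Kx_nonneg[OF h(1) xs(1) h(2) xs(2) ys] by (simp add: K_def)
      have c0: "c \<ge> 0" using q_nonneg[OF h(1) xs(1) h(2) xs(2) ys y] by (simp add: c_def)
      have e0: "e \<ge> 0" using Aset_nonneg[OF eff_Aset[OF ys] xs y] by (simp add: e_def)
      have "K * c * (ln c - ln e) \<ge> K * (c - e)"
      proof (cases "K * c = 0")
        case True
        then show ?thesis using K0 e0 c0 by (auto simp: mult_nonneg_nonneg)
      next
        case False
        then have Kp: "K > 0" and cp: "c > 0" using K0 c0 by auto
        have "K * c \<le> (\<Sum>ss\<in>LS n. Kx n xs' x ss s ys * qn n xs' x ss s ys y)"
          unfolding K_def c_def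
          by (rule member_le_sum[OF h(2)]) (use h xs ys y in \<open>auto simp: finite_seqs intro!: mult_nonneg_nonneg Kx_nonneg q_nonneg\<close>)
        also have "\<dots> \<le> \<alpha> n ys x s y" unfolding \<alpha>_def
          by (rule member_le_sum[OF h(1), where f="\<lambda>xs. \<Sum>ss\<in>LS n. Kx n xs x ss s ys * qn n xs x ss s ys y"])
             (use h xs ys y in \<open>auto simp: finite_seqs intro!: sum_nonneg mult_nonneg_nonneg Kx_nonneg q_nonneg\<close>)
        finally have "\<alpha> n ys x s y \<ge> K * c" .
        then have "\<alpha> n ys x s y > 0" using Kp cp by (smt (verit) mult_pos_pos)
        then have ep: "e > 0" using bp by (simp add: e_def eff_def)
        have "c * (ln c - ln e) \<ge> c - e" by (rule gibbs[OF cp ep])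
        then have "K * (c * (ln c - ln e)) \<ge> K * (c - e)" using K0 by (intro mult_left_mono) auto
        then show ?thesis by (simp add: mult.assoc)
      qed
      then show ?thesis by (simp add: K_def c_def e_def)
    qed
    have "(\<Sum>y\<in>{0..my}. \<Sum>xs\<in>LX n. \<Sum>ss\<in>LS n. Kx n xs x ss s ys * (qn n xs x ss s ys y - eff n ys x s y))
        = (\<Sum>xs\<in>LX n. \<Sum>ss\<in>LS n. Kx n xs x ss s ys * ((\<Sum>y\<in>{0..my}. qn n xs x ss s ys y) - (\<Sum>y\<in>{0..my}. eff n ys x s y)))"
      by (subst sum3_swap[symmetric]) (simp add: sum_distrib_left sum_subtractf right_diff_distrib)
    also have "\<dots> = 0" using q_sum[OF _ xs(1) _ xs(2) ys] Aset_sum[OF eff_Aset[OF ys] xs] by simp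
    finally have z: "(\<Sum>y\<in>{0..my}. \<Sum>xs\<in>LX n. \<Sum>ss\<in>LS n. Kx n xs x ss s ys * (qn n xs x ss s ys y - eff n ys x s y)) = 0" .
    have "(\<Sum>y\<in>{0..my}. \<Sum>xs\<in>LX n. \<Sum>ss\<in>LS n. Kx n xs x ss s ys * (qn n xs x ss s ys y - eff n ys x s y))
       \<le> (\<Sum>y\<in>{0..my}. \<Sum>xs\<in>LX n. \<Sum>ss\<in>LS n. Kx n xs x ss s ys * qn n xs x ss s ys y * (ln (qn n xs x ss s ys y) - ln (eff n ys x s y)))"
      by (intro sum_mono t) auto
    then show ?thesis using z by simp
  qed
qed

lemma Gib_zero:
  assumes "\<And>xs x ss s ys y. (xs, x, ss, s, ys) \<in> H n \<Longrightarrow> y \<in> {0..my} \<Longrightarrow> Kx n xs x ss s ys \<noteq> 0 \<Longrightarrow>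
      qn n xs x ss s ys y = eff n ys x s y"
  shows "Gib n = 0"
  unfolding Gib_def
proof (intro sum.neutral ballI)
  fix ys x s y xs ss assume h: "ys \<in> LY n" "x \<in> {0..mx}" "s \<in> {0..ms}" "y \<in> {0..my}" "xs \<in> LX n" "ss \<in> LS n"
  show "Kx n xs x ss s ys * qn n xs x ss s ys y * (ln (qn n xs x ss s ys y) - ln (eff n ys x s y)) = 0"
  proof (cases "Kx n xs x ss s ys = 0")
    case False
    then have "qn n xs x ss s ys y = eff n ys x s y" using assms[of xs x ss s ys y] h by (auto simp: H_def)
    then show ?thesis by simp
  qed simp
qed

end

context POL begin

definition E :: "nat \<Rightarrow> nat \<Rightarrow> real" where
  "E T n = (\<Sum>ys\<in>LY n. PY n ys * W (T - n) (\<pi> n ys))"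

lemma E_step:
  assumes nT: "n < T"
  shows "E T n \<le> R n + E T (Suc n)"
    and "(\<forall>ys\<in>LY n. PY n ys > 0 \<longrightarrow> bellman mx my ms Q (eff n ys) (W (T - Suc n)) (\<pi> n ys) = W (T - n) (\<pi> n ys))
         \<Longrightarrow> E T n = R n + E T (Suc n)"
proof -
  have Tn: "T - n = Suc (T - Suc n)" using nT by simp
  have dp: "(\<Sum>ys\<in>LY n. PY n ys * bellman mx my ms Q (eff n ys) (W (T - Suc n)) (\<pi> n ys)) = R n + E T (Suc n)"
  proof -
    have "(\<Sum>ys\<in>LY n. PY n ys * bellman mx my ms Q (eff n ys) (W (T - Suc n)) (\<pi> n ys))
      = (\<Sum>ys\<in>LY n. PY n ys * Ia mx my ms (eff n ys) (\<pi> n ys) + (\<Sum>y\<in>{0..my}. PY (Suc n) (ys @ [y]) * W (T - Suc n) (\<pi> (Suc n) (ys @ [y]))))"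
      by (intro sum.cong refl DP_ys)
    also have "\<dots> = R n + (\<Sum>ys\<in>LY n. \<Sum>y\<in>{0..my}. PY (Suc n) (ys @ [y]) * W (T - Suc n) (\<pi> (Suc n) (ys @ [y])))"
      by (simp add: sum.distrib R_eq)
    also have "(\<Sum>ys\<in>LY n. \<Sum>y\<in>{0..my}. PY (Suc n) (ys @ [y]) * W (T - Suc n) (\<pi> (Suc n) (ys @ [y]))) = E T (Suc n)"
      unfolding E_def by (simp add: sum_seqs_Suc)
    finally show ?thesis .
  qed
  have le: "PY n ys * W (T - n) (\<pi> n ys) \<le> PY n ys * bellman mx my ms Q (eff n ys) (W (T - Suc n)) (\<pi> n ys)"
    if ys: "ys \<in> LY n" for ys
  proof (cases "PY n ys = 0")
    case False
    then have p: "PY n ys > 0" using PY_nonneg[OF ys] by simp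
    show ?thesis unfolding Tn using W_le_bellman[OF \<pi>_PXS[OF ys p] eff_Aset[OF ys]] p
      by (intro mult_left_mono) auto
  qed simp
  have "E T n \<le> (\<Sum>ys\<in>LY n. PY n ys * bellman mx my ms Q (eff n ys) (W (T - Suc n)) (\<pi> n ys))"
    unfolding E_def by (intro sum_mono le)
  then show "E T n \<le> R n + E T (Suc n)" using dp by simp
  assume h: "\<forall>ys\<in>LY n. PY n ys > 0 \<longrightarrow> bellman mx my ms Q (eff n ys) (W (T - Suc n)) (\<pi> n ys) = W (T - n) (\<pi> n ys)"
  have "PY n ys * W (T - n) (\<pi> n ys) = PY n ys * bellman mx my ms Q (eff n ys) (W (T - Suc n)) (\<pi> n ys)"
    if ys: "ys \<in> LY n" for ys
  proof (cases "PY n ys = 0")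
    case False
    then have p: "PY n ys > 0" using PY_nonneg[OF ys] by simp
    then show ?thesis using h ys by simp
  qed simp
  then have "E T n = (\<Sum>ys\<in>LY n. PY n ys * bellman mx my ms Q (eff n ys) (W (T - Suc n)) (\<pi> n ys))"
    unfolding E_def by (intro sum.cong refl)
  then show "E T n = R n + E T (Suc n)" using dp by simp
qed

lemma E_T: "E T T = 0" by (simp add: E_def)

lemma E_0: "E T 0 = W T (pi1 mx ms PX1 PS1)"
  by (simp add: E_def seqs_0 PY_0 \<pi>_0)

lemma E_chain:
  "k \<le> T \<Longrightarrow> E T (T - k) \<le> (\<Sum>n\<in>{T - k..<T}. R n)"
proof (induction k)
  case 0 then show ?case by (simp add: E_T)
next
  case (Suc k)
  have n: "T - Suc k < T" and e: "Suc (T - Suc k) = T - k" using Suc.prems by auto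
  have "E T (T - Suc k) \<le> R (T - Suc k) + E T (T - k)" using E_step(1)[OF n] e by simp
  also have "\<dots> \<le> R (T - Suc k) + (\<Sum>n\<in>{T - k..<T}. R n)" using Suc by simp
  also have "\<dots> = (\<Sum>n\<in>{T - Suc k..<T}. R n)"
  proof -
    have "{T - Suc k..<T} = insert (T - Suc k) {T - k..<T}" using Suc.prems by auto
    moreover have "T - Suc k \<notin> {T - k..<T}" using Suc.prems by auto
    ultimately show ?thesis by simp
  qed
  finally show ?case .
qed

lemma E_chain_eq:
  assumes "\<And>n. n < T \<Longrightarrow> \<forall>ys\<in>LY n. PY n ys > 0 \<longrightarrow> bellman mx my ms Q (eff n ys) (W (T - Suc n)) (\<pi> n ys) = W (T - n) (\<pi> n ys)"
  shows "k \<le> T \<Longrightarrow> E T (T - k) = (\<Sum>n\<in>{T - k..<T}. R n)"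
proof (induction k)
  case 0 then show ?case by (simp add: E_T)
next
  case (Suc k)
  have n: "T - Suc k < T" and e: "Suc (T - Suc k) = T - k" using Suc.prems by auto
  have "E T (T - Suc k) = R (T - Suc k) + E T (T - k)" using E_step(2)[OF n assms[OF n]] e by simp
  also have "\<dots> = R (T - Suc k) + (\<Sum>n\<in>{T - k..<T}. R n)" using Suc by simp
  also have "\<dots> = (\<Sum>n\<in>{T - Suc k..<T}. R n)"
  proof -
    have "{T - Suc k..<T} = insert (T - Suc k) {T - k..<T}" using Suc.prems by auto
    moreover have "T - Suc k \<notin> {T - k..<T}" using Suc.prems by auto
    ultimately show ?thesis by simp
  qed
  finally show ?case .
qed

lemma W_le_L: "W T (pi1 mx ms PX1 PS1) \<le> L T"
proof -
  have "W T (pi1 mx ms PX1 PS1) \<le> (\<Sum>n<T. R n)" using E_chain[of T T] E_0 by (simp add: atLeast0LessThan)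
  also have "\<dots> \<le> (\<Sum>n<T. \<Delta> n)" using Delta_split Gib_nonneg by (intro sum_mono) (simp add: add_increasing)
  finally show ?thesis by (simp add: L_eq)
qed

lemma W_eq_L:
  assumes "\<And>n. n < T \<Longrightarrow> \<forall>ys\<in>LY n. PY n ys > 0 \<longrightarrow> bellman mx my ms Q (eff n ys) (W (T - Suc n)) (\<pi> n ys) = W (T - n) (\<pi> n ys)"
    and "\<And>n. n < T \<Longrightarrow> Gib n = 0"
  shows "W T (pi1 mx ms PX1 PS1) = L T"
proof -
  have "W T (pi1 mx ms PX1 PS1) = (\<Sum>n<T. R n)" using E_chain_eq[OF assms(1), of T] E_0 by (simp add: atLeast0LessThan)
  also have "\<dots> = (\<Sum>n<T. \<Delta> n)" using Delta_split assms(2) by (intro sum.cong) auto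
  finally show ?thesis by (simp add: L_eq)
qed

end

lemma sum_single:
  fixes f :: "'a \<Rightarrow> real"
  assumes fin: "finite A" and u: "\<And>a b. a \<in> A \<Longrightarrow> b \<in> A \<Longrightarrow> f a \<noteq> 0 \<Longrightarrow> f b \<noteq> 0 \<Longrightarrow> a = b" and g0: "g 0 = 0"
  shows "g (sum f A) = (\<Sum>a\<in>A. g (f a))"
proof (cases "\<exists>a\<in>A. f a \<noteq> 0")
  case False
  then show ?thesis using g0 by simp
next
  case True
  then obtain a where a: "a \<in> A" "f a \<noteq> 0" by blast
  have z: "\<And>b. b \<in> A - {a} \<Longrightarrow> f b = 0" using u a by blast
  have "sum f A = f a + sum f (A - {a})" using fin a by (simp add: sum.remove)
  also have "sum f (A - {a}) = 0" using z by simp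
  finally have s1: "sum f A = f a" by simp
  have "(\<Sum>a\<in>A. g (f a)) = g (f a) + (\<Sum>b\<in>A - {a}. g (f b))" using fin a by (simp add: sum.remove)
  also have "(\<Sum>b\<in>A - {a}. g (f b)) = 0" using z g0 by simp
  finally show ?thesis using s1 by simp
qed

lemma sum_seqs1: "finite A \<Longrightarrow> (\<Sum>l\<in>seqs (Suc 0) A. F l) = (\<Sum>a\<in>A. F [a])"
  by (simp add: sum_seqs_Suc seqs_0)

lemma seqs_last: "l \<in> seqs (Suc n) A \<Longrightarrow> last l \<in> A"
  by (erule seqs_SucE) simp

context POL begin

definition PXQ :: "nat \<Rightarrow> int list \<Rightarrow> real" where
  "PXQ n xs = (\<Prod>i<n. if i = 0 then PX1 (xs ! 0) else Q (xs ! (i - 1)) (xs ! i))"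

lemma PXQ_Suc:
  assumes "length xs = n"
  shows "PXQ (Suc n) (xs @ [x]) = (if n = 0 then PX1 x else PXQ n xs * Q (last xs) x)"
proof -
  define g where "g xs' i = (if i = 0 then PX1 (xs' ! 0) else Q (xs' ! (i - 1)) (xs' ! i))" for xs' i
  have "g (xs @ [x]) i = g xs i" if "i < n" for i using that assms by (auto simp: g_def nth_append)
  then have "(\<Prod>i<n. g (xs @ [x]) i) = (\<Prod>i<n. g xs i)" by (intro prod.cong) auto
  moreover have "g (xs @ [x]) n = (if n = 0 then PX1 x else Q (last xs) x)"
  proof -
    have lst: "last xs = xs ! k" if "n = Suc k" for k
      using assms that by (metis diff_Suc_1 last_conv_nth length_greater_0_conv zero_less_Suc)
    show ?thesis using assms by (cases n) (auto simp: g_def nth_append lst)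
  qed
  ultimately show ?thesis unfolding PXQ_def g_def[symmetric] by (cases "n = 0") auto
qed

lemma PXQ_nonneg: "xs \<in> LX n \<Longrightarrow> PXQ n xs \<ge> 0"
  unfolding PXQ_def by (intro prod_nonneg) (auto intro!: PX1_nonneg Q_nonneg seqs_nth)

lemma J_Suc2:
  assumes "length xs = Suc m" "length ss = Suc m" "length ys = Suc m"
  shows "J (Suc (Suc m)) (xs @ [x]) (ss @ [s]) (ys @ [y])
       = J (Suc m) xs ss ys * iQ (last xs) (last ss) (last ys) x s * qn (Suc m) xs x ss s ys y"
  using JK[OF assms] by (simp add: Kx_def)

lemma J_1: "J (Suc 0) [x] [s] [y] = PX1 x * PS1 s * qn 0 [] x [] s [] y"
  using JK[of "[]" 0 "[]" "[]" x s y] by (simp add: Kx_def)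

lemma J_supp:
  assumes "xs \<in> LX (Suc m)" "ss \<in> LS (Suc m)" "ys \<in> LY (Suc m)" "J (Suc m) xs ss ys \<noteq> 0"
  shows "last ss - last xs + last ys \<in> {0..ms}"
proof -
  obtain xs0 x where xs: "xs = xs0 @ [x]" "xs0 \<in> LX m" "x \<in> {0..mx}" using assms(1) by (rule seqs_SucE)
  obtain ss0 s where ss: "ss = ss0 @ [s]" "ss0 \<in> LS m" "s \<in> {0..ms}" using assms(2) by (rule seqs_SucE)
  obtain ys0 y where ys: "ys = ys0 @ [y]" "ys0 \<in> LY m" "y \<in> {0..my}" using assms(3) by (rule seqs_SucE)
  have l: "length xs0 = m" "length ss0 = m" "length ys0 = m" using xs ss ys by (auto simp: seqs_def)
  have "qn m xs0 x ss0 s ys0 y \<noteq> 0" using assms(4) unfolding xs ss ys JK[OF l] by auto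
  then show ?thesis using q_supp[OF xs(2,3) ss(2,3) ys(2,3)] xs ss ys by simp
qed

lemma J_factor:
  "xs \<in> LX (Suc m) \<Longrightarrow> ss \<in> LS (Suc m) \<Longrightarrow> ys \<in> LY (Suc m) \<Longrightarrow> J (Suc m) xs ss ys \<noteq> 0 \<Longrightarrow>
   J (Suc m) xs ss ys = PXQ (Suc m) xs * PS1 (ss ! 0) * Cq (Suc m) xs ss ys"
proof (induction m arbitrary: xs ss ys)
  case 0
  obtain xs0 x where xs: "xs = xs0 @ [x]" "xs0 \<in> LX 0" using 0(1) by (rule seqs_SucE)
  obtain ss0 s where ss: "ss = ss0 @ [s]" "ss0 \<in> LS 0" using 0(2) by (rule seqs_SucE)
  obtain ys0 y where ys: "ys = ys0 @ [y]" "ys0 \<in> LY 0" using 0(3) by (rule seqs_SucE)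
  have "xs0 = []" "ss0 = []" "ys0 = []" using xs ss ys by (auto simp: seqs_0)
  then show ?case using xs ss ys J_1[of x s y] PXQ_Suc[of "[]" 0 x] Cq_Suc[of "[]" 0 "[]" "[]" x s y]
    by (simp add: Cq_0)
next
  case (Suc m)
  obtain xs0 x where xs: "xs = xs0 @ [x]" "xs0 \<in> LX (Suc m)" "x \<in> {0..mx}" using Suc.prems(1) by (rule seqs_SucE)
  obtain ss0 s where ss: "ss = ss0 @ [s]" "ss0 \<in> LS (Suc m)" "s \<in> {0..ms}" using Suc.prems(2) by (rule seqs_SucE)
  obtain ys0 y where ys: "ys = ys0 @ [y]" "ys0 \<in> LY (Suc m)" "y \<in> {0..my}" using Suc.prems(3) by (rule seqs_SucE)
  have l: "length xs0 = Suc m" "length ss0 = Suc m" "length ys0 = Suc m" using xs ss ys by (auto simp: seqs_def)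
  have nz: "J (Suc m) xs0 ss0 ys0 \<noteq> 0" "iQ (last xs0) (last ss0) (last ys0) x s \<noteq> 0"
    using Suc.prems(4) unfolding xs ss ys J_Suc2[OF l] by auto
  have iq: "iQ (last xs0) (last ss0) (last ys0) x s = Q (last xs0) x" using nz(2) by (auto simp: iQ_def split: if_splits)
  have IH: "J (Suc m) xs0 ss0 ys0 = PXQ (Suc m) xs0 * PS1 (ss0 ! 0) * Cq (Suc m) xs0 ss0 ys0"
    using Suc.IH[OF xs(2) ss(2) ys(2) nz(1)] .
  have s0: "(ss0 @ [s]) ! 0 = ss0 ! 0" using l by (simp add: nth_append)
  show ?case unfolding xs ss ys J_Suc2[OF l] Cq_Suc[OF l] PXQ_Suc[OF l(1)] s0 iq IH by simp
qed

lemma J_uniq: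
  "xs \<in> LX (Suc m) \<Longrightarrow> ss \<in> LS (Suc m) \<Longrightarrow> ss' \<in> LS (Suc m) \<Longrightarrow> ys \<in> LY (Suc m) \<Longrightarrow>
   J (Suc m) xs ss ys \<noteq> 0 \<Longrightarrow> J (Suc m) xs ss' ys \<noteq> 0 \<Longrightarrow> ss ! 0 = ss' ! 0 \<Longrightarrow> ss = ss'"
proof (induction m arbitrary: xs ss ss' ys)
  case 0
  obtain ss0 s where ss: "ss = ss0 @ [s]" "ss0 \<in> LS 0" using 0(2) by (rule seqs_SucE)
  obtain ss0' s' where ss': "ss' = ss0' @ [s']" "ss0' \<in> LS 0" using 0(3) by (rule seqs_SucE)
  then show ?case using ss 0(7) by (auto simp: seqs_0)
next
  case (Suc m)
  obtain xs0 x where xs: "xs = xs0 @ [x]" "xs0 \<in> LX (Suc m)" "x \<in> {0..mx}" using Suc.prems(1) by (rule seqs_SucE)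
  obtain ss0 s where ss: "ss = ss0 @ [s]" "ss0 \<in> LS (Suc m)" "s \<in> {0..ms}" using Suc.prems(2) by (rule seqs_SucE)
  obtain ss0' s' where ss': "ss' = ss0' @ [s']" "ss0' \<in> LS (Suc m)" "s' \<in> {0..ms}" using Suc.prems(3) by (rule seqs_SucE)
  obtain ys0 y where ys: "ys = ys0 @ [y]" "ys0 \<in> LY (Suc m)" "y \<in> {0..my}" using Suc.prems(4) by (rule seqs_SucE)
  have l: "length xs0 = Suc m" "length ss0 = Suc m" "length ys0 = Suc m" "length ss0' = Suc m"
    using xs ss ss' ys by (auto simp: seqs_def)
  have nz: "J (Suc m) xs0 ss0 ys0 \<noteq> 0" "iQ (last xs0) (last ss0) (last ys0) x s \<noteq> 0"
    using Suc.prems(5) unfolding xs ss ys J_Suc2[OF l(1-3)] by auto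
  have nz': "J (Suc m) xs0 ss0' ys0 \<noteq> 0" "iQ (last xs0) (last ss0') (last ys0) x s' \<noteq> 0"
    using Suc.prems(6) unfolding xs ss' ys J_Suc2[OF l(1) l(4) l(3)] by auto
  have h0: "ss0 ! 0 = ss0' ! 0" using Suc.prems(7) l unfolding ss ss' by (simp add: nth_append)
  have "ss0 = ss0'" using Suc.IH[OF xs(2) ss(2) ss'(2) ys(2) nz(1) nz'(1) h0] .
  moreover have "s = last ss0 - last xs0 + last ys0" "s' = last ss0' - last xs0 + last ys0"
    using nz(2) nz'(2) by (auto simp: iQ_def split: if_splits)
  ultimately show ?case using ss ss' by simp
qed

lemma mu_eq:
  "xs \<in> LX (Suc m) \<Longrightarrow> s1 \<in> {0..ms} \<Longrightarrow>
   (\<Sum>ys\<in>LY (Suc m). \<Sum>ss\<in>LS (Suc m). if ss ! 0 = s1 then J (Suc m) xs ss ys else 0) = PXQ (Suc m) xs * PS1 s1"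
proof (induction m arbitrary: xs)
  case 0
  obtain xs0 x where xs: "xs = xs0 @ [x]" "xs0 \<in> LX 0" "x \<in> {0..mx}" using 0(1) by (rule seqs_SucE)
  have x0: "xs0 = []" using xs by (simp add: seqs_0)
  have xs1: "xs = [x]" using xs x0 by simp
  have "(\<Sum>ys\<in>LY (Suc 0). \<Sum>ss\<in>LS (Suc 0). if ss ! 0 = s1 then J (Suc 0) xs ss ys else 0)
     = (\<Sum>y\<in>{0..my}. \<Sum>s\<in>{0..ms}. if s = s1 then PX1 x * PS1 s * qn 0 [] x [] s [] y else 0)"
    unfolding xs1 apply (simp add: sum_seqs1)
    apply (subst J_1)+
    by simp
  also have "\<dots> = (\<Sum>y\<in>{0..my}. PX1 x * PS1 s1 * qn 0 [] x [] s1 [] y)"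
    using 0(2) by (simp add: sum.delta)
  also have "\<dots> = PX1 x * PS1 s1" using q_sum[of "[]" 0 x "[]" s1 "[]"] 0(2) xs(3)
    by (simp add: sum_distrib_left[symmetric] seqs_0)
  finally show ?case by (simp add: xs1 PXQ_def)
next
  case (Suc m)
  obtain xs0 x where xs: "xs = xs0 @ [x]" "xs0 \<in> LX (Suc m)" "x \<in> {0..mx}" using Suc.prems(1) by (rule seqs_SucE)
  have l: "length xs0 = Suc m" using xs by (simp add: seqs_def)
  have inner: "(\<Sum>s\<in>{0..ms}. \<Sum>y\<in>{0..my}. (if (ss @ [s]) ! 0 = s1 then J (Suc (Suc m)) (xs0 @ [x]) (ss @ [s]) (ys @ [y]) else 0))
      = (if ss ! 0 = s1 then J (Suc m) xs0 ss ys else 0) * Q (last xs0) x"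
    if ss: "ss \<in> LS (Suc m)" and ys: "ys \<in> LY (Suc m)" for ss ys
  proof -
    have ls: "length ss = Suc m" "length ys = Suc m" using ss ys by (auto simp: seqs_def)
    have s0: "(ss @ [s]) ! 0 = ss ! 0" for s using ls by (simp add: nth_append)
    have "(\<Sum>s\<in>{0..ms}. \<Sum>y\<in>{0..my}. (if (ss @ [s]) ! 0 = s1 then J (Suc (Suc m)) (xs0 @ [x]) (ss @ [s]) (ys @ [y]) else 0))
       = (\<Sum>s\<in>{0..ms}. (if ss ! 0 = s1 then J (Suc m) xs0 ss ys else 0) * iQ (last xs0) (last ss) (last ys) x s
           * (\<Sum>y\<in>{0..my}. qn (Suc m) xs0 x ss s ys y))"
      unfolding s0 J_Suc2[OF l ls] by (simp add: sum_distrib_left)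
    also have "\<dots> = (\<Sum>s\<in>{0..ms}. (if ss ! 0 = s1 then J (Suc m) xs0 ss ys else 0) * iQ (last xs0) (last ss) (last ys) x s)"
      using q_sum[OF xs(2,3) ss _ ys] by simp
    also have "\<dots> = (if ss ! 0 = s1 then J (Suc m) xs0 ss ys else 0) * Q (last xs0) x"
    proof (cases "J (Suc m) xs0 ss ys = 0")
      case False
      have "last ss - last xs0 + last ys \<in> {0..ms}" using J_supp[OF xs(2) ss ys False] .
      then show ?thesis unfolding sum_distrib_left[symmetric] iQ_def
        using sum_ind_eq[of "{0..ms}" "last ss - last xs0 + last ys" "\<lambda>_. Q (last xs0) x"] by simp
    qed simp
    finally show ?thesis .
  qed
  have "(\<Sum>ys\<in>LY (Suc (Suc m)). \<Sum>ss\<in>LS (Suc (Suc m)). if ss ! 0 = s1 then J (Suc (Suc m)) xs ss ys else 0)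
     = (\<Sum>ys\<in>LY (Suc m). \<Sum>y\<in>{0..my}. \<Sum>ss\<in>LS (Suc m). \<Sum>s\<in>{0..ms}. if (ss @ [s]) ! 0 = s1 then J (Suc (Suc m)) (xs0 @ [x]) (ss @ [s]) (ys @ [y]) else 0)"
    unfolding xs(1) by (simp only: sum_seqs_Suc[where n="Suc m"] finite_atLeastAtMost_int)
  also have "\<dots> = (\<Sum>ys\<in>LY (Suc m). \<Sum>ss\<in>LS (Suc m). \<Sum>s\<in>{0..ms}. \<Sum>y\<in>{0..my}. if (ss @ [s]) ! 0 = s1 then J (Suc (Suc m)) (xs0 @ [x]) (ss @ [s]) (ys @ [y]) else 0)"
  proof (intro sum.cong refl)
    fix ys show "(\<Sum>y\<in>{0..my}. \<Sum>ss\<in>LS (Suc m). \<Sum>s\<in>{0..ms}. if (ss @ [s]) ! 0 = s1 then J (Suc (Suc m)) (xs0 @ [x]) (ss @ [s]) (ys @ [y]) else 0)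
      = (\<Sum>ss\<in>LS (Suc m). \<Sum>s\<in>{0..ms}. \<Sum>y\<in>{0..my}. if (ss @ [s]) ! 0 = s1 then J (Suc (Suc m)) (xs0 @ [x]) (ss @ [s]) (ys @ [y]) else 0)"
      by (rule sum3_swap[symmetric])
  qed
  also have "\<dots> = (\<Sum>ys\<in>LY (Suc m). \<Sum>ss\<in>LS (Suc m). (if ss ! 0 = s1 then J (Suc m) xs0 ss ys else 0) * Q (last xs0) x)"
    by (intro sum.cong refl inner) auto
  also have "\<dots> = PXQ (Suc m) xs0 * PS1 s1 * Q (last xs0) x"
    using Suc.IH[OF xs(2) Suc.prems(2)] by (simp add: sum_distrib_right[symmetric])
  finally show ?case by (simp add: xs PXQ_Suc[OF l] mult_ac)
qed

lemma PY_J: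
  assumes ys: "ys \<in> LY (Suc m)"
  shows "PY (Suc m) ys = (\<Sum>xs\<in>LX (Suc m). \<Sum>ss\<in>LS (Suc m). J (Suc m) xs ss ys)"
proof -
  have "PY (Suc m) ys = (\<Sum>x\<in>{0..mx}. \<Sum>s\<in>{0..ms}. \<Sum>xs\<in>LX (Suc m). \<Sum>ss\<in>LS (Suc m). J (Suc m) xs ss ys * iQ (last xs) (last ss) (last ys) x s)"
    unfolding PY_def \<beta>_def by (intro sum.cong refl) (simp add: Kx_def)
  also have "\<dots> = (\<Sum>xs\<in>LX (Suc m). \<Sum>ss\<in>LS (Suc m). \<Sum>x\<in>{0..mx}. \<Sum>s\<in>{0..ms}. J (Suc m) xs ss ys * iQ (last xs) (last ss) (last ys) x s)"
    by (rule sum4_swap)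
  also have "\<dots> = (\<Sum>xs\<in>LX (Suc m). \<Sum>ss\<in>LS (Suc m). J (Suc m) xs ss ys)"
  proof (intro sum.cong refl)
    fix xs ss assume h: "xs \<in> LX (Suc m)" "ss \<in> LS (Suc m)"
    show "(\<Sum>x\<in>{0..mx}. \<Sum>s\<in>{0..ms}. J (Suc m) xs ss ys * iQ (last xs) (last ss) (last ys) x s) = J (Suc m) xs ss ys"
    proof (cases "J (Suc m) xs ss ys = 0")
      case False
      have lx: "last xs \<in> {0..mx}" using h(1) by (rule seqs_last)
      show ?thesis using iQ_sum[OF lx J_supp[OF h ys False]] by (simp add: sum_distrib_left[symmetric])
    qed simp
  qed
  finally show ?thesis .
qed

end

context POL begin

lemma L_J: "L (Suc m) = (\<Sum>ys\<in>LY (Suc m). \<Sum>xs\<in>LX (Suc m). \<Sum>ss\<in>LS (Suc m).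
    J (Suc m) xs ss ys * (ln (Cq (Suc m) xs ss ys) - ln (PY (Suc m) ys)))"
proof -
  have "L (Suc m) = (\<Sum>ys\<in>LY (Suc m). \<Sum>x\<in>{0..mx}. \<Sum>s\<in>{0..ms}. \<Sum>xs\<in>LX (Suc m). \<Sum>ss\<in>LS (Suc m).
      J (Suc m) xs ss ys * iQ (last xs) (last ss) (last ys) x s * (ln (Cq (Suc m) xs ss ys) - ln (PY (Suc m) ys)))"
    unfolding L_def hterm_eq by (subst sum_H_regroup) (simp add: Kx_def)
  also have "\<dots> = (\<Sum>ys\<in>LY (Suc m). \<Sum>xs\<in>LX (Suc m). \<Sum>ss\<in>LS (Suc m). \<Sum>x\<in>{0..mx}. \<Sum>s\<in>{0..ms}.
      J (Suc m) xs ss ys * iQ (last xs) (last ss) (last ys) x s * (ln (Cq (Suc m) xs ss ys) - ln (PY (Suc m) ys)))"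
    by (intro sum.cong refl sum4_swap)
  also have "\<dots> = (\<Sum>ys\<in>LY (Suc m). \<Sum>xs\<in>LX (Suc m). \<Sum>ss\<in>LS (Suc m).
      J (Suc m) xs ss ys * (ln (Cq (Suc m) xs ss ys) - ln (PY (Suc m) ys)))"
  proof (intro sum.cong refl)
    fix ys xs ss assume h: "ys \<in> LY (Suc m)" "xs \<in> LX (Suc m)" "ss \<in> LS (Suc m)"
    show "(\<Sum>x\<in>{0..mx}. \<Sum>s\<in>{0..ms}. J (Suc m) xs ss ys * iQ (last xs) (last ss) (last ys) x s * (ln (Cq (Suc m) xs ss ys) - ln (PY (Suc m) ys)))
      = J (Suc m) xs ss ys * (ln (Cq (Suc m) xs ss ys) - ln (PY (Suc m) ys))"
    proof (cases "J (Suc m) xs ss ys = 0")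
      case False
      have lx: "last xs \<in> {0..mx}" using h(2) by (rule seqs_last)
      have "(\<Sum>x\<in>{0..mx}. \<Sum>s\<in>{0..ms}. J (Suc m) xs ss ys * iQ (last xs) (last ss) (last ys) x s * (ln (Cq (Suc m) xs ss ys) - ln (PY (Suc m) ys)))
        = J (Suc m) xs ss ys * (ln (Cq (Suc m) xs ss ys) - ln (PY (Suc m) ys)) * (\<Sum>x\<in>{0..mx}. \<Sum>s\<in>{0..ms}. iQ (last xs) (last ss) (last ys) x s)"
        by (simp add: sum_distrib_left sum_distrib_right mult_ac)
      then show ?thesis using iQ_sum[OF lx J_supp[OF h(2,3,1) False]] by simp
    qed simp
  qed
  finally show ?thesis .
qed

lemma leak_eq: "real (Suc m) * leakage mx my ms PX1 PS1 Q (Suc m) q = L (Suc m)"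
proof -
  define T where "T = Suc m"
  define pp where "pp = (\<lambda>(xs, s1) ys. \<Sum>ss\<in>{ss \<in> seqs T {0..ms}. ss ! 0 = s1}. joint PX1 PS1 Q q T ss xs ys)"
  define G where "G z c = (if z = 0 then 0 else z * ln (z / c))" for z c :: real
  have ppJ: "pp (xs, s1) ys = (\<Sum>ss\<in>{ss \<in> LS T. ss ! 0 = s1}. J T xs ss ys)" for xs s1 ys
    by (simp add: pp_def J_def)
  have lk: "real T * leakage mx my ms PX1 PS1 Q T q = mutinf (LX T \<times> {0..ms}) (LY T) pp"
    by (simp add: leakage_def pp_def T_def)
  have mu: "(\<Sum>v'\<in>LY T. pp (xs, s1) v') = PXQ T xs * PS1 s1" if "xs \<in> LX T" "s1 \<in> {0..ms}" for xs s1
  proof -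
    have "(\<Sum>v'\<in>LY T. pp (xs, s1) v') = (\<Sum>ys\<in>LY T. \<Sum>ss\<in>LS T. if ss ! 0 = s1 then J T xs ss ys else 0)"
      unfolding ppJ by (simp add: sum.inter_filter finite_seqs)
    then show ?thesis using mu_eq[of xs m s1] that unfolding T_def by simp
  qed
  have mv: "(\<Sum>u'\<in>LX T \<times> {0..ms}. pp u' ys) = PY T ys" if ys: "ys \<in> LY T" for ys
  proof -
    have "(\<Sum>u'\<in>LX T \<times> {0..ms}. pp u' ys) = (\<Sum>(xs,s1)\<in>LX T \<times> {0..ms}. pp (xs,s1) ys)"
      by (rule sum.cong) auto
    also have "\<dots> = (\<Sum>xs\<in>LX T. \<Sum>s1\<in>{0..ms}. pp (xs,s1) ys)"
      by (rule sum.cartesian_product[symmetric])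
    also have "\<dots> = (\<Sum>xs\<in>LX T. \<Sum>s1\<in>{0..ms}. \<Sum>ss\<in>{ss \<in> LS T. ss ! 0 = s1}. J T xs ss ys)"
      by (simp only: ppJ)
    also have "\<dots> = (\<Sum>xs\<in>LX T. \<Sum>ss\<in>LS T. J T xs ss ys)"
    proof (intro sum.cong refl)
      fix xs
      have "(\<lambda>ss. ss ! 0) ` LS T \<subseteq> {0..ms}" unfolding T_def by (auto intro: seqs_nth)
      then show "(\<Sum>s1\<in>{0..ms}. \<Sum>ss\<in>{ss \<in> LS T. ss ! 0 = s1}. J T xs ss ys) = (\<Sum>ss\<in>LS T. J T xs ss ys)"
        by (intro sum.group) (auto simp: finite_seqs)
    qed
    also have "\<dots> = PY T ys" using PY_J[of ys m] ys unfolding T_def by simp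
    finally show ?thesis .
  qed
  have Gt: "G (J T xs ss ys) (PXQ T xs * PS1 (ss ! 0) * PY T ys) = J T xs ss ys * (ln (Cq T xs ss ys) - ln (PY T ys))"
    if h: "xs \<in> LX T" "ss \<in> LS T" "ys \<in> LY T" for xs ss ys
  proof (cases "J T xs ss ys = 0")
    case True then show ?thesis by (simp add: G_def)
  next
    case False
    have Jp: "J T xs ss ys > 0" using False J_nonneg[OF h] by simp
    have fac: "J T xs ss ys = PXQ T xs * PS1 (ss ! 0) * Cq T xs ss ys" using J_factor[of xs m ss ys] h False unfolding T_def by simp
    have s0: "ss ! 0 \<in> {0..ms}" using seqs_nth[of ss "Suc m" "{0..ms}" 0] h(2) unfolding T_def by simp
    have ab: "PXQ T xs * PS1 (ss ! 0) \<ge> 0" using PXQ_nonneg[OF h(1)] PS1_nonneg[OF s0] by simp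
    have abp: "PXQ T xs * PS1 (ss ! 0) > 0" using ab fac False by (auto simp: less_le)
    have Cp: "Cq T xs ss ys > 0" using Jp fac abp by (metis zero_less_mult_pos)
    have "J T xs ss ys \<le> PY T ys"
    proof -
      have "J T xs ss ys \<le> (\<Sum>ss'\<in>LS T. J T xs ss' ys)"
        by (rule member_le_sum[OF h(2)]) (use h in \<open>auto simp: finite_seqs intro!: J_nonneg\<close>)
      also have "\<dots> \<le> (\<Sum>xs'\<in>LX T. \<Sum>ss'\<in>LS T. J T xs' ss' ys)"
        by (rule member_le_sum[OF h(1), where f="\<lambda>xs'. \<Sum>ss'\<in>LS T. J T xs' ss' ys"]) (use h in \<open>auto simp: finite_seqs intro!: sum_nonneg J_nonneg\<close>)
      finally show ?thesis using PY_J[of ys m] h unfolding T_def by simp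
    qed
    then have PYp: "PY T ys > 0" using Jp by simp
    have "J T xs ss ys / (PXQ T xs * PS1 (ss ! 0) * PY T ys) = Cq T xs ss ys / PY T ys"
    proof -
      have n1: "PXQ T xs \<noteq> 0" "PS1 (ss ! 0) \<noteq> 0" using abp by auto
      show ?thesis using n1 PYp by (subst fac) (simp add: field_simps)
    qed
    then show ?thesis using False Cp PYp by (simp add: G_def ln_div)
  qed
  have uq: "\<And>a b. a \<in> {ss \<in> LS T. ss ! 0 = s1} \<Longrightarrow> b \<in> {ss \<in> LS T. ss ! 0 = s1} \<Longrightarrow> J T xs a ys \<noteq> 0 \<Longrightarrow> J T xs b ys \<noteq> 0 \<Longrightarrow> a = b"
    if "xs \<in> LX T" "ys \<in> LY T" for xs ys s1
    using J_uniq[of xs m _ _ ys] that unfolding T_def by auto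
  have "mutinf (LX T \<times> {0..ms}) (LY T) pp
     = (\<Sum>(xs, s1)\<in>LX T \<times> {0..ms}. \<Sum>ys\<in>LY T. G (pp (xs, s1) ys) (PXQ T xs * PS1 s1 * PY T ys))"
    unfolding mutinf_def G_def
    apply (rule sum.cong[OF refl])
    apply clarify
    apply (rule sum.cong[OF refl])
    apply (simp add: mu mv)
    done
  also have "\<dots> = (\<Sum>xs\<in>LX T. \<Sum>s1\<in>{0..ms}. \<Sum>ys\<in>LY T. \<Sum>ss\<in>{ss \<in> LS T. ss ! 0 = s1}. G (J T xs ss ys) (PXQ T xs * PS1 (ss ! 0) * PY T ys))"
    unfolding sum.cartesian_product[symmetric]
  proof (intro sum.cong refl)
    fix xs s1 ys assume h: "xs \<in> LX T" "s1 \<in> {0..ms}" "ys \<in> LY T"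
    have "G (pp (xs, s1) ys) (PXQ T xs * PS1 s1 * PY T ys) = (\<Sum>ss\<in>{ss \<in> LS T. ss ! 0 = s1}. G (J T xs ss ys) (PXQ T xs * PS1 s1 * PY T ys))"
      unfolding ppJ by (rule sum_single) (use uq[OF h(1,3)] in \<open>auto simp: finite_seqs G_def\<close>)
    also have "\<dots> = (\<Sum>ss\<in>{ss \<in> LS T. ss ! 0 = s1}. G (J T xs ss ys) (PXQ T xs * PS1 (ss ! 0) * PY T ys))"
      by (rule sum.cong) auto
    finally show "G (pp (xs, s1) ys) (PXQ T xs * PS1 s1 * PY T ys) = (\<Sum>ss\<in>{ss \<in> LS T. ss ! 0 = s1}. G (J T xs ss ys) (PXQ T xs * PS1 (ss ! 0) * PY T ys))" .
  qed
  also have "\<dots> = (\<Sum>xs\<in>LX T. \<Sum>s1\<in>{0..ms}. \<Sum>ss\<in>{ss \<in> LS T. ss ! 0 = s1}. \<Sum>ys\<in>LY T. G (J T xs ss ys) (PXQ T xs * PS1 (ss ! 0) * PY T ys))"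
    by (intro sum.cong refl sum.swap)
  also have "\<dots> = (\<Sum>xs\<in>LX T. \<Sum>ss\<in>LS T. \<Sum>ys\<in>LY T. G (J T xs ss ys) (PXQ T xs * PS1 (ss ! 0) * PY T ys))"
  proof (intro sum.cong refl)
    fix xs
    have "(\<lambda>ss. ss ! 0) ` LS T \<subseteq> {0..ms}" unfolding T_def by (auto intro: seqs_nth)
    then show "(\<Sum>s1\<in>{0..ms}. \<Sum>ss\<in>{ss \<in> LS T. ss ! 0 = s1}. \<Sum>ys\<in>LY T. G (J T xs ss ys) (PXQ T xs * PS1 (ss ! 0) * PY T ys))
       = (\<Sum>ss\<in>LS T. \<Sum>ys\<in>LY T. G (J T xs ss ys) (PXQ T xs * PS1 (ss ! 0) * PY T ys))"
      by (intro sum.group) (auto simp: finite_seqs)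
  qed
  also have "\<dots> = (\<Sum>xs\<in>LX T. \<Sum>ss\<in>LS T. \<Sum>ys\<in>LY T. J T xs ss ys * (ln (Cq T xs ss ys) - ln (PY T ys)))"
    by (intro sum.cong refl Gt)
  also have "\<dots> = (\<Sum>ys\<in>LY T. \<Sum>xs\<in>LX T. \<Sum>ss\<in>LS T. J T xs ss ys * (ln (Cq T xs ss ys) - ln (PY T ys)))"
    by (rule sum3_swap)
  also have "\<dots> = L T" using L_J[of m] unfolding T_def by simp
  finally show ?thesis using lk by (simp add: T_def)
qed

lemma W_le_leak:
  assumes "T \<ge> 1"
  shows "W T (pi1 mx ms PX1 PS1) / real T \<le> leakage mx my ms PX1 PS1 Q T q"
proof -
  obtain m where T: "T = Suc m" using assms by (cases T) auto
  have "W T (pi1 mx ms PX1 PS1) \<le> real T * leakage mx my ms PX1 PS1 Q T q"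
    using W_le_L[of T] leak_eq[of m] T by simp
  then show ?thesis using assms by (simp add: field_simps)
qed

end

context SM begin

lemma filt_supp_cong:
  assumes "\<And>x s. x \<in> {0..mx} \<Longrightarrow> s \<in> {0..ms} \<Longrightarrow> a x s y * p x s = a' x s y * p x s"
  shows "filt mx ms Q p y a = filt mx ms Q p y a'"
proof -
  have "(if s' + x - y \<in> {0..ms} then Q x x' * a x (s' + x - y) y * p x (s' + x - y) else 0)
      = (if s' + x - y \<in> {0..ms} then Q x x' * a' x (s' + x - y) y * p x (s' + x - y) else 0)"
    if "x \<in> {0..mx}" for x x' s'
    using assms[OF that, of "s' + x - y"] by (auto simp: mult.assoc)
  then have N: "Nf p a y = Nf p a' y" unfolding Nf_def by (intro ext) (auto intro!: sum.cong)
  have P: "Pya p a y = Pya p a' y" unfolding Pya_def by (intro sum.cong refl) (simp add: assms)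
  show ?thesis by (simp add: filt_eq N P)
qed

lemma bellman_supp_cong:
  assumes "\<And>x s y. x \<in> {0..mx} \<Longrightarrow> s \<in> {0..ms} \<Longrightarrow> y \<in> {0..my} \<Longrightarrow> a x s y * p x s = a' x s y * p x s"
  shows "bellman mx my ms Q a V p = bellman mx my ms Q a' V p"
proof -
  have i: "Ia mx my ms a p = Ia mx my ms a' p"
    unfolding Ia_def
    apply (rule mutinf_cong)
    apply clarify
    subgoal for x s y using assms[of x s y] by (simp add: mult.commute)
    done
  have f: "filt mx ms Q p y a = filt mx ms Q p y a'" if "y \<in> {0..my}" for y
    by (rule filt_supp_cong) (use assms that in auto)
  have "p x s * a x s y * V (filt mx ms Q p y a) = p x s * a' x s y * V (filt mx ms Q p y a')"
    if "x \<in> {0..mx}" "s \<in> {0..ms}" "y \<in> {0..my}" for x s y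
    using assms[OF that] f[OF that(3)] by (simp add: mult.commute)
  then show ?thesis unfolding bellman_def i by (intro arg_cong2[where f="(+)"] refl sum.cong) auto
qed

end

locale QS = SM +
  fixes PX1 PS1 :: "int \<Rightarrow> real" and T :: nat and f :: "nat \<Rightarrow> belief \<Rightarrow> action"
  assumes PX1: "is_pmf_on {0..mx} PX1" and PS1: "is_pmf_on {0..ms} PS1" and T1: "T \<ge> 1"
    and fcond: "\<And>t p. t \<in> {1..T} \<Longrightarrow> p \<in> PXS mx ms \<Longrightarrow> f t p \<in> Aset mx my ms
        \<and> bellman mx my ms Q (f t p) (Vfun mx my ms Q T (t + 1)) p = Vfun mx my ms Q T t p"
begin

abbreviation "p1 \<equiv> pi1 mx ms PX1 PS1"
abbreviation "bel \<equiv> beliefs mx ms Q f p1"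
abbreviation "qs \<equiv> qstar mx ms Q T f p1"

lemma p1_PXS: "p1 \<in> PXS mx ms"
proof -
  have "(\<Sum>x\<in>{0..mx}. \<Sum>s\<in>{0..ms}. PX1 x * PS1 s) = 1"
    using PX1 PS1 by (simp add: is_pmf_on_def sum_distrib_left[symmetric] sum_distrib_right[symmetric])
  then show ?thesis using PX1 PS1 by (auto simp: PXS_def pi1_def is_pmf_on_def)
qed

lemma f_Aset: "Suc n \<le> T \<Longrightarrow> p \<in> PXS mx ms \<Longrightarrow> f (Suc n) p \<in> Aset mx my ms"
  using fcond[of "Suc n" p] by auto

lemma f_bell: "Suc n \<le> T \<Longrightarrow> p \<in> PXS mx ms \<Longrightarrow> bellman mx my ms Q (f (Suc n) p) (W (T - Suc n)) p = W (T - n) p"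
  using fcond[of "Suc n" p] by (auto simp: Vfun_def Suc_diff_le)

lemma bel_append: "n \<le> length ys \<Longrightarrow> bel (ys @ zs) n = bel ys n"
  by (induction n) (auto simp: nth_append)

lemma bel_PXS: "n \<le> T \<Longrightarrow> n \<le> length ys \<Longrightarrow> set ys \<subseteq> {0..my} \<Longrightarrow> bel ys n \<in> PXS mx ms"
proof (induction n)
  case 0 then show ?case using p1_PXS by simp
next
  case (Suc n)
  have ih: "bel ys n \<in> PXS mx ms" using Suc by auto
  have "ys ! n \<in> set ys" using Suc.prems(2) by simp
  then have y: "ys ! n \<in> {0..my}" using Suc.prems(3) by blast
  show ?case using filt_PXS[OF ih f_Aset[OF Suc.prems(1) ih] y] by simp
qed

lemma qs_pol: "qs \<in> policies mx my ms"
  unfolding policies_def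
proof (intro CollectI allI impI ballI)
  fix t xs ss ys assume t: "t \<ge> 1" and xs: "xs \<in> seqs t {0..mx}" and ss: "ss \<in> seqs t {0..ms}" and ys: "ys \<in> seqs (t - 1) {0..my}"
  obtain n where n: "t = Suc n" using t by (cases t) auto
  have lx: "last xs \<in> {0..mx}" using seqs_last[of xs n "{0..mx}"] xs n by simp
  have ls: "last ss \<in> {0..ms}" using seqs_last[of ss n "{0..ms}"] ss n by simp
  define a where "a = (if t \<le> T then f t (bel ys (t - 1)) else a_default)"
  have aA: "a \<in> Aset mx my ms"
  proof (cases "t \<le> T")
    case True
    have "bel ys n \<in> PXS mx ms" using ys n True by (intro bel_PXS) (auto simp: seqs_def)
    then show ?thesis using True f_Aset n by (simp add: a_def)
  qed (simp add: a_def a_default_Aset)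
  have "qs t xs ss ys = a (last xs) (last ss)" by (simp add: qstar_def a_def fun_eq_iff)
  then show "(\<forall>y\<in>{0..my}. 0 \<le> qs t xs ss ys y) \<and> (\<Sum>y\<in>{0..my}. qs t xs ss ys y) = 1
      \<and> (\<Sum>y\<in>Yo my ms (last ss - last xs). qs t xs ss ys y) = 1"
    using aA lx ls by (simp add: Aset_def)
qed

end

sublocale QS \<subseteq> P: POL mx my ms Q PX1 PS1 qs
  by unfold_locales (use PX1 PS1 qs_pol in auto)

context QS begin

lemma qn_qs: "Suc n \<le> T \<Longrightarrow> P.qn n xs x ss s ys y = f (Suc n) (bel ys n) x s y"
  by (simp add: P.qn_def qstar_def)

lemma K_le_beta:
  assumes "(xs, x, ss, s, ys) \<in> P.H n"
  shows "P.Kx n xs x ss s ys \<le> P.\<beta> n ys x s"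
proof -
  have h: "xs \<in> P.LX n" "x \<in> {0..mx}" "ss \<in> P.LS n" "s \<in> {0..ms}" "ys \<in> P.LY n" using assms by (auto simp: P.H_def)
  have "P.Kx n xs x ss s ys \<le> (\<Sum>ss'\<in>P.LS n. P.Kx n xs x ss' s ys)"
    by (rule member_le_sum[OF h(3)]) (use h in \<open>auto simp: finite_seqs intro!: P.Kx_nonneg\<close>)
  also have "\<dots> \<le> (\<Sum>xs'\<in>P.LX n. \<Sum>ss'\<in>P.LS n. P.Kx n xs' x ss' s ys)"
    by (rule member_le_sum[OF h(1), where f="\<lambda>xs'. \<Sum>ss'\<in>P.LS n. P.Kx n xs' x ss' s ys"])
       (use h in \<open>auto simp: finite_seqs intro!: sum_nonneg P.Kx_nonneg\<close>)
  finally show ?thesis using h by (simp add: P.\<beta>_def)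
qed

lemma alpha_qs:
  assumes "Suc n \<le> T" "x \<in> {0..mx}" "s \<in> {0..ms}"
  shows "P.\<alpha> n ys x s y = P.\<beta> n ys x s * f (Suc n) (bel ys n) x s y"
  using assms by (simp add: P.\<alpha>_def P.\<beta>_def qn_qs sum_distrib_right)

lemma eff_qs:
  assumes "Suc n \<le> T" "x \<in> {0..mx}" "s \<in> {0..ms}" "P.\<beta> n ys x s \<noteq> 0"
  shows "P.eff n ys x s y = f (Suc n) (bel ys n) x s y"
  using assms alpha_qs[OF assms(1-3)] by (simp add: P.eff_def)

lemma Gib_qs: "Suc n \<le> T \<Longrightarrow> P.Gib n = 0"
proof (rule P.Gib_zero)
  fix xs x ss s ys y assume n: "Suc n \<le> T" and h: "(xs, x, ss, s, ys) \<in> P.H n" and y: "y \<in> {0..my}"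
    and K: "P.Kx n xs x ss s ys \<noteq> 0"
  have hx: "x \<in> {0..mx}" "s \<in> {0..ms}" "ys \<in> P.LY n" "xs \<in> P.LX n" "ss \<in> P.LS n" using h by (auto simp: P.H_def)
  have "P.Kx n xs x ss s ys \<ge> 0" using P.Kx_nonneg hx by auto
  then have "P.\<beta> n ys x s \<noteq> 0" using K K_le_beta[OF h] by auto
  then show "P.qn n xs x ss s ys y = P.eff n ys x s y" using eff_qs[OF n hx(1,2)] qn_qs[OF n] by simp
qed

lemma pi_bel: "n \<le> T \<Longrightarrow> ys \<in> P.LY n \<Longrightarrow> P.PY n ys > 0 \<Longrightarrow> P.\<pi> n ys = bel ys n"
proof (induction n arbitrary: ys)
  case 0 then show ?case by (simp add: seqs_0 P.\<pi>_0)
next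
  case (Suc n)
  obtain ys0 y where ys: "ys = ys0 @ [y]" "ys0 \<in> P.LY n" "y \<in> {0..my}" using Suc.prems(2) by (rule seqs_SucE)
  have l: "length ys0 = n" using ys by (simp add: seqs_def)
  have "P.PY (Suc n) (ys0 @ [y]) \<le> P.PY n ys0"
    unfolding P.PY_sum[OF ys(2), symmetric]
    by (rule member_le_sum[OF ys(3), where f="\<lambda>y. P.PY (Suc n) (ys0 @ [y])"])
       (use ys in \<open>auto intro!: P.PY_nonneg simp: seqs_snoc_mem\<close>)
  then have p0: "P.PY n ys0 > 0" using Suc.prems(3) ys by simp
  have ih: "P.\<pi> n ys0 = bel ys0 n" using Suc.IH[OF _ ys(2) p0] Suc.prems(1) by simp
  have piP: "P.\<pi> n ys0 \<in> PXS mx ms" using P.\<pi>_PXS[OF ys(2) p0] .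
  have "P.\<pi> (Suc n) ys = filt mx ms Q (P.\<pi> n ys0) y (P.eff n ys0)"
    using P.\<pi>_filt[OF ys(2,3) p0] Suc.prems(3) ys by simp
  also have "\<dots> = filt mx ms Q (P.\<pi> n ys0) y (f (Suc n) (bel ys0 n))"
  proof (rule filt_supp_cong)
    fix x s assume xs: "x \<in> {0..mx}" "s \<in> {0..ms}"
    show "P.eff n ys0 x s y * P.\<pi> n ys0 x s = f (Suc n) (bel ys0 n) x s y * P.\<pi> n ys0 x s"
    proof (cases "P.\<beta> n ys0 x s = 0")
      case True then show ?thesis by (simp add: P.\<pi>_def)
    next
      case False then show ?thesis using eff_qs[OF Suc.prems(1) xs False] by simp
    qed
  qed
  also have "\<dots> = bel ys (Suc n)" using ih l ys by (simp add: bel_append nth_append)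
  finally show ?case .
qed

lemma bell_qs:
  assumes n: "n < T" and ys: "ys \<in> P.LY n" and p: "P.PY n ys > 0"
  shows "bellman mx my ms Q (P.eff n ys) (W (T - Suc n)) (P.\<pi> n ys) = W (T - n) (P.\<pi> n ys)"
proof -
  have n': "Suc n \<le> T" using n by simp
  have pb: "P.\<pi> n ys = bel ys n" using pi_bel[OF _ ys p] n by simp
  have piP: "P.\<pi> n ys \<in> PXS mx ms" by (rule P.\<pi>_PXS[OF ys p])
  have "bellman mx my ms Q (P.eff n ys) (W (T - Suc n)) (P.\<pi> n ys) = bellman mx my ms Q (f (Suc n) (P.\<pi> n ys)) (W (T - Suc n)) (P.\<pi> n ys)"
  proof (rule bellman_supp_cong)
    fix x s y assume xs: "x \<in> {0..mx}" "s \<in> {0..ms}" and y: "y \<in> {0..my}"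
    show "P.eff n ys x s y * P.\<pi> n ys x s = f (Suc n) (P.\<pi> n ys) x s y * P.\<pi> n ys x s"
    proof (cases "P.\<beta> n ys x s = 0")
      case True then show ?thesis by (simp add: P.\<pi>_def)
    next
      case False then show ?thesis using eff_qs[OF n' xs False] pb by simp
    qed
  qed
  also have "\<dots> = W (T - n) (P.\<pi> n ys)" by (rule f_bell[OF n' piP])
  finally show ?thesis .
qed

lemma leak_qs: "leakage mx my ms PX1 PS1 Q T qs = W T p1 / real T"
proof -
  obtain m where T: "T = Suc m" using T1 by (cases T) auto
  have "W T p1 = P.L T"
    by (rule P.W_eq_L) (use bell_qs Gib_qs in auto)
  then show ?thesis using P.leak_eq[of m] T by (simp add: field_simps)
qed

end

theorem theorem1:
  fixes mx my ms :: int and Q :: "int \<Rightarrow> int \<Rightarrow> real"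
    and PX1 PS1 :: "int \<Rightarrow> real" and T :: nat
  assumes "0 \<le> mx" and "mx \<le> my" and "0 \<le> ms"
    and "stochastic mx Q" and "irreducible_chain mx Q" and "aperiodic_chain mx Q"
    and "is_pmf_on {0..mx} PX1" and "is_pmf_on {0..ms} PS1"
    and "T \<ge> 1"
  shows
    "(\<forall>t\<in>{1..T}.
        continuous_on (PXS mx ms) (Vfun mx my ms Q T t)
      \<and> concave_fun_on (PXS mx ms) (Vfun mx my ms Q T t)
      \<and> (\<forall>p\<in>PXS mx ms. \<exists>a\<in>Aset mx my ms.
            bellman mx my ms Q a (Vfun mx my ms Q T (t + 1)) p = Vfun mx my ms Q T t p))
   \<and> (\<forall>f. (\<forall>t\<in>{1..T}. \<forall>p\<in>PXS mx ms. f t p \<in> Aset mx my ms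
              \<and> bellman mx my ms Q (f t p) (Vfun mx my ms Q T (t + 1)) p = Vfun mx my ms Q T t p)
          \<longrightarrow> qstar mx ms Q T f (pi1 mx ms PX1 PS1) \<in> policies mx my ms
            \<and> (\<forall>q\<in>policies mx my ms.
                 leakage mx my ms PX1 PS1 Q T (qstar mx ms Q T f (pi1 mx ms PX1 PS1))
                 \<le> leakage mx my ms PX1 PS1 Q T q))
   \<and> (\<exists>q\<in>policies mx my ms.
        leakage mx my ms PX1 PS1 Q T q = Vfun mx my ms Q T 1 (pi1 mx ms PX1 PS1) / real T)
   \<and> (\<forall>q\<in>policies mx my ms.
        Vfun mx my ms Q T 1 (pi1 mx ms PX1 PS1) / real T \<le> leakage mx my ms PX1 PS1 Q T q)"
proof -
  interpret S: SM mx my ms Q using assms by unfold_locales auto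
  have VW: "Vfun mx my ms Q T t = Wval mx my ms Q (T + 1 - t)" for t by (simp add: Vfun_def)
  have part1: "\<forall>t\<in>{1..T}.
        continuous_on (PXS mx ms) (Vfun mx my ms Q T t)
      \<and> concave_fun_on (PXS mx ms) (Vfun mx my ms Q T t)
      \<and> (\<forall>p\<in>PXS mx ms. \<exists>a\<in>Aset mx my ms.
            bellman mx my ms Q a (Vfun mx my ms Q T (t + 1)) p = Vfun mx my ms Q T t p)"
  proof
    fix t assume t: "t \<in> {1..T}"
    have e1: "T + 1 - t = Suc (T - t)" and e2: "T + 1 - (t + 1) = T - t" using t by auto
    show "continuous_on (PXS mx ms) (Vfun mx my ms Q T t)
      \<and> concave_fun_on (PXS mx ms) (Vfun mx my ms Q T t)
      \<and> (\<forall>p\<in>PXS mx ms. \<exists>a\<in>Aset mx my ms.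
            bellman mx my ms Q a (Vfun mx my ms Q T (t + 1)) p = Vfun mx my ms Q T t p)"
      unfolding VW e1 e2 using S.W_cont S.W_concave S.W_attain by blast
  qed
  have lower: "Vfun mx my ms Q T 1 (pi1 mx ms PX1 PS1) / real T \<le> leakage mx my ms PX1 PS1 Q T q"
    if q: "q \<in> policies mx my ms" for q
  proof -
    interpret Pq: POL mx my ms Q PX1 PS1 q using assms q by unfold_locales auto
    show ?thesis using Pq.W_le_leak[OF assms(9)] by (simp add: VW)
  qed
  have part2: "\<forall>f. (\<forall>t\<in>{1..T}. \<forall>p\<in>PXS mx ms. f t p \<in> Aset mx my ms
              \<and> bellman mx my ms Q (f t p) (Vfun mx my ms Q T (t + 1)) p = Vfun mx my ms Q T t p)
          \<longrightarrow> qstar mx ms Q T f (pi1 mx ms PX1 PS1) \<in> policies mx my ms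
            \<and> leakage mx my ms PX1 PS1 Q T (qstar mx ms Q T f (pi1 mx ms PX1 PS1))
               = Vfun mx my ms Q T 1 (pi1 mx ms PX1 PS1) / real T"
  proof (intro allI impI)
    fix f assume fc: "\<forall>t\<in>{1..T}. \<forall>p\<in>PXS mx ms. f t p \<in> Aset mx my ms
              \<and> bellman mx my ms Q (f t p) (Vfun mx my ms Q T (t + 1)) p = Vfun mx my ms Q T t p"
    interpret Qf: QS mx my ms Q PX1 PS1 T f using assms fc by unfold_locales auto
    show "qstar mx ms Q T f (pi1 mx ms PX1 PS1) \<in> policies mx my ms
            \<and> leakage mx my ms PX1 PS1 Q T (qstar mx ms Q T f (pi1 mx ms PX1 PS1))
               = Vfun mx my ms Q T 1 (pi1 mx ms PX1 PS1) / real T"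
      using Qf.qs_pol Qf.leak_qs by (simp add: VW)
  qed
  define f0 where "f0 t p = (SOME a. a \<in> Aset mx my ms \<and> bellman mx my ms Q a (Vfun mx my ms Q T (t + 1)) p = Vfun mx my ms Q T t p)" for t p
  have f0c: "\<forall>t\<in>{1..T}. \<forall>p\<in>PXS mx ms. f0 t p \<in> Aset mx my ms
              \<and> bellman mx my ms Q (f0 t p) (Vfun mx my ms Q T (t + 1)) p = Vfun mx my ms Q T t p"
  proof (intro ballI)
    fix t p assume t: "t \<in> {1..T}" and p: "p \<in> PXS mx ms"
    have "\<exists>a. a \<in> Aset mx my ms \<and> bellman mx my ms Q a (Vfun mx my ms Q T (t + 1)) p = Vfun mx my ms Q T t p"
      using part1 t p by blast
    then show "f0 t p \<in> Aset mx my ms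
              \<and> bellman mx my ms Q (f0 t p) (Vfun mx my ms Q T (t + 1)) p = Vfun mx my ms Q T t p"
      unfolding f0_def by (rule someI_ex)
  qed
  have part3: "\<exists>q\<in>policies mx my ms.
        leakage mx my ms PX1 PS1 Q T q = Vfun mx my ms Q T 1 (pi1 mx ms PX1 PS1) / real T"
    using part2 f0c by blast
  show ?thesis
    using part1 part2 part3 lower by fastforce
qed

end
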